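(* Let $(M,g)$ be a space-time of dimension $n>3$ admitting a time-like unit vector field $u$ ($u_ku^k=-1$) with $\nabla_i u_j=\varphi\,(g_{ij}+u_iu_j)$ for some scalar field $\varphi$. Let $C_{iklm}$ be the Weyl tensor, $E_{kl}=u^ju^mC_{jklm}$ its electric part, and define $$\Gamma_{iklm} = C_{iklm} - \frac{n-2}{n-3}\big(u_iu_mE_{kl}-u_ku_mE_{il}-u_iu_lE_{km}+u_ku_lE_{im}\big) - \frac{1}{n-3}\big(g_{im}E_{kl}-g_{km}E_{il}-g_{il}E_{km}+g_{kl}E_{im}\big).$$ Then $\Gamma_{jklm}$ is a generalized curvature tensor, it is totally trace-less, and $$u^m\Gamma_{jklm}=0,\qquad u^p\nabla_p\Gamma_{jklm} = -2\varphi\,\Gamma_{jklm}.$$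
   Context: A generalized curvature tensor is a 4-tensor with the algebraic symmetries of the Riemann tensor: antisymmetry in the first pair and in the second pair of indices, symmetry under exchange of the two pairs, and the first Bianchi identity (cyclic sum over three indices vanishes). Totally trace-less means every contraction of two indices with $g$ vanishes. $\nabla$ is the Levi-Civita connection; indices are raised and lowered with $g$. *)

theory Defs
  imports "HOL-Analysis.Analysis"
begin

text \<open>Local coordinate formalization: a chart domain U (open subset of real^'n),
 metric components g x $ i $ j, vector field components u x $ k.\<close>

definition pder :: "'n::finite \<Rightarrow> (real^'n \<Rightarrow> real) \<Rightarrow> real^'n \<Rightarrow> real" where
  "pder i f x = deriv (\<lambda>t. f (x + t *\<^sub>R axis i 1)) 0"

fun pders :: "'n::finite list \<Rightarrow> (real^'n \<Rightarrow> real) \<Rightarrow> real^'n \<Rightarrow> real" where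
  "pders [] f = f"
| "pders (i # is) f = pder i (pders is f)"

definition smooth_fn :: "(real^'n::finite) set \<Rightarrow> (real^'n \<Rightarrow> real) \<Rightarrow> bool" where
  "smooth_fn U f \<longleftrightarrow> (\<forall>is. pders is f differentiable_on U)"

definition bform :: "real^'n::finite^'n \<Rightarrow> real^'n \<Rightarrow> real^'n \<Rightarrow> real" where
  "bform G v w = (\<Sum>i\<in>UNIV. \<Sum>j\<in>UNIV. G$i$j * v$i * w$j)"

text \<open>Lorentzian signature (-,+,...,+): symmetric, some timelike vector, and a
 positive definite subspace of dimension n-1.\<close>
definition lorentzian :: "real^'n::finite^'n \<Rightarrow> bool" where
  "lorentzian G \<longleftrightarrow> (\<forall>i j. G$i$j = G$j$i) \<and> (\<exists>v. bform G v v < 0) \<and>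
     (\<exists>W. subspace W \<and> dim W = CARD('n) - 1 \<and> (\<forall>w\<in>W. w \<noteq> 0 \<longrightarrow> bform G w w > 0))"

definition ginv :: "(real^'n::finite \<Rightarrow> real^'n^'n) \<Rightarrow> real^'n \<Rightarrow> 'n \<Rightarrow> 'n \<Rightarrow> real" where
  "ginv g x i j = matrix_inv (g x) $ i $ j"

definition christ :: "(real^'n::finite \<Rightarrow> real^'n^'n) \<Rightarrow> real^'n \<Rightarrow> 'n \<Rightarrow> 'n \<Rightarrow> 'n \<Rightarrow> real" where
  "christ g x k i j = (1/2) * (\<Sum>l\<in>UNIV. ginv g x k l *
     (pder i (\<lambda>y. g y $ j $ l) x + pder j (\<lambda>y. g y $ i $ l) x - pder l (\<lambda>y. g y $ i $ j) x))"

definition riem_up :: "(real^'n::finite \<Rightarrow> real^'n^'n) \<Rightarrow> real^'n \<Rightarrow> 'n \<Rightarrow> 'n \<Rightarrow> 'n \<Rightarrow> 'n \<Rightarrow> real" where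
  "riem_up g x a b c d = pder c (\<lambda>y. christ g y a d b) x - pder d (\<lambda>y. christ g y a c b) x
     + (\<Sum>e\<in>UNIV. christ g x a c e * christ g x e d b - christ g x a d e * christ g x e c b)"

definition riem :: "(real^'n::finite \<Rightarrow> real^'n^'n) \<Rightarrow> real^'n \<Rightarrow> 'n \<Rightarrow> 'n \<Rightarrow> 'n \<Rightarrow> 'n \<Rightarrow> real" where
  "riem g x a b c d = (\<Sum>e\<in>UNIV. g x $ a $ e * riem_up g x e b c d)"

definition ricci :: "(real^'n::finite \<Rightarrow> real^'n^'n) \<Rightarrow> real^'n \<Rightarrow> 'n \<Rightarrow> 'n \<Rightarrow> real" where
  "ricci g x b d = (\<Sum>a\<in>UNIV. riem_up g x a b a d)"

definition scal :: "(real^'n::finite \<Rightarrow> real^'n^'n) \<Rightarrow> real^'n \<Rightarrow> real" where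
  "scal g x = (\<Sum>b\<in>UNIV. \<Sum>d\<in>UNIV. ginv g x b d * ricci g x b d)"

definition weyl :: "(real^'n::finite \<Rightarrow> real^'n^'n) \<Rightarrow> real^'n \<Rightarrow> 'n \<Rightarrow> 'n \<Rightarrow> 'n \<Rightarrow> 'n \<Rightarrow> real" where
  "weyl g x a b c d =
     (let n = real CARD('n); G = g x in
      riem g x a b c d
      - 1 / (n - 2) * (G$a$c * ricci g x b d - G$a$d * ricci g x b c
                       - G$b$c * ricci g x a d + G$b$d * ricci g x a c)
      + scal g x / ((n - 1) * (n - 2)) * (G$a$c * G$b$d - G$a$d * G$b$c))"

definition lower :: "(real^'n::finite \<Rightarrow> real^'n^'n) \<Rightarrow> (real^'n \<Rightarrow> real^'n) \<Rightarrow> real^'n \<Rightarrow> 'n \<Rightarrow> real" where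
  "lower g u x j = (\<Sum>k\<in>UNIV. g x $ j $ k * u x $ k)"

definition cov_der1 :: "(real^'n::finite \<Rightarrow> real^'n^'n) \<Rightarrow> (real^'n \<Rightarrow> 'n \<Rightarrow> real) \<Rightarrow> real^'n \<Rightarrow> 'n \<Rightarrow> 'n \<Rightarrow> real" where
  "cov_der1 g w x i j = pder i (\<lambda>y. w y j) x - (\<Sum>k\<in>UNIV. christ g x k i j * w x k)"

definition cov_der4 :: "(real^'n::finite \<Rightarrow> real^'n^'n) \<Rightarrow> (real^'n \<Rightarrow> 'n \<Rightarrow> 'n \<Rightarrow> 'n \<Rightarrow> 'n \<Rightarrow> real)
     \<Rightarrow> real^'n \<Rightarrow> 'n \<Rightarrow> 'n \<Rightarrow> 'n \<Rightarrow> 'n \<Rightarrow> 'n \<Rightarrow> real" where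
  "cov_der4 g T x p j k l m = pder p (\<lambda>y. T y j k l m) x
     - (\<Sum>q\<in>UNIV. christ g x q p j * T x q k l m + christ g x q p k * T x j q l m
                 + christ g x q p l * T x j k q m + christ g x q p m * T x j k l q)"

definition electric :: "(real^'n::finite \<Rightarrow> real^'n^'n) \<Rightarrow> (real^'n \<Rightarrow> real^'n) \<Rightarrow> real^'n \<Rightarrow> 'n \<Rightarrow> 'n \<Rightarrow> real" where
  "electric g u x k l = (\<Sum>j\<in>UNIV. \<Sum>m\<in>UNIV. u x $ j * u x $ m * weyl g x j k l m)"

definition GammaT :: "(real^'n::finite \<Rightarrow> real^'n^'n) \<Rightarrow> (real^'n \<Rightarrow> real^'n) \<Rightarrow> real^'n \<Rightarrow> 'n \<Rightarrow> 'n \<Rightarrow> 'n \<Rightarrow> 'n \<Rightarrow> real" where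
  "GammaT g u x i k l m =
     (let n = real CARD('n); G = g x; E = electric g u x; v = lower g u x in
      weyl g x i k l m
      - (n - 2) / (n - 3) * (v i * v m * E k l - v k * v m * E i l - v i * v l * E k m + v k * v l * E i m)
      - 1 / (n - 3) * (G$i$m * E k l - G$k$m * E i l - G$i$l * E k m + G$k$l * E i m))"

definition gen_curv :: "('n \<Rightarrow> 'n \<Rightarrow> 'n \<Rightarrow> 'n \<Rightarrow> real) \<Rightarrow> bool" where
  "gen_curv T \<longleftrightarrow> (\<forall>i k l m.
      T i k l m = - T k i l m \<and> T i k l m = - T i k m l \<and> T i k l m = T l m i k
      \<and> T i k l m + T k l i m + T l i k m = 0)"

definition totally_traceless :: "real^'n::finite^'n \<Rightarrow> ('n \<Rightarrow> 'n \<Rightarrow> 'n \<Rightarrow> 'n \<Rightarrow> real) \<Rightarrow> bool" where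
  "totally_traceless G T \<longleftrightarrow> (let H = matrix_inv G in \<forall>p q.
      (\<Sum>a\<in>UNIV. \<Sum>b\<in>UNIV. H$a$b * T a b p q) = 0 \<and>
      (\<Sum>a\<in>UNIV. \<Sum>b\<in>UNIV. H$a$b * T a p b q) = 0 \<and>
      (\<Sum>a\<in>UNIV. \<Sum>b\<in>UNIV. H$a$b * T a p q b) = 0 \<and>
      (\<Sum>a\<in>UNIV. \<Sum>b\<in>UNIV. H$a$b * T p a b q) = 0 \<and>
      (\<Sum>a\<in>UNIV. \<Sum>b\<in>UNIV. H$a$b * T p a q b) = 0 \<and>
      (\<Sum>a\<in>UNIV. \<Sum>b\<in>UNIV. H$a$b * T p q a b) = 0)"

end

theory Submission
  imports Defs
begin

lemma pders_snoc: "pders (is @ [i]) f = pders is (pder i f)"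
  by (induction "is") auto

lemma pder_frechet:
  fixes F :: "real^'n::finite \<Rightarrow> real"
  assumes "(F has_derivative D) (at (z + s *\<^sub>R axis i 1))"
  shows "((\<lambda>t. F (z + t *\<^sub>R axis i 1)) has_real_derivative D (axis i 1)) (at s)"
proof -
  have 1: "((\<lambda>t. z + t *\<^sub>R axis i (1::real)) has_derivative (\<lambda>t. t *\<^sub>R axis i 1)) (at s)"
    by (auto intro!: derivative_eq_intros)
  have "((\<lambda>t. F (z + t *\<^sub>R axis i 1)) has_derivative (\<lambda>t. D (t *\<^sub>R axis i 1))) (at s)"
    using has_derivative_compose[OF 1, of F D] assms by simp
  moreover have "linear D" using assms has_derivative_linear by blast
  ultimately have "((\<lambda>t. F (z + t *\<^sub>R axis i 1)) has_derivative (\<lambda>t. t * D (axis i 1))) (at s)"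
    by (simp add: linear_scale)
  moreover have "(\<lambda>t. t * D (axis i 1)) = (*) (D (axis i 1))" by (rule ext) simp
  ultimately show ?thesis
    unfolding has_field_derivative_def by simp
qed

lemma pder_eq_frechet:
  fixes F :: "real^'n::finite \<Rightarrow> real"
  assumes "(F has_derivative D) (at y)"
  shows "pder i F y = D (axis i 1)"
proof -
  have "((\<lambda>t. F (y + t *\<^sub>R axis i 1)) has_real_derivative D (axis i 1)) (at 0)"
    using pder_frechet[of F D y 0 i] assms by simp
  then show ?thesis unfolding pder_def by (rule DERIV_imp_deriv)
qed

lemma pder_hasderiv:
  fixes F :: "real^'n::finite \<Rightarrow> real"
  assumes "F differentiable (at (z + s *\<^sub>R axis i 1))"
  shows "((\<lambda>t. F (z + t *\<^sub>R axis i 1)) has_real_derivative pder i F (z + s *\<^sub>R axis i 1)) (at s)"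
proof -
  obtain D where D: "(F has_derivative D) (at (z + s *\<^sub>R axis i 1))"
    using assms unfolding differentiable_def by blast
  show ?thesis using pder_frechet[OF D] pder_eq_frechet[OF D] by simp
qed

lemma pder_hasderiv0:
  fixes F :: "real^'n::finite \<Rightarrow> real"
  assumes "F differentiable (at y)"
  shows "((\<lambda>t. F (y + t *\<^sub>R axis i 1)) has_real_derivative pder i F y) (at 0)"
  using pder_hasderiv[of F y 0 i] assms by simp

lemma pder_add:
  fixes f h :: "real^'n::finite \<Rightarrow> real"
  assumes "f differentiable (at y)" "h differentiable (at y)"
  shows "pder i (\<lambda>z. f z + h z) y = pder i f y + pder i h y"
  unfolding pder_def[of i "\<lambda>z. f z + h z"]
  by (rule DERIV_imp_deriv) (intro DERIV_add pder_hasderiv0 assms)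

lemma pder_diff:
  fixes f h :: "real^'n::finite \<Rightarrow> real"
  assumes "f differentiable (at y)" "h differentiable (at y)"
  shows "pder i (\<lambda>z. f z - h z) y = pder i f y - pder i h y"
  unfolding pder_def[of i "\<lambda>z. f z - h z"]
  by (rule DERIV_imp_deriv) (intro DERIV_diff pder_hasderiv0 assms)

lemma pder_mult:
  fixes f h :: "real^'n::finite \<Rightarrow> real"
  assumes "f differentiable (at y)" "h differentiable (at y)"
  shows "pder i (\<lambda>z. f z * h z) y = pder i f y * h y + f y * pder i h y"
proof -
  have "((\<lambda>t. f (y + t *\<^sub>R axis i 1) * h (y + t *\<^sub>R axis i 1)) has_real_derivative
     pder i f y * h (y + 0 *\<^sub>R axis i 1) + pder i h y * f (y + 0 *\<^sub>R axis i 1)) (at 0)"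
    by (intro DERIV_mult pder_hasderiv0 assms)
  then show ?thesis unfolding pder_def[of i "\<lambda>z. f z * h z"]
    by (auto dest!: DERIV_imp_deriv simp: mult.commute)
qed

lemma pder_const: "pder i (\<lambda>z. c) y = 0"
  unfolding pder_def by simp

lemma pder_cmult:
  fixes f :: "real^'n::finite \<Rightarrow> real"
  assumes "f differentiable (at y)"
  shows "pder i (\<lambda>z. c * f z) y = c * pder i f y"
  using pder_mult[of "\<lambda>z. c" y f i] assms by (simp add: pder_const)

lemma pder_minus:
  fixes f :: "real^'n::finite \<Rightarrow> real"
  assumes "f differentiable (at y)"
  shows "pder i (\<lambda>z. - f z) y = - pder i f y"
  using pder_diff[of "\<lambda>z. 0" y f i] assms by (simp add: pder_const)

lemma pder_sum:
  fixes F :: "real^'n::finite \<Rightarrow> 'a \<Rightarrow> real"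
  assumes "finite A" "\<And>a. a \<in> A \<Longrightarrow> (\<lambda>z. F z a) differentiable (at y)"
  shows "pder i (\<lambda>z. \<Sum>a\<in>A. F z a) y = (\<Sum>a\<in>A. pder i (\<lambda>z. F z a) y)"
  using assms
proof (induction A rule: finite_induct)
  case empty then show ?case by (simp add: pder_const)
next
  case (insert a A)
  have "(\<lambda>z. \<Sum>a\<in>A. F z a) differentiable (at y)"
    using insert by (intro differentiable_sum) auto
  then show ?case using insert
    by (simp add: pder_add)
qed

lemma pder_inverse:
  fixes f :: "real^'n::finite \<Rightarrow> real"
  assumes "f differentiable (at y)" "f y \<noteq> 0"
  shows "pder i (\<lambda>z. inverse (f z)) y = - pder i f y * (inverse (f y) * inverse (f y))"
proof -
  have "((\<lambda>t. inverse (f (y + t *\<^sub>R axis i 1))) has_real_derivative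
      - (inverse (f (y + 0 *\<^sub>R axis i 1)) * pder i f y * inverse (f (y + 0 *\<^sub>R axis i 1)))) (at 0)"
    by (rule DERIV_inverse') (use assms pder_hasderiv0 in auto)
  then show ?thesis unfolding pder_def[of i "\<lambda>z. inverse (f z)"]
    by (auto dest!: DERIV_imp_deriv simp: ac_simps)
qed


lemma pder_local:
  fixes f h :: "real^'n::finite \<Rightarrow> real"
  assumes "open U" "y \<in> U" "\<And>z. z \<in> U \<Longrightarrow> f z = h z"
  shows "pder i f y = pder i h y"
proof -
  obtain e where e: "e > 0" "ball y e \<subseteq> U" using assms(1,2) openE by blast
  have "eventually (\<lambda>t. f (y + t *\<^sub>R axis i 1) = h (y + t *\<^sub>R axis i 1)) (nhds 0)"
    unfolding eventually_nhds_metric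
  proof (intro exI[of _ e] conjI allI impI)
    fix t :: real assume "dist t 0 < e"
    then have "y + t *\<^sub>R axis i 1 \<in> ball y e" by (simp add: dist_norm)
    then show "f (y + t *\<^sub>R axis i 1) = h (y + t *\<^sub>R axis i 1)" using e assms(3) by blast
  qed (use e in auto)
  then show ?thesis unfolding pder_def by (rule deriv_cong_ev) simp
qed

lemma pders_local:
  fixes f h :: "real^'n::finite \<Rightarrow> real"
  assumes "open U" "\<And>z. z \<in> U \<Longrightarrow> f z = h z" "y \<in> U"
  shows "pders is f y = pders is h y"
  using assms(3)
proof (induction "is" arbitrary: y)
  case Nil then show ?case using assms by simp
next
  case (Cons i "is")
  have "pder i (pders is f) y = pder i (pders is h) y"
    by (rule pder_local[OF assms(1) Cons.prems]) (use Cons.IH in blast)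
  then show ?case by simp
qed

lemma differentiable_local:
  fixes f h :: "real^'n::finite \<Rightarrow> real"
  assumes "open U" "\<And>z. z \<in> U \<Longrightarrow> f z = h z" "y \<in> U" "f differentiable (at y)"
  shows "h differentiable (at y)"
proof -
  obtain e where e: "e > 0" "ball y e \<subseteq> U" using assms(1,3) openE by blast
  have "\<And>x'. dist x' y < e \<Longrightarrow> f x' = h x'"
    using e assms(2) by (metis mem_ball dist_commute subsetD)
  then show ?thesis
    using differentiable_transform_within[of f y UNIV e h] assms(4) e(1) by auto
qed

definition goodN :: "(real^'n::finite) set \<Rightarrow> nat \<Rightarrow> (real^'n \<Rightarrow> real) \<Rightarrow> bool" where
  "goodN U n f \<longleftrightarrow> (\<forall>is. length is \<le> n \<longrightarrow> (\<forall>y\<in>U. pders is f differentiable (at y)))"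

definition good :: "(real^'n::finite) set \<Rightarrow> (real^'n \<Rightarrow> real) \<Rightarrow> bool" where
  "good U f \<longleftrightarrow> (\<forall>n. goodN U n f)"

lemma goodN_0: "goodN U 0 f \<longleftrightarrow> (\<forall>y\<in>U. f differentiable (at y))"
  unfolding goodN_def by auto

lemma goodN_Suc: "goodN U (Suc n) f \<longleftrightarrow> (\<forall>y\<in>U. f differentiable (at y)) \<and> (\<forall>i. goodN U n (pder i f))"
proof
  assume a: "goodN U (Suc n) f"
  show "(\<forall>y\<in>U. f differentiable (at y)) \<and> (\<forall>i. goodN U n (pder i f))"
  proof (intro conjI allI)
    show "\<forall>y\<in>U. f differentiable (at y)" using a[unfolded goodN_def, rule_format, of "[]"] by simp
    fix i show "goodN U n (pder i f)" unfolding goodN_def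
    proof (intro allI impI)
      fix "is" :: "'a list" assume "length is \<le> n"
      then have "length (is @ [i]) \<le> Suc n" by simp
      then have "\<forall>y\<in>U. pders (is @ [i]) f differentiable (at y)"
        using a[unfolded goodN_def] by blast
      then show "\<forall>y\<in>U. pders is (pder i f) differentiable (at y)" by (simp add: pders_snoc)
    qed
  qed
next
  assume a: "(\<forall>y\<in>U. f differentiable (at y)) \<and> (\<forall>i. goodN U n (pder i f))"
  show "goodN U (Suc n) f" unfolding goodN_def
  proof (intro allI impI)
    fix "is" :: "'a list" assume l: "length is \<le> Suc n"
    show "\<forall>y\<in>U. pders is f differentiable (at y)"
    proof (cases "is" rule: rev_exhaust)
      case Nil then show ?thesis using a by simp
    next
      case (snoc js i)
      then have "length js \<le> n" using l by simp
      then show ?thesis using a snoc unfolding goodN_def by (simp add: pders_snoc)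
    qed
  qed
qed

lemma goodN_mono: "goodN U (Suc n) f \<Longrightarrow> goodN U n f"
  unfolding goodN_def by auto

lemma goodN_mono': "goodN U m f \<Longrightarrow> n \<le> m \<Longrightarrow> goodN U n f"
  unfolding goodN_def by auto

lemma goodN_cong:
  assumes "open U" "\<And>z. z \<in> U \<Longrightarrow> f z = h z" "goodN U n f"
  shows "goodN U n h"
  unfolding goodN_def
proof (intro allI impI ballI)
  fix "is" :: "'a list" and y assume l: "length is \<le> n" and y: "y \<in> U"
  have "\<And>z. z \<in> U \<Longrightarrow> pders is f z = pders is h z" using pders_local[of U f h _ "is"] assms(1,2) by blast
  moreover have "pders is f differentiable (at y)" using assms(3) l y unfolding goodN_def by blast
  ultimately show "pders is h differentiable (at y)"
    using differentiable_local[OF assms(1), of "pders is f" "pders is h" y] y by blast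
qed

lemma good_cong:
  assumes "open U" "\<And>z. z \<in> U \<Longrightarrow> f z = h z" "good U f"
  shows "good U h"
  using assms goodN_cong unfolding good_def by blast

lemma good_diff: "good U f \<Longrightarrow> y \<in> U \<Longrightarrow> f differentiable (at y)"
  unfolding good_def using goodN_0 by blast

lemma good_pder: "good U f \<Longrightarrow> good U (pder i f)"
  unfolding good_def using goodN_Suc by blast

lemma goodN_const: "goodN U n (\<lambda>z. c)"
proof (induction n arbitrary: c)
  case 0 then show ?case by (simp add: goodN_0)
next
  case (Suc n)
  have "pder i (\<lambda>z::real^'a. c) = (\<lambda>z. 0)" for i :: 'a by (rule ext) (simp add: pder_const)
  then show ?case using Suc goodN_0[of U "\<lambda>z. 0"] by (simp add: goodN_Suc)
qed

lemma good_const: "good U (\<lambda>z. c)"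
  unfolding good_def using goodN_const by blast

lemma goodN_add:
  assumes "open U"
  shows "goodN U n f \<Longrightarrow> goodN U n h \<Longrightarrow> goodN U n (\<lambda>z. f z + h z)"
proof (induction n arbitrary: f h)
  case 0 then show ?case by (auto simp: goodN_0)
next
  case (Suc n)
  show ?case unfolding goodN_Suc
  proof (intro conjI allI)
    show "\<forall>y\<in>U. (\<lambda>z. f z + h z) differentiable (at y)" using Suc.prems by (auto simp: goodN_Suc)
    fix i
    have "goodN U n (\<lambda>z. pder i f z + pder i h z)" using Suc by (auto simp: goodN_Suc)
    then show "goodN U n (pder i (\<lambda>z. f z + h z))"
      by (rule goodN_cong[OF assms, rotated]) (use Suc.prems in \<open>auto simp: goodN_Suc pder_add\<close>)
  qed
qed

lemma goodN_mult:
  assumes "open U"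
  shows "goodN U n f \<Longrightarrow> goodN U n h \<Longrightarrow> goodN U n (\<lambda>z. f z * h z)"
proof (induction n arbitrary: f h)
  case 0 then show ?case by (auto simp: goodN_0)
next
  case (Suc n)
  show ?case unfolding goodN_Suc
  proof (intro conjI allI)
    show "\<forall>y\<in>U. (\<lambda>z. f z * h z) differentiable (at y)" using Suc.prems by (auto simp: goodN_Suc)
    fix i
    have f: "goodN U n f" "goodN U n (pder i f)" using Suc.prems(1) goodN_mono goodN_Suc by blast+
    have h: "goodN U n h" "goodN U n (pder i h)" using Suc.prems(2) goodN_mono goodN_Suc by blast+
    have "goodN U n (\<lambda>z. pder i f z * h z + f z * pder i h z)"
      by (intro goodN_add[OF assms] Suc.IH f h)
    then show "goodN U n (pder i (\<lambda>z. f z * h z))"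
      by (rule goodN_cong[OF assms, rotated]) (use Suc.prems in \<open>auto simp: goodN_Suc pder_mult\<close>)
  qed
qed

lemma goodN_inverse:
  assumes "open U"
  shows "goodN U n f \<Longrightarrow> (\<forall>z\<in>U. f z \<noteq> 0) \<Longrightarrow> goodN U n (\<lambda>z. inverse (f z))"
proof (induction n arbitrary: f)
  case 0 then show ?case by (auto simp: goodN_0 intro: differentiable_inverse)
next
  case (Suc n)
  show ?case unfolding goodN_Suc
  proof (intro conjI allI)
    show "\<forall>y\<in>U. (\<lambda>z. inverse (f z)) differentiable (at y)" using Suc.prems
      by (auto simp: goodN_Suc intro: differentiable_inverse)
    fix i
    have iv: "goodN U n (\<lambda>z. inverse (f z))" using Suc goodN_mono by blast
    have "goodN U n (\<lambda>z. - pder i f z * (inverse (f z) * inverse (f z)))"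
    proof -
      have "goodN U n (\<lambda>z. (-1) * pder i f z)"
        using Suc.prems goodN_const by (intro goodN_mult[OF assms]) (auto simp: goodN_Suc)
      moreover have "goodN U n (\<lambda>z. inverse (f z) * inverse (f z))" by (rule goodN_mult[OF assms iv iv])
      ultimately have "goodN U n (\<lambda>z. (-1) * pder i f z * (inverse (f z) * inverse (f z)))"
        by (rule goodN_mult[OF assms])
      then show ?thesis by simp
    qed
    then show "goodN U n (pder i (\<lambda>z. inverse (f z)))"
      by (rule goodN_cong[OF assms, rotated]) (use Suc.prems in \<open>auto simp: goodN_Suc pder_inverse\<close>)
  qed
qed

lemma good_add: "open U \<Longrightarrow> good U f \<Longrightarrow> good U h \<Longrightarrow> good U (\<lambda>z. f z + h z)"
  unfolding good_def using goodN_add by blast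
lemma good_mult: "open U \<Longrightarrow> good U f \<Longrightarrow> good U h \<Longrightarrow> good U (\<lambda>z. f z * h z)"
  unfolding good_def using goodN_mult by blast
lemma good_inverse: "open U \<Longrightarrow> good U f \<Longrightarrow> (\<forall>z\<in>U. f z \<noteq> 0) \<Longrightarrow> good U (\<lambda>z. inverse (f z))"
  unfolding good_def using goodN_inverse by blast
lemma good_minus: "open U \<Longrightarrow> good U f \<Longrightarrow> good U (\<lambda>z. - f z)"
proof -
  assume a: "open U" "good U f"
  have "good U (\<lambda>z. (-1) * f z)" by (rule good_mult[OF a(1) good_const a(2)])
  then show ?thesis by simp
qed
lemma good_diff': "open U \<Longrightarrow> good U f \<Longrightarrow> good U h \<Longrightarrow> good U (\<lambda>z. f z - h z)"
proof -
  assume a: "open U" "good U f" "good U h"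
  have "good U (\<lambda>z. f z + - h z)" by (rule good_add[OF a(1,2) good_minus[OF a(1,3)]])
  then show ?thesis by simp
qed
lemma good_divide: "open U \<Longrightarrow> good U f \<Longrightarrow> good U h \<Longrightarrow> (\<forall>z\<in>U. h z \<noteq> 0) \<Longrightarrow> good U (\<lambda>z. f z / h z)"
proof -
  assume a: "open U" "good U f" "good U h" "\<forall>z\<in>U. h z \<noteq> 0"
  have "good U (\<lambda>z. f z * inverse (h z))" by (rule good_mult[OF a(1,2) good_inverse[OF a(1,3,4)]])
  then show ?thesis by (simp add: divide_inverse)
qed

lemma good_sum:
  assumes "open U" "finite A" "\<And>a. a \<in> A \<Longrightarrow> good U (\<lambda>z. F z a)"
  shows "good U (\<lambda>z. \<Sum>a\<in>A. F z a)"
  using assms(2,3)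
proof (induction A rule: finite_induct)
  case empty then show ?case by (simp add: good_const)
next
  case (insert a A)
  then have "good U (\<lambda>z. F z a + (\<Sum>a\<in>A. F z a))" by (intro good_add[OF assms(1)]) auto
  then show ?case using insert.hyps by simp
qed

lemma good_prod:
  assumes "open U" "finite A" "\<And>a. a \<in> A \<Longrightarrow> good U (\<lambda>z. F z a)"
  shows "good U (\<lambda>z. \<Prod>a\<in>A. F z a)"
  using assms(2,3)
proof (induction A rule: finite_induct)
  case empty then show ?case by (simp add: good_const)
next
  case (insert a A)
  then have "good U (\<lambda>z. F z a * (\<Prod>a\<in>A. F z a))" by (intro good_mult[OF assms(1)]) auto
  then show ?case using insert.hyps by simp
qed

lemma good_det:
  fixes M :: "real^'n::finite \<Rightarrow> real^'m::finite^'m"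
  assumes "open U" "\<And>i j. good U (\<lambda>z. M z $ i $ j)"
  shows "good U (\<lambda>z. det (M z))"
  unfolding det_def
  by (intro good_sum good_mult good_prod good_const assms) auto

lemma smooth_good: "open U \<Longrightarrow> smooth_fn U f \<Longrightarrow> good U f"
  unfolding smooth_fn_def good_def goodN_def
  by (simp add: differentiable_on_eq_differentiable_at)


lemma clairaut_aux:
  fixes f :: "real^'n::finite \<Rightarrow> real"
  assumes U: "open U" and f: "good U f" and y: "y \<in> U" and e: "e > 0"
  shows "\<exists>\<delta>>0. \<forall>h. 0 < h \<and> h < \<delta> \<longrightarrow>
     \<bar>f (y + h *\<^sub>R axis i 1 + h *\<^sub>R axis j 1) - f (y + h *\<^sub>R axis i 1) - f (y + h *\<^sub>R axis j 1) + f y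
        - h\<^sup>2 * pder j (pder i f) y\<bar> \<le> e * h\<^sup>2"
proof -
  let ?p = "pder i f"
  let ?ei = "axis i (1::real) :: real^'n" and ?ej = "axis j (1::real) :: real^'n"
  have gp: "good U ?p" using good_pder[OF f] .
  obtain D where D: "(?p has_derivative D) (at y)"
    using good_diff[OF gp y] unfolding differentiable_def by blast
  have pj: "pder j ?p y = D ?ej" using pder_eq_frechet[OF D] .
  have lin: "linear D" using D has_derivative_linear by blast
  obtain d where d: "d > 0" "\<And>z. norm (z - y) < d \<Longrightarrow> \<bar>?p z - ?p y - D (z - y)\<bar> \<le> e/3 * norm (z - y)"
    using D[unfolded has_derivative_at_alt] e by (metis real_norm_def zero_less_divide_iff zero_less_numeral)
  obtain r where r: "r > 0" "ball y r \<subseteq> U" using U y openE by blast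
  define \<delta> where "\<delta> = min d r / 2"
  have \<delta>: "\<delta> > 0" using d r by (simp add: \<delta>_def)
  show ?thesis
  proof (intro exI[of _ \<delta>] conjI allI impI \<delta>)
    fix h :: real assume h: "0 < h \<and> h < \<delta>"
    have inU: "y + a *\<^sub>R ?ej + s *\<^sub>R ?ei \<in> U" and nd: "norm (a *\<^sub>R ?ej + s *\<^sub>R ?ei) < d"
      if "0 \<le> a" "a \<le> h" "0 \<le> s" "s \<le> h" for a s
    proof -
      have "norm (a *\<^sub>R ?ej + s *\<^sub>R ?ei) \<le> a + s"
        using norm_triangle_ineq[of "a *\<^sub>R ?ej" "s *\<^sub>R ?ei"] that by simp
      also have "\<dots> < min d r" using that h \<delta>_def by simp
      finally have *: "norm (a *\<^sub>R ?ej + s *\<^sub>R ?ei) < min d r" .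
      have dd: "dist y (y + v) = norm v" for v :: "real^'n"
        by (metis add_diff_cancel_left' dist_commute dist_norm)
      have "y + a *\<^sub>R ?ej + s *\<^sub>R ?ei \<in> ball y r" using * dd[of "a *\<^sub>R ?ej + s *\<^sub>R ?ei"]
        by (simp only: mem_ball add.assoc)
      then show "y + a *\<^sub>R ?ej + s *\<^sub>R ?ei \<in> U" using r by blast
      show "norm (a *\<^sub>R ?ej + s *\<^sub>R ?ei) < d" using * by simp
    qed
    define \<Phi> where "\<Phi> s = f (y + h *\<^sub>R ?ej + s *\<^sub>R ?ei) - f (y + s *\<^sub>R ?ei)" for s
    have der: "DERIV \<Phi> s :> ?p (y + h *\<^sub>R ?ej + s *\<^sub>R ?ei) - ?p (y + s *\<^sub>R ?ei)"
      if "0 \<le> s" "s \<le> h" for s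
    proof -
      have a1: "f differentiable (at (y + h *\<^sub>R ?ej + s *\<^sub>R ?ei))"
        using good_diff[OF f inU[of h s]] that h by simp
      have a2: "f differentiable (at (y + s *\<^sub>R ?ei))"
        using good_diff[OF f inU[of 0 s]] that h by simp
      show ?thesis unfolding \<Phi>_def
        by (intro DERIV_diff pder_hasderiv a1 a2)
    qed
    have "\<exists>z. 0 < z \<and> z < h \<and> \<Phi> h - \<Phi> 0 = (h - 0) * ((\<lambda>s. ?p (y + h *\<^sub>R ?ej + s *\<^sub>R ?ei) - ?p (y + s *\<^sub>R ?ei)) z)"
      by (rule MVT2) (use der h in auto)
    then obtain \<xi> where \<xi>: "0 < \<xi>" "\<xi> < h"
      "\<Phi> h - \<Phi> 0 = (h - 0) * (?p (y + h *\<^sub>R ?ej + \<xi> *\<^sub>R ?ei) - ?p (y + \<xi> *\<^sub>R ?ei))"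
      by blast
    define A where "A = ?p (y + h *\<^sub>R ?ej + \<xi> *\<^sub>R ?ei) - ?p y - D (h *\<^sub>R ?ej + \<xi> *\<^sub>R ?ei)"
    define B where "B = ?p (y + \<xi> *\<^sub>R ?ei) - ?p y - D (0 *\<^sub>R ?ej + \<xi> *\<^sub>R ?ei)"
    have nA: "norm (h *\<^sub>R ?ej + \<xi> *\<^sub>R ?ei) \<le> 2 * h"
      using norm_triangle_ineq[of "h *\<^sub>R ?ej" "\<xi> *\<^sub>R ?ei"] h \<xi> by simp
    have A: "\<bar>A\<bar> \<le> e/3 * (2 * h)"
    proof -
      have "\<bar>A\<bar> \<le> e/3 * norm (h *\<^sub>R ?ej + \<xi> *\<^sub>R ?ei)"
        using d(2)[of "y + h *\<^sub>R ?ej + \<xi> *\<^sub>R ?ei"] nd[of h \<xi>] h \<xi> unfolding A_def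
        by (simp add: add.assoc)
      also have "\<dots> \<le> e/3 * (2*h)" using nA e by (intro mult_left_mono) auto
      finally show ?thesis .
    qed
    have B: "\<bar>B\<bar> \<le> e/3 * h"
    proof -
      have "\<bar>B\<bar> \<le> e/3 * norm (0 *\<^sub>R ?ej + \<xi> *\<^sub>R ?ei)"
        using d(2)[of "y + 0 *\<^sub>R ?ej + \<xi> *\<^sub>R ?ei"] nd[of 0 \<xi>] h \<xi> unfolding B_def
        by (simp add: add.assoc)
      also have "\<dots> \<le> e/3 * h" using \<xi> e by simp
      finally show ?thesis .
    qed
    have Dlin: "D (h *\<^sub>R ?ej + \<xi> *\<^sub>R ?ei) = h * D ?ej + \<xi> * D ?ei"
      using lin by (simp add: linear_add linear_scale)
    have Dlin0: "D (0 *\<^sub>R ?ej + \<xi> *\<^sub>R ?ei) = \<xi> * D ?ei"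
      using lin by (simp add: linear_scale)
    have eq: "f (y + h *\<^sub>R ?ei + h *\<^sub>R ?ej) - f (y + h *\<^sub>R ?ei) - f (y + h *\<^sub>R ?ej) + f y
        - h\<^sup>2 * pder j ?p y = h * (A - B)"
    proof -
      have "f (y + h *\<^sub>R ?ei + h *\<^sub>R ?ej) - f (y + h *\<^sub>R ?ei) - f (y + h *\<^sub>R ?ej) + f y = \<Phi> h - \<Phi> 0"
        unfolding \<Phi>_def by (simp add: add_ac)
      also have "\<dots> = h * (A - B + h * D ?ej)"
        using \<xi>(3) unfolding A_def B_def Dlin Dlin0 by (simp add: algebra_simps)
      finally show ?thesis unfolding pj by (simp add: algebra_simps power2_eq_square)
    qed
    have "\<bar>h * (A - B)\<bar> \<le> h * (e/3 * (2*h) + e/3 * h)"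
    proof -
      have "\<bar>A - B\<bar> \<le> e/3 * (2*h) + e/3 * h" using A B by linarith
      then show ?thesis using h by (simp add: abs_mult)
    qed
    also have "\<dots> = e * h\<^sup>2" by (simp add: algebra_simps power2_eq_square)
    finally show "\<bar>f (y + h *\<^sub>R ?ei + h *\<^sub>R ?ej) - f (y + h *\<^sub>R ?ei) - f (y + h *\<^sub>R ?ej) + f y
        - h\<^sup>2 * pder j ?p y\<bar> \<le> e * h\<^sup>2" unfolding eq .
  qed
qed

lemma clairaut:
  fixes f :: "real^'n::finite \<Rightarrow> real"
  assumes U: "open U" and f: "good U f" and y: "y \<in> U"
  shows "pder i (pder j f) y = pder j (pder i f) y"
proof (rule ccontr)
  let ?a = "pder j (pder i f) y" and ?b = "pder i (pder j f) y"
  assume ne: "?b \<noteq> ?a"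
  define e where "e = \<bar>?a - ?b\<bar> / 4"
  have e: "e > 0" using ne by (simp add: e_def)
  obtain d1 where d1: "d1 > 0" "\<And>h. 0 < h \<Longrightarrow> h < d1 \<Longrightarrow>
     \<bar>f (y + h *\<^sub>R axis i 1 + h *\<^sub>R axis j 1) - f (y + h *\<^sub>R axis i 1) - f (y + h *\<^sub>R axis j 1) + f y
        - h\<^sup>2 * ?a\<bar> \<le> e * h\<^sup>2"
    using clairaut_aux[OF U f y e, of i j] by blast
  obtain d2 where d2: "d2 > 0" "\<And>h. 0 < h \<Longrightarrow> h < d2 \<Longrightarrow>
     \<bar>f (y + h *\<^sub>R axis j 1 + h *\<^sub>R axis i 1) - f (y + h *\<^sub>R axis j 1) - f (y + h *\<^sub>R axis i 1) + f y
        - h\<^sup>2 * ?b\<bar> \<le> e * h\<^sup>2"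
    using clairaut_aux[OF U f y e, of j i] by blast
  define h where "h = min d1 d2 / 2"
  have h: "0 < h" "h < d1" "h < d2" using d1 d2 by (auto simp: h_def)
  have sw: "y + h *\<^sub>R axis j 1 + h *\<^sub>R axis i 1 = y + h *\<^sub>R axis i 1 + h *\<^sub>R axis j (1::real)"
    by (simp add: add_ac)
  have "\<bar>h\<^sup>2 * ?a - h\<^sup>2 * ?b\<bar> \<le> 2 * e * h\<^sup>2"
    using d1(2)[OF h(1,2)] d2(2)[OF h(1,3)] unfolding sw by linarith
  moreover have "\<bar>h\<^sup>2 * ?a - h\<^sup>2 * ?b\<bar> = h\<^sup>2 * \<bar>?a - ?b\<bar>"
    by (simp only: right_diff_distrib[symmetric] abs_mult) simp
  moreover have "2 * e * h\<^sup>2 = h\<^sup>2 * (2 * e)" by (simp add: mult.commute)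
  ultimately have "h\<^sup>2 * \<bar>?a - ?b\<bar> \<le> h\<^sup>2 * (2 * e)" by linarith
  then have "\<bar>?a - ?b\<bar> \<le> 2 * e" using h(1) by (simp add: mult_le_cancel_left)
  moreover have "4 * e = \<bar>?a - ?b\<bar>" using e_def by simp
  ultimately show False using e by linarith
qed


lemma bform_alt: "bform G v w = (\<Sum>i\<in>UNIV. v$i * (G *v w)$i)"
  unfolding bform_def matrix_vector_mult_def
  by (simp add: sum_distrib_left mult_ac)

lemma lorentzian_det:
  fixes G :: "real^'n::finite^'n"
  assumes L: "lorentzian G"
  shows "det G \<noteq> 0"
proof
  assume d0: "det G = 0"
  have lin: "linear ((*v) G)" by simp
  have "\<not> inj ((*v) G)"
    using det_nz_iff_inj[OF lin] d0 by (simp add: matrix_of_matrix_vector_mul)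
  then obtain z where z: "z \<noteq> 0" "G *v z = 0"
    using linear_injective_0[OF lin] by auto
  have sym: "\<And>i j. G$i$j = G$j$i" using L unfolding lorentzian_def by blast
  obtain v where v: "bform G v v < 0" using L unfolding lorentzian_def by blast
  obtain W where W: "subspace W" "dim W = CARD('n) - 1" "\<And>w. w \<in> W \<Longrightarrow> w \<noteq> 0 \<Longrightarrow> bform G w w > 0"
    using L unfolding lorentzian_def by blast
  have bz: "bform G a z = 0" for a using z(2) by (simp add: bform_alt)
  have bz2: "bform G z a = 0" for a
  proof -
    have "bform G z a = bform G a z" unfolding bform_def
      by (subst sum.swap) (simp add: sym mult_ac)
    then show ?thesis using bz by simp
  qed
  have zW: "z \<notin> W" using W(3)[of z] z(1) bz[of z] by auto
  have "dim (insert z W) = CARD('n)"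
  proof -
    have sW: "span W = W" using W(1) span_eq_iff by blast
    have c: "CARD('n) > 0" by simp
    have "dim (insert z W) = dim W + 1" using dim_insert[of z W] zW sW by simp
    then show ?thesis using W(2) c by simp
  qed
  then have "span (insert z W) = UNIV" using dim_eq_full[of "insert z W"] by simp
  then have "v \<in> span (insert z W)" by simp
  then obtain k where k: "v - k *\<^sub>R z \<in> W"
    unfolding span_insert using W(1) span_eq_iff by blast
  define w where "w = v - k *\<^sub>R z"
  have vw: "v = w + k *\<^sub>R z" by (simp add: w_def)
  have "bform G v v = bform G w w"
  proof -
    have "bform G v v = bform G w w + k * bform G w z + k * bform G z w + k * k * bform G z z"
      unfolding vw bform_def
      by (simp add: algebra_simps sum.distrib sum_distrib_left)
    then show ?thesis using bz bz2 by simp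
  qed
  moreover have "bform G w w \<ge> 0"
    using W(3)[of w] k w_def by (cases "w = 0") (auto simp: bform_def)
  ultimately show False using v by simp
qed


lemma delta_mult_l: "(if i = k then 1 else 0) * (x::real) = (if i = k then x else 0)" by simp
lemma delta_mult_r: "(x::real) * (if i = k then 1 else 0) = (if i = k then x else 0)" by simp

lemma sum_delta_l [simp]: "(\<Sum>k\<in>(UNIV::'a::finite set). (if i = k then 1 else 0) * (F k::real)) = F i"
  by (simp add: delta_mult_l sum.delta)
lemma sum_delta_r [simp]: "(\<Sum>k\<in>(UNIV::'a::finite set). (F k::real) * (if k = j then 1 else 0)) = F j"
  by (simp add: delta_mult_r sum.delta')
lemma sum_delta_l' [simp]: "(\<Sum>k\<in>(UNIV::'a::finite set). (if k = i then 1 else 0) * (F k::real)) = F i"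
  by (simp add: delta_mult_l sum.delta')
lemma sum_delta_r' [simp]: "(\<Sum>k\<in>(UNIV::'a::finite set). (F k::real) * (if j = k then 1 else 0)) = F j"
  by (simp add: delta_mult_r sum.delta)

lemma swap_cong: "(\<And>a b. a \<in> A \<Longrightarrow> b \<in> B \<Longrightarrow> F a b = G b a) \<Longrightarrow>
   (\<Sum>a\<in>A. \<Sum>b\<in>B. F a b) = (\<Sum>b\<in>B. \<Sum>a\<in>A. (G b a::real))"
  by (subst sum.swap) (rule sum.cong, rule refl, rule sum.cong, auto)

locale geo =
  fixes g :: "real^'n::finite \<Rightarrow> real^'n^'n"
    and u :: "real^'n \<Rightarrow> real^'n"
    and \<phi> :: "real^'n \<Rightarrow> real"
    and U :: "(real^'n) set"
  assumes dim: "CARD('n) > 3"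
    and U_open: "open U"
    and g_smooth: "\<forall>i j. smooth_fn U (\<lambda>x. g x $ i $ j)"
    and g_lor: "\<forall>x\<in>U. lorentzian (g x)"
    and u_smooth: "\<forall>k. smooth_fn U (\<lambda>x. u x $ k)"
    and u_unit: "\<forall>x\<in>U. bform (g x) (u x) (u x) = -1"
    and u_conc: "\<forall>x\<in>U. \<forall>i j. cov_der1 g (lower g u) x i j
                   = \<phi> x * (g x $ i $ j + lower g u x i * lower g u x j)"
begin

lemma sm_add: "good U f \<Longrightarrow> good U h \<Longrightarrow> good U (\<lambda>z. f z + h z)" using good_add U_open by blast
lemma sm_mult: "good U f \<Longrightarrow> good U h \<Longrightarrow> good U (\<lambda>z. f z * h z)" using good_mult U_open by blast
lemma sm_diff: "good U f \<Longrightarrow> good U h \<Longrightarrow> good U (\<lambda>z. f z - h z)" using good_diff' U_open by blast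
lemma sm_minus: "good U f \<Longrightarrow> good U (\<lambda>z. - f z)" using good_minus U_open by blast
lemma sm_const: "good U (\<lambda>z. c)" using good_const by blast
lemma sm_pder: "good U f \<Longrightarrow> good U (pder i f)" using good_pder by blast
lemma sm_sum: "(\<And>a. a \<in> A \<Longrightarrow> good U (\<lambda>z. F z a)) \<Longrightarrow> finite A \<Longrightarrow> good U (\<lambda>z. \<Sum>a\<in>A. F z a)"
  using good_sum U_open by blast
lemma sm_sumU: "(\<And>a. good U (\<lambda>z. F z a)) \<Longrightarrow> good U (\<lambda>z. \<Sum>a\<in>(UNIV::'b::finite set). F z a)"
  by (rule sm_sum) auto
lemma sm_cong: "good U f \<Longrightarrow> (\<And>z. z \<in> U \<Longrightarrow> f z = h z) \<Longrightarrow> good U h"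
  using good_cong U_open by blast

lemmas sm_intros = sm_add sm_mult sm_diff sm_minus sm_const sm_pder sm_sumU

lemma pd_add: "good U f \<Longrightarrow> good U h \<Longrightarrow> y \<in> U \<Longrightarrow> pder i (\<lambda>z. f z + h z) y = pder i f y + pder i h y"
  by (simp add: pder_add good_diff)
lemma pd_diff: "good U f \<Longrightarrow> good U h \<Longrightarrow> y \<in> U \<Longrightarrow> pder i (\<lambda>z. f z - h z) y = pder i f y - pder i h y"
  by (simp add: pder_diff good_diff)
lemma pd_mult: "good U f \<Longrightarrow> good U h \<Longrightarrow> y \<in> U \<Longrightarrow> pder i (\<lambda>z. f z * h z) y = pder i f y * h y + f y * pder i h y"
  by (simp add: pder_mult good_diff)
lemma pd_minus: "good U f \<Longrightarrow> y \<in> U \<Longrightarrow> pder i (\<lambda>z. - f z) y = - pder i f y"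
  by (simp add: pder_minus good_diff)
lemma pd_sumU: "(\<And>a. good U (\<lambda>z. F z a)) \<Longrightarrow> y \<in> U \<Longrightarrow>
    pder i (\<lambda>z. \<Sum>a\<in>(UNIV::'b::finite set). F z a) y = (\<Sum>a\<in>UNIV. pder i (\<lambda>z. F z a) y)"
  by (rule pder_sum) (auto intro: good_diff)
lemma pd_local: "y \<in> U \<Longrightarrow> (\<And>z. z \<in> U \<Longrightarrow> f z = h z) \<Longrightarrow> pder i f y = pder i h y"
  using pder_local U_open by blast

lemma clair: "good U f \<Longrightarrow> y \<in> U \<Longrightarrow> pder i (pder j f) y = pder j (pder i f) y"
  using clairaut U_open by blast

lemma gs: "y \<in> U \<Longrightarrow> g y $ i $ j = g y $ j $ i"
  using g_lor unfolding lorentzian_def by blast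

lemma dnz: "y \<in> U \<Longrightarrow> det (g y) \<noteq> 0"
  using g_lor lorentzian_det by blast

lemma ginv_works: "y \<in> U \<Longrightarrow> g y ** matrix_inv (g y) = mat 1 \<and> matrix_inv (g y) ** g y = mat 1"
proof -
  assume y: "y \<in> U"
  then have "invertible (g y)" using dnz invertible_det_nz by blast
  then show ?thesis unfolding invertible_def matrix_inv_def by (rule someI_ex)
qed

lemma g_gi: "y \<in> U \<Longrightarrow> (\<Sum>k\<in>UNIV. g y $ i $ k * ginv g y k j) = (if i = j then 1 else 0)"
proof -
  assume y: "y \<in> U"
  have "(g y ** matrix_inv (g y)) $ i $ j = mat 1 $ i $ j" using ginv_works[OF y] by simp
  then show ?thesis unfolding ginv_def matrix_matrix_mult_def mat_def by simp
qed
lemma gi_g: "y \<in> U \<Longrightarrow> (\<Sum>k\<in>UNIV. ginv g y i k * g y $ k $ j) = (if i = j then 1 else 0)"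
proof -
  assume y: "y \<in> U"
  have "(matrix_inv (g y) ** g y) $ i $ j = mat 1 $ i $ j" using ginv_works[OF y] by simp
  then show ?thesis unfolding ginv_def matrix_matrix_mult_def mat_def by simp
qed

lemma gis: "y \<in> U \<Longrightarrow> ginv g y i j = ginv g y j i"
proof -
  assume y: "y \<in> U"
  have d: "(\<Sum>l\<in>UNIV. ginv g y l i * g y $ l $ k) = (if k = i then 1 else 0)" for k
    using g_gi[OF y, of k i] gs[OF y] by (simp add: mult.commute)
  have "ginv g y i j = (\<Sum>k\<in>UNIV. (\<Sum>l\<in>UNIV. ginv g y l i * g y $ l $ k) * ginv g y k j)"
    unfolding d by simp
  also have "\<dots> = (\<Sum>l\<in>UNIV. ginv g y l i * (\<Sum>k\<in>UNIV. g y $ l $ k * ginv g y k j))"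
    by (simp add: sum_distrib_left sum_distrib_right mult_ac, subst sum.swap, simp add: mult_ac)
  also have "\<dots> = ginv g y j i" using g_gi[OF y] by simp
  finally show ?thesis .
qed

lemma ginv_cramer: "y \<in> U \<Longrightarrow>
   ginv g y k j = det (\<chi> r c. if c = k then axis j 1 $ r else g y $ r $ c) / det (g y)"
proof -
  assume y: "y \<in> U"
  define x where "x = matrix_inv (g y) *v axis j 1"
  have "g y *v x = axis j 1"
    unfolding x_def by (simp add: matrix_vector_mul_assoc ginv_works[OF y])
  then have "x = (\<chi> k. det (\<chi> r c. if c = k then axis j 1 $ r else g y $ r $ c) / det (g y))"
    using cramer[OF dnz[OF y]] by blast
  then have "x $ k = det (\<chi> r c. if c = k then axis j 1 $ r else g y $ r $ c) / det (g y)" by simp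
  moreover have "x $ k = ginv g y k j"
    unfolding x_def ginv_def matrix_vector_mult_def axis_def
    by (simp add: if_distrib cong: if_cong)
  ultimately show ?thesis by simp
qed

lemma gG: "good U (\<lambda>y. g y $ i $ j)"
  using g_smooth smooth_good U_open by blast
lemma gu: "good U (\<lambda>y. u y $ k)"
  using u_smooth smooth_good U_open by blast

lemma gGi: "good U (\<lambda>y. ginv g y k j)"
proof -
  have e: "good U (\<lambda>z. (\<chi> r c. if c = k then axis j 1 $ r else g z $ r $ c) $ a $ b)" for a b
    by (cases "b = k") (simp_all add: sm_const gG)
  have "good U (\<lambda>y. det (\<chi> r c. if c = k then axis j 1 $ r else g y $ r $ c) / det (g y))"
    by (intro good_divide U_open good_det gG e) (use dnz in auto)
  then show ?thesis by (rule sm_cong) (simp add: ginv_cramer)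
qed

lemma gv: "good U (\<lambda>y. lower g u y j)"
  unfolding lower_def by (intro sm_intros gG gu)

lemma gCh: "good U (\<lambda>y. christ g y k i j)"
  unfolding christ_def by (intro sm_intros gG gGi)

lemma dgs: "y \<in> U \<Longrightarrow> pder k (\<lambda>z. g z $ i $ j) y = pder k (\<lambda>z. g z $ j $ i) y"
  by (rule pd_local) (simp_all add: gs)

lemma christ_sym: "y \<in> U \<Longrightarrow> christ g y k i j = christ g y k j i"
  unfolding christ_def using dgs by (simp add: algebra_simps)

lemma christ_low: "y \<in> U \<Longrightarrow> (\<Sum>q\<in>UNIV. christ g y q i j * g y $ q $ k) =
   (1/2) * (pder i (\<lambda>z. g z $ j $ k) y + pder j (\<lambda>z. g z $ i $ k) y - pder k (\<lambda>z. g z $ i $ j) y)"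
proof -
  assume y: "y \<in> U"
  define S where "S l = pder i (\<lambda>z. g z $ j $ l) y + pder j (\<lambda>z. g z $ i $ l) y - pder l (\<lambda>z. g z $ i $ j) y" for l
  have "(\<Sum>q\<in>UNIV. christ g y q i j * g y $ q $ k) = (\<Sum>q\<in>UNIV. (1/2) * (\<Sum>l\<in>UNIV. ginv g y q l * S l) * g y $ q $ k)"
    unfolding christ_def S_def by simp
  also have "\<dots> = (1/2) * (\<Sum>l\<in>UNIV. S l * (\<Sum>q\<in>UNIV. ginv g y l q * g y $ q $ k))"
    by (simp only: sum_distrib_left sum_distrib_right, rule swap_cong, simp add: gis[OF y] mult_ac)
  also have "\<dots> = (1/2) * S k" using gi_g[OF y] by simp
  finally show ?thesis unfolding S_def .
qed

lemma nabla_g: "y \<in> U \<Longrightarrow> pder i (\<lambda>z. g z $ j $ k) y =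
    (\<Sum>q\<in>UNIV. christ g y q i j * g y $ q $ k) + (\<Sum>q\<in>UNIV. christ g y q i k * g y $ j $ q)"
proof -
  assume y: "y \<in> U"
  have "(\<Sum>q\<in>UNIV. christ g y q i k * g y $ j $ q) = (\<Sum>q\<in>UNIV. christ g y q i k * g y $ q $ j)"
    using gs[OF y] by simp
  then show ?thesis using christ_low[OF y, of i j k] christ_low[OF y, of i k j] dgs[OF y, of _ k j]
    dgs[OF y, of _ j i] by simp
qed

end


context geo begin

lemma pd_cmult: "good U f \<Longrightarrow> y \<in> U \<Longrightarrow> pder i (\<lambda>z. c * f z) y = c * pder i f y"
  by (simp add: pder_cmult good_diff)
lemma pd_divc: "good U f \<Longrightarrow> y \<in> U \<Longrightarrow> pder i (\<lambda>z. f z / c) y = pder i f y / c"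
  using pd_cmult[of f y i "1/c"] by simp
lemma pd_multc: "good U f \<Longrightarrow> y \<in> U \<Longrightarrow> pder i (\<lambda>z. f z * c) y = pder i f y * c"
  using pd_cmult[of f y i c] by (simp add: mult.commute)

lemmas pd_rules = pd_add pd_diff pd_minus pd_sumU pd_cmult pd_multc pd_divc pd_mult pder_const

lemma gdG: "good U (\<lambda>y. pder i (\<lambda>z. g z $ a $ b) y)"
  by (intro sm_intros gG)
lemma gRu: "good U (\<lambda>y. riem_up g y a b c d)"
  unfolding riem_up_def by (intro sm_intros gCh)
lemma gR: "good U (\<lambda>y. riem g y a b c d)"
  unfolding riem_def by (intro sm_intros gG gRu)

lemma gdL: "y \<in> U \<Longrightarrow> (\<Sum>e\<in>UNIV. g y $ a $ e * pder c (\<lambda>z. christ g z e d b) y) =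
   (1/2) * (pder c (pder d (\<lambda>z. g z $ b $ a)) y + pder c (pder b (\<lambda>z. g z $ d $ a)) y
            - pder c (pder a (\<lambda>z. g z $ d $ b)) y)
   - (\<Sum>e\<in>UNIV. pder c (\<lambda>z. g z $ a $ e) y * christ g y e d b)"
proof -
  assume y: "y \<in> U"
  define L where "L z = (\<Sum>e\<in>UNIV. g z $ a $ e * christ g z e d b)" for z
  have pL: "pder c L y = (\<Sum>e\<in>UNIV. pder c (\<lambda>z. g z $ a $ e) y * christ g y e d b
                                    + g y $ a $ e * pder c (\<lambda>z. christ g z e d b) y)"
    unfolding L_def using y by (simp add: pd_sumU pd_mult sm_intros gG gCh)
  have Lz: "L z = (1/2) * (pder d (\<lambda>z. g z $ b $ a) z + pder b (\<lambda>z. g z $ d $ a) z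
            - pder a (\<lambda>z. g z $ d $ b) z)" if z: "z \<in> U" for z
    unfolding L_def using christ_low[OF z, of d b a] gs[OF z]
    by (simp add: mult.commute)
  have "pder c L y = pder c (\<lambda>z. (1/2) * (pder d (\<lambda>z. g z $ b $ a) z + pder b (\<lambda>z. g z $ d $ a) z
            - pder a (\<lambda>z. g z $ d $ b) z)) y"
    by (rule pd_local[OF y]) (simp add: Lz)
  also have "\<dots> = (1/2) * (pder c (pder d (\<lambda>z. g z $ b $ a)) y + pder c (pder b (\<lambda>z. g z $ d $ a)) y
            - pder c (pder a (\<lambda>z. g z $ d $ b)) y)"
    using y by (simp add: pd_rules sm_intros gG)
  finally show ?thesis using pL by (simp add: sum.distrib, linarith)
qed

lemma gdN: "y \<in> U \<Longrightarrow> (\<Sum>e\<in>UNIV. pder c (\<lambda>z. g z $ a $ e) y * christ g y e d b) =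
   (\<Sum>e\<in>UNIV. \<Sum>q\<in>UNIV. christ g y q c a * g y $ q $ e * christ g y e d b)
   + (\<Sum>e\<in>UNIV. g y $ a $ e * (\<Sum>f\<in>UNIV. christ g y e c f * christ g y f d b))"
proof -
  assume y: "y \<in> U"
  have "(\<Sum>e\<in>UNIV. pder c (\<lambda>z. g z $ a $ e) y * christ g y e d b) =
     (\<Sum>e\<in>UNIV. \<Sum>q\<in>UNIV. christ g y q c a * g y $ q $ e * christ g y e d b)
   + (\<Sum>e\<in>UNIV. \<Sum>q\<in>UNIV. christ g y q c e * g y $ a $ q * christ g y e d b)"
    unfolding nabla_g[OF y] by (simp add: sum.distrib sum_distrib_right distrib_right)
  also have "(\<Sum>e\<in>UNIV. \<Sum>q\<in>UNIV. christ g y q c e * g y $ a $ q * christ g y e d b)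
     = (\<Sum>e\<in>UNIV. g y $ a $ e * (\<Sum>f\<in>UNIV. christ g y e c f * christ g y f d b))"
    by (simp only: sum_distrib_left, rule swap_cong, simp add: mult_ac)
  finally show ?thesis .
qed

lemma riem_split: "riem g y a b c d =
    (\<Sum>e\<in>UNIV. g y $ a $ e * pder c (\<lambda>z. christ g z e d b) y)
  - (\<Sum>e\<in>UNIV. g y $ a $ e * pder d (\<lambda>z. christ g z e c b) y)
  + (\<Sum>e\<in>UNIV. g y $ a $ e * (\<Sum>f\<in>UNIV. christ g y e c f * christ g y f d b))
  - (\<Sum>e\<in>UNIV. g y $ a $ e * (\<Sum>f\<in>UNIV. christ g y e d f * christ g y f c b))"
  unfolding riem_def riem_up_def
  by (simp add: sum_subtractf sum.distrib right_diff_distrib distrib_left)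

lemma riem_formula: "y \<in> U \<Longrightarrow> riem g y a b c d =
   (1/2) * (pder c (pder b (\<lambda>z. g z $ d $ a)) y - pder c (pder a (\<lambda>z. g z $ d $ b)) y
          - pder d (pder b (\<lambda>z. g z $ c $ a)) y + pder d (pder a (\<lambda>z. g z $ c $ b)) y)
   - (\<Sum>e\<in>UNIV. \<Sum>q\<in>UNIV. christ g y q c a * g y $ q $ e * christ g y e d b)
   + (\<Sum>e\<in>UNIV. \<Sum>q\<in>UNIV. christ g y q d a * g y $ q $ e * christ g y e c b)"
proof -
  assume y: "y \<in> U"
  have cl: "pder c (pder d (\<lambda>z. g z $ b $ a)) y = pder d (pder c (\<lambda>z. g z $ b $ a)) y"
    by (rule clair[OF gG y])
  show ?thesis
    unfolding riem_split gdL[OF y, of a c d b] gdL[OF y, of a d c b]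
      gdN[OF y, of c a d b] gdN[OF y, of d a c b] cl by (simp add: algebra_simps)
qed

lemma ddgs: "y \<in> U \<Longrightarrow> pder c (pder k (\<lambda>z. g z $ i $ j)) y = pder c (pder k (\<lambda>z. g z $ j $ i)) y"
  by (rule pd_local) (simp_all add: dgs)

lemma riem_anti1: "y \<in> U \<Longrightarrow> riem g y a b c d = - riem g y b a c d"
proof -
  assume y: "y \<in> U"
  have M: "(\<Sum>e\<in>UNIV. \<Sum>q\<in>UNIV. christ g y q c a * g y $ q $ e * christ g y e d b)
     = (\<Sum>e\<in>UNIV. \<Sum>q\<in>UNIV. christ g y q d b * g y $ q $ e * christ g y e c a)" for c d a b
    by (rule swap_cong) (simp add: gs[OF y] mult_ac)
  show ?thesis
    unfolding riem_formula[OF y, of a b] riem_formula[OF y, of b a] M[of c a d b] M[of d a c b]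
    by (simp add: algebra_simps)
qed

lemma riem_anti2: "riem g y a b c d = - riem g y a b d c"
  unfolding riem_def riem_up_def by (simp add: sum_negf[symmetric] algebra_simps sum_subtractf)

lemma dChs: "y \<in> U \<Longrightarrow> pder k (\<lambda>z. christ g z a i j) y = pder k (\<lambda>z. christ g z a j i) y"
  by (rule pd_local) (simp_all add: christ_sym)

lemma riem_up_bianchi: "y \<in> U \<Longrightarrow> riem_up g y a b c d + riem_up g y a c d b + riem_up g y a d b c = 0"
proof -
  assume y: "y \<in> U"
  have s1: "\<And>f. christ g y f b d = christ g y f d b" "\<And>f. christ g y f b c = christ g y f c b"
     "\<And>f. christ g y f c d = christ g y f d c" using christ_sym[OF y] by blast+
  show ?thesis unfolding riem_up_def
    using dChs[OF y, of d a b c] dChs[OF y, of b a c d] dChs[OF y, of c a b d]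
    by (simp add: s1 sum_subtractf sum.distrib[symmetric] algebra_simps)
qed

lemma riem_bianchi: "y \<in> U \<Longrightarrow> riem g y a b c d + riem g y a c d b + riem g y a d b c = 0"
proof -
  assume y: "y \<in> U"
  have "riem g y a b c d + riem g y a c d b + riem g y a d b c =
    (\<Sum>e\<in>UNIV. g y $ a $ e * (riem_up g y e b c d + riem_up g y e c d b + riem_up g y e d b c))"
    unfolding riem_def by (simp add: sum.distrib distrib_left)
  also have "\<dots> = 0" by (simp add: riem_up_bianchi[OF y])
  finally show ?thesis .
qed

lemma riem_pair: "y \<in> U \<Longrightarrow> riem g y a b c d = riem g y c d a b"
proof -
  assume y: "y \<in> U"
  note A1 = riem_anti1[OF y] and A2 = riem_anti2[of y] and B = riem_bianchi[OF y]
  show ?thesis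
    using B[of a b c d] B[of b c d a] B[of c d a b] B[of d a b c]
      A1[of b a c d] A1[of d c a b] A1[of c b d a] A1[of d a b c] A1[of c a b d] A2[of a c b d]
      A1[of d b c a] A2[of b d c a]
    by linarith
qed

end


definition cd2 :: "(real^'n::finite \<Rightarrow> real^'n^'n) \<Rightarrow> (real^'n \<Rightarrow> 'n \<Rightarrow> 'n \<Rightarrow> real) \<Rightarrow> real^'n \<Rightarrow> 'n \<Rightarrow> 'n \<Rightarrow> 'n \<Rightarrow> real" where
  "cd2 g T y a b c = pder a (\<lambda>z. T z b c) y - (\<Sum>k\<in>UNIV. christ g y k a b * T y k c)
      - (\<Sum>k\<in>UNIV. christ g y k a c * T y b k)"

definition hten :: "(real^'n::finite \<Rightarrow> real^'n^'n) \<Rightarrow> (real^'n \<Rightarrow> real^'n) \<Rightarrow> real^'n \<Rightarrow> 'n \<Rightarrow> 'n \<Rightarrow> real" where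
  "hten g u y i j = g y $ i $ j + lower g u y i * lower g u y j"

context geo begin

lemma gcd1: "(\<And>c. good U (\<lambda>z. w z c)) \<Longrightarrow> good U (\<lambda>z. cov_der1 g w z b c)"
  unfolding cov_der1_def by (intro sm_intros gCh) auto

lemma ricci_identity:
  assumes y: "y \<in> U" and w: "\<And>c. good U (\<lambda>z. w z c)"
  shows "cd2 g (cov_der1 g w) y a b c - cd2 g (cov_der1 g w) y b a c
       = - (\<Sum>m\<in>UNIV. riem_up g y m c a b * w y m)"
proof -
  let ?G = "christ g y"
  have e: "pder a (\<lambda>z. cov_der1 g w z b c) y = pder a (pder b (\<lambda>z. w z c)) y
      - ((\<Sum>k\<in>UNIV. pder a (\<lambda>z. christ g z k b c) y * w y k) + (\<Sum>k\<in>UNIV. ?G k b c * pder a (\<lambda>z. w z k) y))"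
    for a b
    unfolding cov_der1_def using y w by (simp add: pd_rules sm_intros gCh sum.distrib)
  have cl: "pder a (pder b (\<lambda>z. w z c)) y = pder b (pder a (\<lambda>z. w z c)) y" by (rule clair[OF w y])
  have sy: "(\<Sum>k\<in>UNIV. ?G k a b * cov_der1 g w y k c) = (\<Sum>k\<in>UNIV. ?G k b a * cov_der1 g w y k c)"
    using christ_sym[OF y] by simp
  have q: "(\<Sum>k\<in>UNIV. ?G k a c * cov_der1 g w y b k) = (\<Sum>k\<in>UNIV. ?G k a c * pder b (\<lambda>z. w z k) y)
       - (\<Sum>k\<in>UNIV. \<Sum>m\<in>UNIV. ?G k a c * ?G m b k * w y m)" for a b
    unfolding cov_der1_def by (simp add: right_diff_distrib sum_subtractf sum_distrib_left mult_ac)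
  have r: "(\<Sum>m\<in>UNIV. riem_up g y m c a b * w y m) =
      (\<Sum>k\<in>UNIV. pder a (\<lambda>z. christ g z k b c) y * w y k) - (\<Sum>k\<in>UNIV. pder b (\<lambda>z. christ g z k a c) y * w y k)
      + (\<Sum>k\<in>UNIV. \<Sum>m\<in>UNIV. ?G k b c * ?G m a k * w y m) - (\<Sum>k\<in>UNIV. \<Sum>m\<in>UNIV. ?G k a c * ?G m b k * w y m)"
  proof -
    have "(\<Sum>m\<in>UNIV. riem_up g y m c a b * w y m) =
      (\<Sum>k\<in>UNIV. pder a (\<lambda>z. christ g z k b c) y * w y k) - (\<Sum>k\<in>UNIV. pder b (\<lambda>z. christ g z k a c) y * w y k)
      + (\<Sum>m\<in>UNIV. \<Sum>k\<in>UNIV. ?G m a k * ?G k b c * w y m) - (\<Sum>m\<in>UNIV. \<Sum>k\<in>UNIV. ?G m b k * ?G k a c * w y m)"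
      unfolding riem_up_def
      by (simp add: algebra_simps sum_subtractf sum.distrib sum_distrib_left sum_distrib_right)
    also have "(\<Sum>m\<in>UNIV. \<Sum>k\<in>UNIV. ?G m a k * ?G k b c * w y m) = (\<Sum>k\<in>UNIV. \<Sum>m\<in>UNIV. ?G k b c * ?G m a k * w y m)"
      by (rule swap_cong) (simp add: mult_ac)
    also have "(\<Sum>m\<in>UNIV. \<Sum>k\<in>UNIV. ?G m b k * ?G k a c * w y m) = (\<Sum>k\<in>UNIV. \<Sum>m\<in>UNIV. ?G k a c * ?G m b k * w y m)"
      by (rule swap_cong) (simp add: mult_ac)
    finally show ?thesis .
  qed
  show ?thesis
    unfolding cd2_def e[of a b] e[of b a] cl sy q[of a b] q[of b a] r
    by (simp add: algebra_simps)
qed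

lemma raise_v: "y \<in> U \<Longrightarrow> (\<Sum>i\<in>UNIV. ginv g y j i * lower g u y i) = u y $ j"
proof -
  assume y: "y \<in> U"
  have "(\<Sum>i\<in>UNIV. ginv g y j i * lower g u y i) = (\<Sum>k\<in>UNIV. (\<Sum>i\<in>UNIV. ginv g y j i * g y $ i $ k) * u y $ k)"
    unfolding lower_def by (simp only: sum_distrib_left sum_distrib_right, rule swap_cong, simp add: mult_ac)
  also have "\<dots> = u y $ j" using gi_g[OF y] by simp
  finally show ?thesis .
qed

lemma uv: "y \<in> U \<Longrightarrow> (\<Sum>j\<in>UNIV. u y $ j * lower g u y j) = -1"
  using u_unit unfolding lower_def bform_def by (simp add: sum_distrib_left mult_ac)

lemma trace_g: "y \<in> U \<Longrightarrow> (\<Sum>i\<in>UNIV. \<Sum>j\<in>UNIV. ginv g y i j * g y $ i $ j) = real CARD('n)"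
proof -
  assume y: "y \<in> U"
  have "(\<Sum>i\<in>UNIV. \<Sum>j\<in>UNIV. ginv g y i j * g y $ i $ j) = (\<Sum>i\<in>UNIV. \<Sum>j\<in>UNIV. ginv g y i j * g y $ j $ i)"
    using gs[OF y] by simp
  also have "\<dots> = (\<Sum>i\<in>(UNIV::'n set). 1)" using gi_g[OF y] by simp
  finally show ?thesis by simp
qed

lemma trace_vv: "y \<in> U \<Longrightarrow> (\<Sum>i\<in>UNIV. \<Sum>j\<in>UNIV. ginv g y i j * (lower g u y i * lower g u y j)) = -1"
proof -
  assume y: "y \<in> U"
  have "(\<Sum>i\<in>UNIV. \<Sum>j\<in>UNIV. ginv g y i j * (lower g u y i * lower g u y j))
      = (\<Sum>j\<in>UNIV. (\<Sum>i\<in>UNIV. ginv g y j i * lower g u y i) * lower g u y j)"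
    by (simp only: sum_distrib_left sum_distrib_right, rule swap_cong, simp add: mult_ac gis[OF y])
  also have "\<dots> = -1" using raise_v[OF y] uv[OF y] by simp
  finally show ?thesis .
qed

lemma phi_formula: "y \<in> U \<Longrightarrow>
   \<phi> y = (\<Sum>i\<in>UNIV. \<Sum>j\<in>UNIV. ginv g y i j * cov_der1 g (lower g u) y i j) / (real CARD('n) - 1)"
proof -
  assume y: "y \<in> U"
  have "(\<Sum>i\<in>UNIV. \<Sum>j\<in>UNIV. ginv g y i j * cov_der1 g (lower g u) y i j)
    = \<phi> y * ((\<Sum>i\<in>UNIV. \<Sum>j\<in>UNIV. ginv g y i j * g y $ i $ j) +
              (\<Sum>i\<in>UNIV. \<Sum>j\<in>UNIV. ginv g y i j * (lower g u y i * lower g u y j)))"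
    using u_conc y by (simp add: distrib_left sum.distrib sum_distrib_left mult_ac)
  also have "\<dots> = \<phi> y * (real CARD('n) - 1)" using trace_g[OF y] trace_vv[OF y] by simp
  finally show ?thesis using dim by simp
qed

lemma gphi: "good U \<phi>"
proof -
  have "good U (\<lambda>y. (\<Sum>i\<in>UNIV. \<Sum>j\<in>UNIV. ginv g y i j * cov_der1 g (lower g u) y i j) / (real CARD('n) - 1))"
    by (intro good_divide U_open sm_intros gGi gcd1 gv) (use dim in auto)
  then show ?thesis by (rule sm_cong) (simp add: phi_formula)
qed

lemma gh: "good U (\<lambda>z. hten g u z i j)"
  unfolding hten_def by (intro sm_intros gG gv)

lemma cd2_local:
  assumes y: "y \<in> U" and eq: "\<And>z b c. z \<in> U \<Longrightarrow> T z b c = S z b c"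
  shows "cd2 g T y a b c = cd2 g S y a b c"
proof -
  have "pder a (\<lambda>z. T z b c) y = pder a (\<lambda>z. S z b c) y" by (rule pd_local[OF y]) (simp add: eq)
  then show ?thesis unfolding cd2_def using eq[OF y] by simp
qed

lemma cd2_scal: "y \<in> U \<Longrightarrow> good U f \<Longrightarrow> good U (\<lambda>z. T z b c) \<Longrightarrow>
   cd2 g (\<lambda>z b c. f z * T z b c) y a b c = pder a f y * T y b c + f y * cd2 g T y a b c"
  unfolding cd2_def by (simp add: pd_rules algebra_simps sum_distrib_left)

lemma cd2_add: "y \<in> U \<Longrightarrow> good U (\<lambda>z. T z b c) \<Longrightarrow> good U (\<lambda>z. S z b c) \<Longrightarrow>
   cd2 g (\<lambda>z b c. T z b c + S z b c) y a b c = cd2 g T y a b c + cd2 g S y a b c"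
  unfolding cd2_def by (simp add: pd_rules algebra_simps sum.distrib)

lemma cd2_g: "y \<in> U \<Longrightarrow> cd2 g (\<lambda>z b c. g z $ b $ c) y a b c = 0"
  unfolding cd2_def using nabla_g[of y a b c] by (simp add: gs)

lemma cd2_vv: "y \<in> U \<Longrightarrow> cd2 g (\<lambda>z b c. lower g u z b * lower g u z c) y a b c =
    cov_der1 g (lower g u) y a b * lower g u y c + lower g u y b * cov_der1 g (lower g u) y a c"
  unfolding cd2_def cov_der1_def
  by (simp add: pd_rules gv algebra_simps sum_distrib_left sum_distrib_right sum_subtractf)

lemma cd2_h: "y \<in> U \<Longrightarrow> cd2 g (hten g u) y a b c =
    \<phi> y * (hten g u y a b * lower g u y c + lower g u y b * hten g u y a c)"
proof -
  assume y: "y \<in> U"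
  have "cd2 g (hten g u) y a b c = cd2 g (\<lambda>z b c. g z $ b $ c) y a b c + cd2 g (\<lambda>z b c. lower g u z b * lower g u z c) y a b c"
    unfolding hten_def using y by (intro cd2_add) (auto intro: sm_intros gG gv)
  then show ?thesis using y u_conc by (simp add: cd2_g cd2_vv hten_def algebra_simps)
qed

lemma K1: "y \<in> U \<Longrightarrow> (\<Sum>k\<in>UNIV. u y $ k * riem g y k c a b) =
   hten g u y a c * (pder b \<phi> y - (\<phi> y)\<^sup>2 * lower g u y b) - hten g u y b c * (pder a \<phi> y - (\<phi> y)\<^sup>2 * lower g u y a)"
proof -
  assume y: "y \<in> U"
  have cc: "cd2 g (cov_der1 g (lower g u)) y a b c = cd2 g (\<lambda>z b c. \<phi> z * hten g u z b c) y a b c" for a b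
    by (rule cd2_local[OF y]) (use u_conc in \<open>simp add: hten_def\<close>)
  have cc2: "cd2 g (\<lambda>z b c. \<phi> z * hten g u z b c) y a b c =
      pder a \<phi> y * hten g u y b c + \<phi> y * (\<phi> y * (hten g u y a b * lower g u y c + lower g u y b * hten g u y a c))" for a b
    using cd2_scal[OF y gphi gh] cd2_h[OF y] by simp
  have ri: "cd2 g (cov_der1 g (lower g u)) y a b c - cd2 g (cov_der1 g (lower g u)) y b a c
       = - (\<Sum>m\<in>UNIV. riem_up g y m c a b * lower g u y m)"
    by (rule ricci_identity[OF y gv])
  have low: "(\<Sum>m\<in>UNIV. riem_up g y m c a b * lower g u y m) = (\<Sum>k\<in>UNIV. u y $ k * riem g y k c a b)"
    unfolding lower_def riem_def
    by (simp only: sum_distrib_left sum_distrib_right, rule swap_cong, simp add: mult_ac gs[OF y])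
  have hs: "hten g u y b a = hten g u y a b" "hten g u y c a = hten g u y a c" "hten g u y c b = hten g u y b c"
    unfolding hten_def using gs[OF y] by (auto simp: mult.commute)
  show ?thesis using ri unfolding cc cc2 low hs
    by (simp add: algebra_simps power2_eq_square)
qed

end


lemma gen_curv_I:
  assumes "\<And>i k l m. T i k l m = - T k i l m" "\<And>i k l m. T i k l m = - T i k m l"
    "\<And>i k l m. T i k l m + T k l i m + T l i k m = 0"
  shows "gen_curv T"
proof -
  have "T i k l m = T l m i k" for i k l m
    using assms(3)[of i k l m] assms(3)[of i k m l] assms(3)[of i l k m] assms(3)[of i l m k] assms(3)[of i m k l] assms(3)[of i m l k] assms(3)[of k i l m] assms(3)[of k i m l] assms(3)[of k l i m] assms(3)[of k l m i] assms(3)[of k m i l] assms(3)[of k m l i] assms(3)[of l i k m] assms(3)[of l i m k] assms(3)[of l k i m] assms(3)[of l k m i] assms(3)[of l m i k] assms(3)[of l m k i] assms(3)[of m i k l] assms(3)[of m i l k] assms(3)[of m k i l] assms(3)[of m k l i] assms(3)[of m l i k] assms(3)[of m l k i]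
      assms(1)[of i k l m] assms(1)[of i k m l] assms(1)[of i l k m] assms(1)[of i l m k] assms(1)[of i m k l] assms(1)[of i m l k] assms(1)[of k i l m] assms(1)[of k i m l] assms(1)[of k l i m] assms(1)[of k l m i] assms(1)[of k m i l] assms(1)[of k m l i] assms(1)[of l i k m] assms(1)[of l i m k] assms(1)[of l k i m] assms(1)[of l k m i] assms(1)[of l m i k] assms(1)[of l m k i] assms(1)[of m i k l] assms(1)[of m i l k] assms(1)[of m k i l] assms(1)[of m k l i] assms(1)[of m l i k] assms(1)[of m l k i]
      assms(2)[of i k l m] assms(2)[of i k m l] assms(2)[of i l k m] assms(2)[of i l m k] assms(2)[of i m k l] assms(2)[of i m l k] assms(2)[of k i l m] assms(2)[of k i m l] assms(2)[of k l i m] assms(2)[of k l m i] assms(2)[of k m i l] assms(2)[of k m l i] assms(2)[of l i k m] assms(2)[of l i m k] assms(2)[of l k i m] assms(2)[of l k m i] assms(2)[of l m i k] assms(2)[of l m k i] assms(2)[of m i k l] assms(2)[of m i l k] assms(2)[of m k i l] assms(2)[of m k l i] assms(2)[of m l i k] assms(2)[of m l k i]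
    by linarith
  then show ?thesis unfolding gen_curv_def using assms by blast
qed

lemma gen_curv_D:
  assumes "gen_curv T"
  shows "T i k l m = - T k i l m" "T i k l m = - T i k m l" "T i k l m = T l m i k"
    "T i k l m + T k l i m + T l i k m = 0"
  using assms unfolding gen_curv_def by blast+

lemma gen_curv_lin:
  assumes "gen_curv A" "gen_curv B"
  shows "gen_curv (\<lambda>i k l m. a * A i k l m + b * B i k l m)"
proof (rule gen_curv_I)
  fix i k l m
  show "a * A i k l m + b * B i k l m = - (a * A k i l m + b * B k i l m)"
    using gen_curv_D(1)[OF assms(1), of i k l m] gen_curv_D(1)[OF assms(2), of i k l m] by simp
  show "a * A i k l m + b * B i k l m = - (a * A i k m l + b * B i k m l)"
    using gen_curv_D(2)[OF assms(1), of i k l m] gen_curv_D(2)[OF assms(2), of i k l m] by simp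
  have "a * (A i k l m + A k l i m + A l i k m) + b * (B i k l m + B k l i m + B l i k m) = 0"
    using gen_curv_D(4)[OF assms(1), of i k l m] gen_curv_D(4)[OF assms(2), of i k l m] by simp
  then show "a * A i k l m + b * B i k l m + (a * A k l i m + b * B k l i m) + (a * A l i k m + b * B l i k m) = 0"
    by (simp add: algebra_simps)
qed

lemma gen_curv_lin3:
  assumes "gen_curv A" "gen_curv B" "gen_curv C"
  shows "gen_curv (\<lambda>i k l m. A i k l m + a * B i k l m + b * C i k l m)"
proof (rule gen_curv_I)
  fix i k l m
  note A = gen_curv_D[OF assms(1)] and B = gen_curv_D[OF assms(2)] and C = gen_curv_D[OF assms(3)]
  show "A i k l m + a * B i k l m + b * C i k l m = - (A k i l m + a * B k i l m + b * C k i l m)"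
    using A(1)[of i k l m] B(1)[of i k l m] C(1)[of i k l m] by simp
  show "A i k l m + a * B i k l m + b * C i k l m = - (A i k m l + a * B i k m l + b * C i k m l)"
    using A(2)[of i k l m] B(2)[of i k l m] C(2)[of i k l m] by simp
  have "(A i k l m + A k l i m + A l i k m) + a * (B i k l m + B k l i m + B l i k m) + b * (C i k l m + C k l i m + C l i k m) = 0"
    using A(4)[of i k l m] B(4)[of i k l m] C(4)[of i k l m] by simp
  then show "A i k l m + a * B i k l m + b * C i k l m + (A k l i m + a * B k l i m + b * C k l i m) + (A l i k m + a * B l i k m + b * C l i k m) = 0"
    by (simp add: algebra_simps)
qed

definition KN :: "('n \<Rightarrow> 'n \<Rightarrow> real) \<Rightarrow> ('n \<Rightarrow> 'n \<Rightarrow> real) \<Rightarrow> 'n \<Rightarrow> 'n \<Rightarrow> 'n \<Rightarrow> 'n \<Rightarrow> real" where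
  "KN P Q i k l m = P i m * Q k l - P k m * Q i l - P i l * Q k m + P k l * Q i m"

lemma KN_gen_curv:
  assumes "\<And>a b. P a b = P b a" "\<And>a b. Q a b = Q b a"
  shows "gen_curv (KN P Q)"
  by (rule gen_curv_I) (auto simp: KN_def assms algebra_simps)

lemma traceless_I:
  fixes G :: "real^'n::finite^'n"
  assumes T: "gen_curv T" and H: "\<And>a b. matrix_inv G $ a $ b = matrix_inv G $ b $ a"
    and c13: "\<And>p q. (\<Sum>a\<in>UNIV. \<Sum>b\<in>UNIV. matrix_inv G $ a $ b * T a p b q) = 0"
  shows "totally_traceless G T"
proof -
  let ?H = "matrix_inv G"
  note D = gen_curv_D[OF T]
  have c12: "(\<Sum>a\<in>UNIV. \<Sum>b\<in>UNIV. ?H $ a $ b * T a b p q) = 0" for p q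
  proof -
    have e: "?H $ a $ b * T a b p q = - (?H $ b $ a * T b a p q)" for a b
      using H[of a b] D(1)[of a b p q] by simp
    have "(\<Sum>a\<in>UNIV. \<Sum>b\<in>UNIV. ?H $ a $ b * T a b p q) = (\<Sum>a\<in>UNIV. \<Sum>b\<in>UNIV. - (?H $ b $ a * T b a p q))"
      by (intro sum.cong refl) (rule e)
    also have "\<dots> = - (\<Sum>a\<in>UNIV. \<Sum>b\<in>UNIV. ?H $ b $ a * T b a p q)"
      by (simp add: sum_negf)
    also have "(\<Sum>a\<in>UNIV. \<Sum>b\<in>UNIV. ?H $ b $ a * T b a p q) = (\<Sum>a\<in>UNIV. \<Sum>b\<in>UNIV. ?H $ a $ b * T a b p q)"
      by (rule swap_cong) simp
    finally show ?thesis by simp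
  qed
  have c34: "(\<Sum>a\<in>UNIV. \<Sum>b\<in>UNIV. ?H $ a $ b * T p q a b) = 0" for p q
  proof -
    have "(\<Sum>a\<in>UNIV. \<Sum>b\<in>UNIV. ?H $ a $ b * T p q a b) = (\<Sum>a\<in>UNIV. \<Sum>b\<in>UNIV. ?H $ a $ b * T a b p q)"
      by (intro sum.cong refl arg_cong[where f="\<lambda>x. _ * x"] D(3))
    then show ?thesis using c12 by simp
  qed
  have c14: "(\<Sum>a\<in>UNIV. \<Sum>b\<in>UNIV. ?H $ a $ b * T a p q b) = 0" for p q
  proof -
    have "(\<Sum>a\<in>UNIV. \<Sum>b\<in>UNIV. ?H $ a $ b * T a p q b) = (\<Sum>a\<in>UNIV. \<Sum>b\<in>UNIV. - (?H $ a $ b * T a p b q))"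
      by (intro sum.cong refl) (simp add: D(2)[of _ p q])
    then show ?thesis using c13 by (simp add: sum_negf)
  qed
  have c23: "(\<Sum>a\<in>UNIV. \<Sum>b\<in>UNIV. ?H $ a $ b * T p a b q) = 0" for p q
  proof -
    have "(\<Sum>a\<in>UNIV. \<Sum>b\<in>UNIV. ?H $ a $ b * T p a b q) = (\<Sum>a\<in>UNIV. \<Sum>b\<in>UNIV. - (?H $ a $ b * T a p b q))"
      by (intro sum.cong refl) (simp add: D(1)[of p])
    then show ?thesis using c13 by (simp add: sum_negf)
  qed
  have c24: "(\<Sum>a\<in>UNIV. \<Sum>b\<in>UNIV. ?H $ a $ b * T p a q b) = 0" for p q
  proof -
    have e: "T p a q b = T a p b q" for a b using D(1)[of p a q b] D(2)[of a p q b] by simp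
    have "(\<Sum>a\<in>UNIV. \<Sum>b\<in>UNIV. ?H $ a $ b * T p a q b) = (\<Sum>a\<in>UNIV. \<Sum>b\<in>UNIV. ?H $ a $ b * T a p b q)"
      by (intro sum.cong refl) (simp add: e)
    then show ?thesis using c13 by simp
  qed
  show ?thesis unfolding totally_traceless_def Let_def using c12 c13 c14 c23 c24 c34 by blast
qed

lemma KN_c4: "(\<Sum>m\<in>UNIV. w m * KN P Q i k l m) = (\<Sum>m\<in>UNIV. w m * P i m) * Q k l
   - (\<Sum>m\<in>UNIV. w m * P k m) * Q i l - P i l * (\<Sum>m\<in>UNIV. w m * Q k m) + P k l * (\<Sum>m\<in>UNIV. w m * Q i m)"
  unfolding KN_def by (simp add: sum.distrib sum_subtractf sum_distrib_left sum_distrib_right algebra_simps)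

lemma KN_c1: "(\<Sum>i\<in>UNIV. w i * KN P Q i k l m) = (\<Sum>i\<in>UNIV. w i * P i m) * Q k l
   - P k m * (\<Sum>i\<in>UNIV. w i * Q i l) - (\<Sum>i\<in>UNIV. w i * P i l) * Q k m + P k l * (\<Sum>i\<in>UNIV. w i * Q i m)"
  unfolding KN_def by (simp add: sum.distrib sum_subtractf sum_distrib_left sum_distrib_right algebra_simps)

lemma KN_c13: "(\<Sum>i\<in>UNIV. \<Sum>l\<in>UNIV. H i l * KN P Q i k l m) =
    (\<Sum>i\<in>UNIV. \<Sum>l\<in>UNIV. H i l * (P i m * Q k l)) - P k m * (\<Sum>i\<in>UNIV. \<Sum>l\<in>UNIV. H i l * Q i l)
  - (\<Sum>i\<in>UNIV. \<Sum>l\<in>UNIV. H i l * P i l) * Q k m + (\<Sum>i\<in>UNIV. \<Sum>l\<in>UNIV. H i l * (P k l * Q i m))"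
  unfolding KN_def by (simp add: sum.distrib sum_subtractf sum_distrib_left sum_distrib_right algebra_simps)

lemma sum_lc3: "(\<Sum>m\<in>UNIV. w m * (A m + a * B m + b * C m)) =
    (\<Sum>m\<in>UNIV. w m * A m) + a * (\<Sum>m\<in>UNIV. w m * B m) + b * (\<Sum>m\<in>UNIV. w m * (C m::real))"
  by (simp add: sum.distrib sum_distrib_left algebra_simps)

lemma sum2_lc3: "(\<Sum>i\<in>UNIV. \<Sum>l\<in>UNIV. H i l * (A i l + a * B i l + b * C i l)) =
    (\<Sum>i\<in>UNIV. \<Sum>l\<in>UNIV. H i l * A i l) + a * (\<Sum>i\<in>UNIV. \<Sum>l\<in>UNIV. H i l * B i l)
  + b * (\<Sum>i\<in>UNIV. \<Sum>l\<in>UNIV. H i l * (C i l::real))"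
  by (simp add: sum.distrib sum_distrib_left algebra_simps)

context geo begin

lemma riem_up_low: "y \<in> U \<Longrightarrow> riem_up g y a b c d = (\<Sum>e\<in>UNIV. ginv g y a e * riem g y e b c d)"
proof -
  assume y: "y \<in> U"
  have "(\<Sum>e\<in>UNIV. ginv g y a e * riem g y e b c d) = (\<Sum>f\<in>UNIV. (\<Sum>e\<in>UNIV. ginv g y a e * g y $ e $ f) * riem_up g y f b c d)"
    unfolding riem_def by (simp only: sum_distrib_left sum_distrib_right, rule swap_cong, simp add: mult_ac)
  also have "\<dots> = riem_up g y a b c d" using gi_g[OF y] by simp
  finally show ?thesis by simp
qed

lemma ricci_low: "y \<in> U \<Longrightarrow> ricci g y b d = (\<Sum>a\<in>UNIV. \<Sum>c\<in>UNIV. ginv g y a c * riem g y a b c d)"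
proof -
  assume y: "y \<in> U"
  have "ricci g y b d = (\<Sum>c\<in>UNIV. \<Sum>a\<in>UNIV. ginv g y c a * riem g y a b c d)"
    unfolding ricci_def using riem_up_low[OF y] by simp
  also have "\<dots> = (\<Sum>a\<in>UNIV. \<Sum>c\<in>UNIV. ginv g y a c * riem g y a b c d)"
    by (rule swap_cong) (simp add: gis[OF y])
  finally show ?thesis .
qed

lemma ricci_sym: "y \<in> U \<Longrightarrow> ricci g y b d = ricci g y d b"
proof -
  assume y: "y \<in> U"
  have "ricci g y b d = (\<Sum>a\<in>UNIV. \<Sum>c\<in>UNIV. ginv g y a c * riem g y c d a b)"
    unfolding ricci_low[OF y] using riem_pair[OF y] by simp
  also have "\<dots> = (\<Sum>c\<in>UNIV. \<Sum>a\<in>UNIV. ginv g y c a * riem g y c d a b)"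
    by (rule swap_cong) (simp add: gis[OF y])
  also have "\<dots> = ricci g y d b" unfolding ricci_low[OF y] ..
  finally show ?thesis .
qed

lemma riem_gen: "y \<in> U \<Longrightarrow> gen_curv (riem g y)"
  unfolding gen_curv_def using riem_anti1 riem_anti2 riem_pair riem_bianchi
  by (metis add.commute)

lemma weyl_KN: "weyl g y = (\<lambda>i k l m. riem g y i k l m
    + (1 / (real CARD('n) - 2)) * KN (\<lambda>i j. g y $ i $ j) (ricci g y) i k l m
    + (- (scal g y / ((real CARD('n) - 1) * (real CARD('n) - 2)) / 2)) * KN (\<lambda>i j. g y $ i $ j) (\<lambda>i j. g y $ i $ j) i k l m)"
proof (intro ext)
  fix i k l m
  define c where "c = scal g y / ((real CARD('n) - 1) * (real CARD('n) - 2))"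
  have 1: "c * (g y $ i $ l * g y $ k $ m - g y $ i $ m * g y $ k $ l) = (- (c / 2)) * KN (\<lambda>i j. g y $ i $ j) (\<lambda>i j. g y $ i $ j) i k l m"
    unfolding KN_def by (simp add: algebra_simps)
  have 2: "- (1 / (real CARD('n) - 2)) * (g y $ i $ l * ricci g y k m - g y $ i $ m * ricci g y k l - g y $ k $ l * ricci g y i m + g y $ k $ m * ricci g y i l)
     = (1 / (real CARD('n) - 2)) * KN (\<lambda>i j. g y $ i $ j) (ricci g y) i k l m"
    unfolding KN_def by (simp add: algebra_simps)
  show "weyl g y i k l m = riem g y i k l m
    + (1 / (real CARD('n) - 2)) * KN (\<lambda>i j. g y $ i $ j) (ricci g y) i k l m
    + (- (scal g y / ((real CARD('n) - 1) * (real CARD('n) - 2)) / 2)) * KN (\<lambda>i j. g y $ i $ j) (\<lambda>i j. g y $ i $ j) i k l m"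
    unfolding weyl_def Let_def c_def[symmetric] 1[symmetric] 2[symmetric] by simp
qed

lemma weyl_gen: "y \<in> U \<Longrightarrow> gen_curv (weyl g y)"
proof -
  assume y: "y \<in> U"
  have a: "gen_curv (KN (\<lambda>i j. g y $ i $ j) (ricci g y))"
    by (rule KN_gen_curv) (simp_all add: gs[OF y] ricci_sym[OF y])
  have b: "gen_curv (KN (\<lambda>i j. g y $ i $ j) (\<lambda>i j. g y $ i $ j))"
    by (rule KN_gen_curv) (simp_all add: gs[OF y])
  show ?thesis unfolding weyl_KN by (intro gen_curv_lin3 riem_gen[OF y] a b)
qed

end


definition Xv :: "(real^'n::finite \<Rightarrow> real) \<Rightarrow> (real^'n \<Rightarrow> real^'n^'n) \<Rightarrow> (real^'n \<Rightarrow> real^'n) \<Rightarrow> real^'n \<Rightarrow> 'n \<Rightarrow> real" where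
  "Xv \<phi> g u y b = pder b \<phi> y - (\<phi> y)^2 * lower g u y b"

lemma sum3_rot: "(\<Sum>m\<in>A. \<Sum>a\<in>B. \<Sum>c\<in>C. F m a c) = (\<Sum>a\<in>B. \<Sum>c\<in>C. \<Sum>m\<in>A. (F m a c::real))"
  by (subst sum.swap, rule sum.cong, rule refl, rule sum.swap)

lemma uW_arith:
  fixes m r vi vk vl Gil Gkl Ril Rkl Xi Xk Xl uX s :: real
  assumes rm: "r * m = 1"
  shows "((Gkl + vk * vl) * Xi - (Gil + vi * vl) * Xk) + r * (vi * Rkl - vk * Ril - Gil * ((-m) * Xk + vk * uX) + Gkl * ((-m) * Xi + vi * uX)) + s * (vi * Gkl - vk * Gil - Gil * vk + Gkl * vi)
     = vk * ((Gil + vi * vl) * uX + r * (-Ril - vi * ((-m) * Xl + vl * uX) - vl * ((-m) * Xi + vi * uX) + (-(m+1)) * uX * Gil) + 2 * s * (-(Gil + vi * vl)))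
     - vi * ((Gkl + vk * vl) * uX + r * (-Rkl - vk * ((-m) * Xl + vl * uX) - vl * ((-m) * Xk + vk * uX) + (-(m+1)) * uX * Gkl) + 2 * s * (-(Gkl + vk * vl)))"
  using rm by algebra

lemma lin2: "(\<Sum>i\<in>UNIV. w i * (A * X i + v i * B)) = A * (\<Sum>i\<in>UNIV. w i * X i) + (\<Sum>i\<in>UNIV. w i * v i) * (B::real)"
  by (simp add: distrib_left sum.distrib sum_distrib_left sum_distrib_right mult_ac)

lemma aux1: "(a::real) \<noteq> 0 \<Longrightarrow> b \<noteq> 0 \<Longrightarrow> (-(S/(a*b)/2)) * (-2*a*G) = S*G/b"
  by (simp add: field_simps)
lemma weyl_arith: "N - 1 \<noteq> 0 \<Longrightarrow> N - 2 \<noteq> 0 \<Longrightarrow>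
   R + (1/(N-2)) * ((2-N)*R - G*S) + (-(S/((N-1)*(N-2))/2)) * ((2-N)*G - G*N) = (0::real)"
proof -
  assume a: "N - 1 \<noteq> 0" "N - 2 \<noteq> 0"
  have 1: "(1/(N-2)) * ((2-N)*R - G*S) = - R - G*S/(N-2)" using a by (simp add: field_simps)
  have e: "(2-N)*G - G*N = -2*(N-1)*G" by (simp add: algebra_simps)
  have 2: "(-(S/((N-1)*(N-2))/2)) * ((2-N)*G - G*N) = S*G/(N-2)"
    unfolding e by (rule aux1[OF a])
  show ?thesis unfolding 1 2 by simp
qed

context geo begin


lemma cA: "y \<in> U \<Longrightarrow> (\<Sum>i\<in>UNIV. \<Sum>l\<in>UNIV. ginv g y i l * (g y $ i $ m * Q k l)) = Q k m"
proof -
  assume y: "y \<in> U"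
  have "(\<Sum>i\<in>UNIV. \<Sum>l\<in>UNIV. ginv g y i l * (g y $ i $ m * Q k l)) = (\<Sum>l\<in>UNIV. (\<Sum>i\<in>UNIV. ginv g y l i * g y $ i $ m) * Q k l)"
    by (simp only: sum_distrib_left sum_distrib_right, rule swap_cong, simp add: mult_ac gis[OF y])
  also have "\<dots> = Q k m" using gi_g[OF y] by simp
  finally show ?thesis .
qed

lemma cB: "y \<in> U \<Longrightarrow> (\<Sum>i\<in>UNIV. \<Sum>l\<in>UNIV. ginv g y i l * (g y $ k $ l * Q i m)) = Q k m"
proof -
  assume y: "y \<in> U"
  have "(\<Sum>i\<in>UNIV. \<Sum>l\<in>UNIV. ginv g y i l * (g y $ k $ l * Q i m)) = (\<Sum>i\<in>UNIV. (\<Sum>l\<in>UNIV. ginv g y i l * g y $ l $ k) * Q i m)"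
    by (simp add: sum_distrib_left sum_distrib_right mult_ac gs[OF y])
  also have "\<dots> = Q k m" using gi_g[OF y] by simp
  finally show ?thesis .
qed

lemma KN_G_c13: "y \<in> U \<Longrightarrow> (\<Sum>i\<in>UNIV. \<Sum>l\<in>UNIV. ginv g y i l * KN (\<lambda>i j. g y $ i $ j) Q i k l m) =
   (2 - real CARD('n)) * Q k m - g y $ k $ m * (\<Sum>i\<in>UNIV. \<Sum>l\<in>UNIV. ginv g y i l * Q i l)"
  unfolding KN_c13 using cA[of y m Q k] cB[of y k Q m] trace_g[of y] by (simp add: algebra_simps)

lemma weyl_c13: "y \<in> U \<Longrightarrow> (\<Sum>i\<in>UNIV. \<Sum>l\<in>UNIV. ginv g y i l * weyl g y i k l m) = 0"
proof -
  assume y: "y \<in> U"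
  have r: "(\<Sum>i\<in>UNIV. \<Sum>l\<in>UNIV. ginv g y i l * riem g y i k l m) = ricci g y k m"
    using ricci_low[OF y] by simp
  have s: "(\<Sum>i\<in>UNIV. \<Sum>l\<in>UNIV. ginv g y i l * ricci g y i l) = scal g y"
    unfolding scal_def ..
  have n2: "real CARD('n) - 2 \<noteq> 0" "real CARD('n) - 1 \<noteq> 0" using dim by auto
  show ?thesis unfolding weyl_KN sum2_lc3 r KN_G_c13[OF y] s trace_g[OF y]
    using weyl_arith[OF n2(2,1)] by simp
qed

lemma weyl_traceless: "y \<in> U \<Longrightarrow> totally_traceless (g y) (weyl g y)"
  by (rule traceless_I[OF weyl_gen]) (auto simp: ginv_def[symmetric] gis weyl_c13)

lemma uR: "y \<in> U \<Longrightarrow> (\<Sum>m\<in>UNIV. u y $ m * riem g y i k l m) =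
    hten g u y k l * Xv \<phi> g u y i - hten g u y i l * Xv \<phi> g u y k"
proof -
  assume y: "y \<in> U"
  have "(\<Sum>m\<in>UNIV. u y $ m * riem g y i k l m) = - (\<Sum>m\<in>UNIV. u y $ m * riem g y m l i k)"
    using riem_pair[OF y, of i k l] riem_anti1[OF y, of l] by (simp add: sum_negf[symmetric])
  then show ?thesis using K1[OF y, of l i k] unfolding Xv_def by simp
qed

lemma uG: "(\<Sum>m\<in>UNIV. u y $ m * g y $ i $ m) = lower g u y i"
  unfolding lower_def by (simp add: mult.commute)

lemma uh: "y \<in> U \<Longrightarrow> (\<Sum>i\<in>UNIV. u y $ i * hten g u y i l) = 0"
proof -
  assume y: "y \<in> U"
  have "(\<Sum>i\<in>UNIV. u y $ i * hten g u y i l) = (\<Sum>i\<in>UNIV. u y $ i * g y $ l $ i) + (\<Sum>i\<in>UNIV. u y $ i * lower g u y i) * lower g u y l"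
    unfolding hten_def by (simp add: gs[OF y] sum.distrib sum_distrib_right sum_distrib_left algebra_simps)
  then show ?thesis using uv[OF y] uG[of y l] by simp
qed

lemma hraise: "y \<in> U \<Longrightarrow> (\<Sum>c\<in>UNIV. ginv g y a c * hten g u y k c) = (if a = k then 1 else 0) + lower g u y k * u y $ a"
proof -
  assume y: "y \<in> U"
  have "(\<Sum>c\<in>UNIV. ginv g y a c * hten g u y k c) = (\<Sum>c\<in>UNIV. ginv g y a c * g y $ c $ k) + lower g u y k * (\<Sum>c\<in>UNIV. ginv g y a c * lower g u y c)"
    unfolding hten_def by (simp add: gs[OF y] sum.distrib sum_distrib_left algebra_simps)
  then show ?thesis using gi_g[OF y] raise_v[OF y] by simp
qed

lemma trace_h: "y \<in> U \<Longrightarrow> (\<Sum>a\<in>UNIV. \<Sum>c\<in>UNIV. ginv g y a c * hten g u y a c) = real CARD('n) - 1"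
  unfolding hten_def using trace_g[of y] trace_vv[of y] by (simp add: distrib_left sum.distrib)

lemma rho_formula: "y \<in> U \<Longrightarrow> (\<Sum>m\<in>UNIV. u y $ m * ricci g y k m) =
    (2 - real CARD('n)) * Xv \<phi> g u y k + lower g u y k * (\<Sum>a\<in>UNIV. u y $ a * Xv \<phi> g u y a)"
proof -
  assume y: "y \<in> U"
  let ?X = "Xv \<phi> g u y" and ?h = "hten g u y"
  have "(\<Sum>m\<in>UNIV. u y $ m * ricci g y k m) = (\<Sum>m\<in>UNIV. \<Sum>a\<in>UNIV. \<Sum>c\<in>UNIV. ginv g y a c * (u y $ m * riem g y a k c m))"
    unfolding ricci_low[OF y] by (simp add: sum_distrib_left mult_ac)
  also have "\<dots> = (\<Sum>a\<in>UNIV. \<Sum>c\<in>UNIV. ginv g y a c * (\<Sum>m\<in>UNIV. u y $ m * riem g y a k c m))"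
    by (subst sum3_rot) (simp add: sum_distrib_left)
  also have "\<dots> = (\<Sum>a\<in>UNIV. \<Sum>c\<in>UNIV. ginv g y a c * (?h k c * ?X a - ?h a c * ?X k))"
    by (simp add: uR[OF y])
  also have "\<dots> = (\<Sum>a\<in>UNIV. (\<Sum>c\<in>UNIV. ginv g y a c * ?h k c) * ?X a) - (\<Sum>a\<in>UNIV. \<Sum>c\<in>UNIV. ginv g y a c * ?h a c) * ?X k"
    by (simp add: right_diff_distrib sum_subtractf sum_distrib_left sum_distrib_right mult_ac)
  also have "\<dots> = ?X k + lower g u y k * (\<Sum>a\<in>UNIV. u y $ a * ?X a) - (real CARD('n) - 1) * ?X k"
  proof -
    have "(\<Sum>a\<in>UNIV. (\<Sum>c\<in>UNIV. ginv g y a c * ?h k c) * ?X a) = (\<Sum>a\<in>UNIV. ((if a = k then 1 else 0) + lower g u y k * u y $ a) * ?X a)"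
      by (simp add: hraise[OF y])
    also have "\<dots> = ?X k + lower g u y k * (\<Sum>a\<in>UNIV. u y $ a * ?X a)"
      by (simp add: ring_distribs sum.distrib sum_distrib_left mult_ac)
    finally show ?thesis using trace_h[OF y] by simp
  qed
  finally show ?thesis by (simp add: algebra_simps)
qed

lemma uW: "y \<in> U \<Longrightarrow> (\<Sum>m\<in>UNIV. u y $ m * weyl g y i k l m) =
   (hten g u y k l * Xv \<phi> g u y i - hten g u y i l * Xv \<phi> g u y k)
   + (1 / (real CARD('n) - 2)) * (lower g u y i * ricci g y k l - lower g u y k * ricci g y i l
        - g y $ i $ l * (\<Sum>m\<in>UNIV. u y $ m * ricci g y k m) + g y $ k $ l * (\<Sum>m\<in>UNIV. u y $ m * ricci g y i m))
   + (- (scal g y / ((real CARD('n) - 1) * (real CARD('n) - 2)) / 2)) *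
       (lower g u y i * g y $ k $ l - lower g u y k * g y $ i $ l - g y $ i $ l * lower g u y k + g y $ k $ l * lower g u y i)"
  unfolding weyl_KN sum_lc3 KN_c4 uG by (simp add: uR)

lemma E_formula: "y \<in> U \<Longrightarrow> electric g u y k l =
   hten g u y k l * (\<Sum>a\<in>UNIV. u y $ a * Xv \<phi> g u y a)
   + (1 / (real CARD('n) - 2)) * (- ricci g y k l - lower g u y k * (\<Sum>m\<in>UNIV. u y $ m * ricci g y l m)
        - lower g u y l * (\<Sum>m\<in>UNIV. u y $ m * ricci g y k m)
        + (1 - real CARD('n)) * (\<Sum>a\<in>UNIV. u y $ a * Xv \<phi> g u y a) * g y $ k $ l)
   + 2 * (- (scal g y / ((real CARD('n) - 1) * (real CARD('n) - 2)) / 2)) * (- hten g u y k l)"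
proof -
  assume y: "y \<in> U"
  let ?X = "Xv \<phi> g u y" and ?h = "hten g u y" and ?v = "lower g u y" and ?R = "ricci g y"
  define r where "r = 1 / (real CARD('n) - 2)"
  define sc where "sc = - (scal g y / ((real CARD('n) - 1) * (real CARD('n) - 2)) / 2)"
  let ?r = r and ?s = sc
  let ?rho = "\<lambda>k. \<Sum>m\<in>UNIV. u y $ m * ricci g y k m"
  have "electric g u y k l = (\<Sum>i\<in>UNIV. u y $ i * (\<Sum>m\<in>UNIV. u y $ m * weyl g y i k l m))"
    unfolding electric_def by (simp add: sum_distrib_left mult_ac)
  also have "\<dots> = (\<Sum>i\<in>UNIV. u y $ i * ((?h k l * ?X i - ?h i l * ?X k)
   + ?r * (?v i * ?R k l - ?v k * ?R i l - g y $ i $ l * ?rho k + g y $ k $ l * ?rho i)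
   + ?s * (?v i * g y $ k $ l - ?v k * g y $ i $ l - g y $ i $ l * ?v k + g y $ k $ l * ?v i)))"
    by (simp add: uW[OF y, folded r_def sc_def])
  also have "\<dots> = ?h k l * (\<Sum>i\<in>UNIV. u y $ i * ?X i) - (\<Sum>i\<in>UNIV. u y $ i * ?h i l) * ?X k
   + ?r * ((\<Sum>i\<in>UNIV. u y $ i * ?v i) * ?R k l - ?v k * (\<Sum>i\<in>UNIV. u y $ i * ?R i l)
           - (\<Sum>i\<in>UNIV. u y $ i * g y $ i $ l) * ?rho k + g y $ k $ l * (\<Sum>i\<in>UNIV. u y $ i * ?rho i))
   + ?s * ((\<Sum>i\<in>UNIV. u y $ i * ?v i) * g y $ k $ l - ?v k * (\<Sum>i\<in>UNIV. u y $ i * g y $ i $ l)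
           - (\<Sum>i\<in>UNIV. u y $ i * g y $ i $ l) * ?v k + g y $ k $ l * (\<Sum>i\<in>UNIV. u y $ i * ?v i))"
    by (simp add: sum.distrib sum_subtractf sum_distrib_left sum_distrib_right algebra_simps)
  also have "(\<Sum>i\<in>UNIV. u y $ i * ?rho i) = (2 - real CARD('n)) * (\<Sum>i\<in>UNIV. u y $ i * ?X i) - (\<Sum>i\<in>UNIV. u y $ i * ?X i)"
  proof -
    have "(\<Sum>i\<in>UNIV. u y $ i * ?rho i) = (\<Sum>i\<in>UNIV. u y $ i * ((2 - real CARD('n)) * ?X i + ?v i * (\<Sum>a\<in>UNIV. u y $ a * ?X a)))"
      by (simp add: rho_formula[OF y])
    also have "\<dots> = (2 - real CARD('n)) * (\<Sum>i\<in>UNIV. u y $ i * ?X i) + (\<Sum>i\<in>UNIV. u y $ i * ?v i) * (\<Sum>a\<in>UNIV. u y $ a * ?X a)"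
      by (rule lin2)
    finally show ?thesis using uv[OF y] by simp
  qed
  also have "(\<Sum>i\<in>UNIV. u y $ i * ?R i l) = ?rho l" using ricci_sym[OF y] by simp
  also have "(\<Sum>i\<in>UNIV. u y $ i * g y $ i $ l) = ?v l" using uG[of y l] gs[OF y] by simp
  finally show ?thesis using uv[OF y] uh[OF y, of l] unfolding r_def[symmetric] sc_def[symmetric]
    by (simp add: algebra_simps hten_def)
qed

lemma uW_E: "y \<in> U \<Longrightarrow> (\<Sum>m\<in>UNIV. u y $ m * weyl g y i k l m) =
    lower g u y k * electric g u y i l - lower g u y i * electric g u y k l"
proof -
  assume y: "y \<in> U"
  define r where "r = 1 / (real CARD('n) - 2)"
  define sc where "sc = - (scal g y / ((real CARD('n) - 1) * (real CARD('n) - 2)) / 2)"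
  define m where "m = real CARD('n) - 2"
  define uX where "uX = (\<Sum>a\<in>UNIV. u y $ a * Xv \<phi> g u y a)"
  have rm: "r * m = 1" unfolding r_def m_def using dim by simp
  have n1: "1 - real CARD('n) = - (m + 1)" and n2: "2 - real CARD('n) = - m" unfolding m_def by simp_all
  show ?thesis
    unfolding uW[OF y] E_formula[OF y] rho_formula[OF y] r_def[symmetric] sc_def[symmetric]
      uX_def[symmetric] n1 n2 hten_def
    using rm by algebra
qed

lemma E_sym: "y \<in> U \<Longrightarrow> electric g u y k l = electric g u y l k"
proof -
  assume y: "y \<in> U"
  note D = gen_curv_D[OF weyl_gen[OF y]]
  have e: "weyl g y j k l m = weyl g y m l k j" for j m
    using D(3)[of j k l m] D(1)[of l m j k] D(2)[of m l j k] by simp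
  have "electric g u y k l = (\<Sum>j\<in>UNIV. \<Sum>m\<in>UNIV. u y $ j * u y $ m * weyl g y m l k j)"
    unfolding electric_def by (simp add: e)
  also have "\<dots> = electric g u y l k" unfolding electric_def
    by (rule swap_cong) (simp add: mult_ac)
  finally show ?thesis .
qed

lemma E_u: "y \<in> U \<Longrightarrow> (\<Sum>l\<in>UNIV. u y $ l * electric g u y k l) = 0"
proof -
  assume y: "y \<in> U"
  have z: "(\<Sum>l\<in>UNIV. \<Sum>m\<in>UNIV. u y $ l * u y $ m * weyl g y j k l m) = 0" for j
  proof -
    have e: "u y $ a * u y $ b * weyl g y j k a b = - (u y $ b * u y $ a * weyl g y j k b a)" for a b
      using gen_curv_D(2)[OF weyl_gen[OF y], of j k a b] by simp
    have "(\<Sum>l\<in>UNIV. \<Sum>m\<in>UNIV. u y $ l * u y $ m * weyl g y j k l m)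
       = (\<Sum>m\<in>UNIV. \<Sum>l\<in>UNIV. - (u y $ m * u y $ l * weyl g y j k m l))"
      by (rule swap_cong) (rule e)
    also have "\<dots> = - (\<Sum>l\<in>UNIV. \<Sum>m\<in>UNIV. u y $ l * u y $ m * weyl g y j k l m)"
      by (simp add: sum_negf)
    finally show ?thesis by simp
  qed
  have "(\<Sum>l\<in>UNIV. u y $ l * electric g u y k l) = (\<Sum>l\<in>UNIV. \<Sum>j\<in>UNIV. \<Sum>m\<in>UNIV. u y $ l * (u y $ j * u y $ m * weyl g y j k l m))"
    unfolding electric_def by (simp only: sum_distrib_left)
  also have "\<dots> = (\<Sum>j\<in>UNIV. \<Sum>l\<in>UNIV. \<Sum>m\<in>UNIV. u y $ l * (u y $ j * u y $ m * weyl g y j k l m))"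
    by (rule sum.swap)
  also have "\<dots> = (\<Sum>j\<in>UNIV. u y $ j * (\<Sum>l\<in>UNIV. \<Sum>m\<in>UNIV. u y $ l * u y $ m * weyl g y j k l m))"
    by (simp add: sum_distrib_left mult_ac)
  also have "\<dots> = 0" by (simp add: z)
  finally show ?thesis .
qed

lemma E_tr: "y \<in> U \<Longrightarrow> (\<Sum>k\<in>UNIV. \<Sum>l\<in>UNIV. ginv g y k l * electric g u y k l) = 0"
proof -
  assume y: "y \<in> U"
  have tl: "totally_traceless (g y) (weyl g y)" by (rule weyl_traceless[OF y])
  have z: "(\<Sum>k\<in>UNIV. \<Sum>l\<in>UNIV. ginv g y k l * weyl g y j k l m) = 0" for j m
    using tl unfolding totally_traceless_def Let_def ginv_def by blast
  have "(\<Sum>k\<in>UNIV. \<Sum>l\<in>UNIV. ginv g y k l * electric g u y k l)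
    = (\<Sum>k\<in>UNIV. \<Sum>l\<in>UNIV. \<Sum>j\<in>UNIV. \<Sum>m\<in>UNIV. u y $ j * u y $ m * (ginv g y k l * weyl g y j k l m))"
    unfolding electric_def by (simp add: sum_distrib_left mult_ac)
  also have "\<dots> = (\<Sum>j\<in>UNIV. \<Sum>m\<in>UNIV. u y $ j * u y $ m * (\<Sum>k\<in>UNIV. \<Sum>l\<in>UNIV. ginv g y k l * weyl g y j k l m))"
  proof -
    have "(\<Sum>k\<in>UNIV. \<Sum>l\<in>UNIV. \<Sum>j\<in>UNIV. \<Sum>m\<in>UNIV. F k l j m) = (\<Sum>j\<in>UNIV. \<Sum>m\<in>UNIV. \<Sum>k\<in>UNIV. \<Sum>l\<in>UNIV. (F k l j m::real))" for F
    proof -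
      have "(\<Sum>k\<in>UNIV. \<Sum>l\<in>UNIV. \<Sum>j\<in>UNIV. \<Sum>m\<in>UNIV. F k l j m) = (\<Sum>k\<in>UNIV. \<Sum>j\<in>UNIV. \<Sum>m\<in>UNIV. \<Sum>l\<in>UNIV. F k l j m)"
        by (rule sum.cong[OF refl]) (rule sum3_rot)
      also have "\<dots> = (\<Sum>j\<in>UNIV. \<Sum>m\<in>UNIV. \<Sum>k\<in>UNIV. \<Sum>l\<in>UNIV. F k l j m)"
        by (rule sum3_rot)
      finally show ?thesis .
    qed
    then show ?thesis by (simp add: sum_distrib_left)
  qed
  also have "\<dots> = 0" by (simp add: z)
  finally show ?thesis .
qed

end


lemma sum_pull: "(\<Sum>m\<in>UNIV. w m * (c * f m)) = c * (\<Sum>m\<in>UNIV. w m * (f m::real))"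
  by (simp add: sum_distrib_left mult_ac)

lemma sum2_pull: "(\<Sum>i\<in>UNIV. \<Sum>l\<in>UNIV. H i l * (c * F i l)) = c * (\<Sum>i\<in>UNIV. \<Sum>l\<in>UNIV. H i l * (F i l::real))"
  by (simp add: sum_distrib_left mult_ac)

context geo begin

lemma gamma_KN: "GammaT g u y = (\<lambda>i k l m. weyl g y i k l m
    + (- ((real CARD('n) - 2) / (real CARD('n) - 3))) * KN (\<lambda>a b. lower g u y a * lower g u y b) (electric g u y) i k l m
    + (- (1 / (real CARD('n) - 3))) * KN (\<lambda>a b. g y $ a $ b) (electric g u y) i k l m)"
  unfolding GammaT_def KN_def Let_def by (intro ext) (simp add: algebra_simps)

lemma gamma_gen: "y \<in> U \<Longrightarrow> gen_curv (GammaT g u y)"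
proof -
  assume y: "y \<in> U"
  show ?thesis unfolding gamma_KN
    by (intro gen_curv_lin3 weyl_gen[OF y] KN_gen_curv) (simp_all add: E_sym[OF y] gs[OF y])
qed

lemma gamma_c13: "y \<in> U \<Longrightarrow> (\<Sum>i\<in>UNIV. \<Sum>l\<in>UNIV. ginv g y i l * GammaT g u y i k l m) = 0"
proof -
  assume y: "y \<in> U"
  let ?v = "lower g u y" and ?E = "electric g u y"
  have a1: "(\<Sum>i\<in>UNIV. \<Sum>l\<in>UNIV. ginv g y i l * (?v i * ?v m * ?E k l)) = 0"
  proof -
    have "(\<Sum>i\<in>UNIV. \<Sum>l\<in>UNIV. ginv g y i l * (?v i * ?v m * ?E k l)) = ?v m * (\<Sum>l\<in>UNIV. (\<Sum>i\<in>UNIV. ginv g y l i * ?v i) * ?E k l)"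
      by (simp only: sum_distrib_left sum_distrib_right, rule swap_cong, simp add: gis[OF y] mult_ac)
    then show ?thesis using raise_v[OF y] E_u[OF y] by simp
  qed
  have a2: "(\<Sum>i\<in>UNIV. \<Sum>l\<in>UNIV. ginv g y i l * (?v k * ?v l * ?E i m)) = 0"
  proof -
    have "(\<Sum>i\<in>UNIV. \<Sum>l\<in>UNIV. ginv g y i l * (?v k * ?v l * ?E i m)) = ?v k * (\<Sum>i\<in>UNIV. (\<Sum>l\<in>UNIV. ginv g y i l * ?v l) * ?E m i)"
      by (simp add: sum_distrib_left sum_distrib_right mult_ac E_sym[OF y])
    then show ?thesis using raise_v[OF y] E_u[OF y] by simp
  qed
  have c1: "(\<Sum>i\<in>UNIV. \<Sum>l\<in>UNIV. ginv g y i l * KN (\<lambda>a b. ?v a * ?v b) ?E i k l m) = ?E k m"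
    unfolding KN_c13 using a1 a2 E_tr[OF y] trace_vv[OF y] by simp
  have c2: "(\<Sum>i\<in>UNIV. \<Sum>l\<in>UNIV. ginv g y i l * KN (\<lambda>a b. g y $ a $ b) ?E i k l m) = (2 - real CARD('n)) * ?E k m"
    unfolding KN_G_c13[OF y] E_tr[OF y] by simp
  have n3: "real CARD('n) - 3 \<noteq> 0" using dim by simp
  show ?thesis unfolding gamma_KN sum2_lc3 weyl_c13[OF y] c1 c2
    using n3 by (simp add: field_simps)
qed

lemma gamma_traceless: "y \<in> U \<Longrightarrow> totally_traceless (g y) (GammaT g u y)"
  by (rule traceless_I[OF gamma_gen]) (auto simp: ginv_def[symmetric] gis gamma_c13)

lemma gamma_u: "y \<in> U \<Longrightarrow> (\<Sum>m\<in>UNIV. u y $ m * GammaT g u y j k l m) = 0"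
proof -
  assume y: "y \<in> U"
  let ?v = "lower g u y" and ?E = "electric g u y"
  have p: "(\<Sum>m\<in>UNIV. u y $ m * (?v a * ?v m)) = - ?v a" for a
    using sum_pull[of "\<lambda>m. u y $ m" "?v a" ?v] uv[OF y] by simp
  have q: "(\<Sum>m\<in>UNIV. u y $ m * ?E a m) = 0" for a using E_u[OF y] .
  have n3: "real CARD('n) - 3 \<noteq> 0" using dim by simp
  show ?thesis unfolding gamma_KN sum_lc3 uW_E[OF y] KN_c4 p q uG
    using n3 by (simp add: field_simps)
qed

end


definition cdR :: "(real^'n::finite \<Rightarrow> real^'n^'n) \<Rightarrow> real^'n \<Rightarrow> 'n \<Rightarrow> 'n \<Rightarrow> 'n \<Rightarrow> 'n \<Rightarrow> 'n \<Rightarrow> real" where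
  "cdR g y e a b c d = pder e (\<lambda>z. riem_up g z a b c d) y + (\<Sum>f\<in>UNIV. christ g y a e f * riem_up g y f b c d)
     - (\<Sum>f\<in>UNIV. christ g y f e b * riem_up g y a f c d + christ g y f e c * riem_up g y a b f d
                  + christ g y f e d * riem_up g y a b c f)"

definition BA :: "(real^'n::finite \<Rightarrow> real^'n^'n) \<Rightarrow> real^'n \<Rightarrow> 'n \<Rightarrow> 'n \<Rightarrow> 'n \<Rightarrow> 'n \<Rightarrow> 'n \<Rightarrow> real" where
  "BA g y a b x w z = (\<Sum>f\<in>UNIV. pder x (\<lambda>v. christ g v a w f) y * christ g y f z b)"
definition BB :: "(real^'n::finite \<Rightarrow> real^'n^'n) \<Rightarrow> real^'n \<Rightarrow> 'n \<Rightarrow> 'n \<Rightarrow> 'n \<Rightarrow> 'n \<Rightarrow> 'n \<Rightarrow> real" where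
  "BB g y a b w x z = (\<Sum>f\<in>UNIV. christ g y a w f * pder x (\<lambda>v. christ g v f z b) y)"
definition BK :: "(real^'n::finite \<Rightarrow> real^'n^'n) \<Rightarrow> real^'n \<Rightarrow> 'n \<Rightarrow> 'n \<Rightarrow> 'n \<Rightarrow> 'n \<Rightarrow> 'n \<Rightarrow> real" where
  "BK g y a b x w z = (\<Sum>f\<in>UNIV. \<Sum>h\<in>UNIV. christ g y a x f * (christ g y f w h * christ g y h z b))"

context geo begin

lemma cdR_formula: "y \<in> U \<Longrightarrow> cdR g y e a b c d =
    pder e (pder c (\<lambda>z. christ g z a d b)) y - pder e (pder d (\<lambda>z. christ g z a c b)) y
  + (BA g y a b e c d - BA g y a b e d c - BA g y a b c d e + BA g y a b d c e)
  + (BB g y a b c e d - BB g y a b d e c + BB g y a b e c d - BB g y a b e d c)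
  + (BK g y a b e c d - BK g y a b e d c - BK g y a b c d e + BK g y a b d c e)
  - (\<Sum>f\<in>UNIV. christ g y f e c * riem_up g y a b f d + christ g y f e d * riem_up g y a b c f)"
proof -
  assume y: "y \<in> U"
  let ?G = "christ g y"
  have p: "pder e (\<lambda>z. riem_up g z a b c d) y = pder e (pder c (\<lambda>z. christ g z a d b)) y - pder e (pder d (\<lambda>z. christ g z a c b)) y
    + (BA g y a b e c d + BB g y a b c e d - BA g y a b e d c - BB g y a b d e c)"
    unfolding riem_up_def BA_def BB_def using y
    by (simp add: pd_rules sm_intros gCh sum.distrib sum_subtractf algebra_simps)
  have t2: "(\<Sum>f\<in>UNIV. ?G a e f * riem_up g y f b c d) = BB g y a b e c d - BB g y a b e d c + BK g y a b e c d - BK g y a b e d c"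
    unfolding riem_up_def BB_def BK_def
    by (simp add: sum.distrib sum_subtractf sum_distrib_left algebra_simps)
  have swp: "(\<Sum>f\<in>UNIV. ?G f e b * (\<Sum>h\<in>UNIV. ?G a c h * ?G h d f)) = BK g y a b c d e" for c d
  proof -
    have "(\<Sum>f\<in>UNIV. ?G f e b * (\<Sum>h\<in>UNIV. ?G a c h * ?G h d f)) = (\<Sum>f\<in>UNIV. \<Sum>h\<in>UNIV. ?G f e b * (?G a c h * ?G h d f))"
      by (simp add: sum_distrib_left)
    also have "\<dots> = (\<Sum>h\<in>UNIV. \<Sum>f\<in>UNIV. ?G a c h * (?G h d f * ?G f e b))"
      by (rule swap_cong) (simp add: mult_ac)
    finally show ?thesis unfolding BK_def .
  qed
  have t3: "(\<Sum>f\<in>UNIV. ?G f e b * riem_up g y a f c d) = BA g y a b c d e - BA g y a b d c e + BK g y a b c d e - BK g y a b d c e"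
  proof -
    have "(\<Sum>f\<in>UNIV. ?G f e b * riem_up g y a f c d) = BA g y a b c d e - BA g y a b d c e
       + (\<Sum>f\<in>UNIV. ?G f e b * (\<Sum>h\<in>UNIV. ?G a c h * ?G h d f)) - (\<Sum>f\<in>UNIV. ?G f e b * (\<Sum>h\<in>UNIV. ?G a d h * ?G h c f))"
      unfolding riem_up_def BA_def
      by (simp add: sum.distrib sum_subtractf ring_distribs mult_ac)
    then show ?thesis unfolding swp .
  qed
  show ?thesis unfolding cdR_def p t2 sum.distrib t3 by (simp add: algebra_simps)
qed

lemma riem_up_anti: "riem_up g y a b c d = - riem_up g y a b d c"
  unfolding riem_up_def by (simp add: sum_subtractf algebra_simps)

lemma bianchi2_up: "y \<in> U \<Longrightarrow> cdR g y e a b c d + cdR g y c a b d e + cdR g y d a b e c = 0"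
proof -
  assume y: "y \<in> U"
  have c1: "pder e (pder c (\<lambda>z. christ g z a d b)) y = pder c (pder e (\<lambda>z. christ g z a d b)) y"
    by (rule clair[OF gCh y])
  have c2: "pder e (pder d (\<lambda>z. christ g z a c b)) y = pder d (pder e (\<lambda>z. christ g z a c b)) y"
    by (rule clair[OF gCh y])
  have c3: "pder c (pder d (\<lambda>z. christ g z a e b)) y = pder d (pder c (\<lambda>z. christ g z a e b)) y"
    by (rule clair[OF gCh y])
  have t4: "(\<Sum>f\<in>UNIV. christ g y f e c * riem_up g y a b f d + christ g y f e d * riem_up g y a b c f)
     + (\<Sum>f\<in>UNIV. christ g y f c d * riem_up g y a b f e + christ g y f c e * riem_up g y a b d f)
     + (\<Sum>f\<in>UNIV. christ g y f d e * riem_up g y a b f c + christ g y f d c * riem_up g y a b e f) = 0"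
  proof -
    have "\<And>f. christ g y f c e = christ g y f e c" "\<And>f. christ g y f d e = christ g y f e d"
      "\<And>f. christ g y f d c = christ g y f c d" using christ_sym[OF y] by blast+
    moreover have "\<And>f. riem_up g y a b d f = - riem_up g y a b f d" "\<And>f. riem_up g y a b f c = - riem_up g y a b c f"
      "\<And>f. riem_up g y a b e f = - riem_up g y a b f e" using riem_up_anti by blast+
    ultimately show ?thesis by (simp add: sum.distrib[symmetric] algebra_simps)
  qed
  show ?thesis unfolding cdR_formula[OF y] c1 c2 c3 using t4 by (simp add: algebra_simps)
qed

lemma cd4_riem: "y \<in> U \<Longrightarrow> cov_der4 g (riem g) y p j k l m = (\<Sum>e\<in>UNIV. g y $ j $ e * cdR g y p e k l m)"
proof -
  assume y: "y \<in> U"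
  let ?G = "christ g y" and ?R = "riem_up g y"
  have d: "pder p (\<lambda>z. riem g z j k l m) y = (\<Sum>e\<in>UNIV. pder p (\<lambda>z. g z $ j $ e) y * ?R e k l m)
      + (\<Sum>e\<in>UNIV. g y $ j $ e * pder p (\<lambda>z. riem_up g z e k l m) y)"
    unfolding riem_def using y by (simp add: pd_rules sm_intros gG gRu sum.distrib)
  have n: "(\<Sum>e\<in>UNIV. pder p (\<lambda>z. g z $ j $ e) y * ?R e k l m) =
     (\<Sum>q\<in>UNIV. ?G q p j * riem g y q k l m) + (\<Sum>e\<in>UNIV. g y $ j $ e * (\<Sum>f\<in>UNIV. ?G e p f * ?R f k l m))"
  proof -
    have "(\<Sum>e\<in>UNIV. pder p (\<lambda>z. g z $ j $ e) y * ?R e k l m) =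
       (\<Sum>e\<in>UNIV. \<Sum>q\<in>UNIV. ?G q p j * g y $ q $ e * ?R e k l m) + (\<Sum>e\<in>UNIV. \<Sum>q\<in>UNIV. ?G q p e * g y $ j $ q * ?R e k l m)"
      unfolding nabla_g[OF y] by (simp add: sum.distrib sum_distrib_right distrib_right)
    also have "(\<Sum>e\<in>UNIV. \<Sum>q\<in>UNIV. ?G q p j * g y $ q $ e * ?R e k l m) = (\<Sum>q\<in>UNIV. ?G q p j * riem g y q k l m)"
      unfolding riem_def by (simp only: sum_distrib_left, rule swap_cong, simp add: mult_ac)
    also have "(\<Sum>e\<in>UNIV. \<Sum>q\<in>UNIV. ?G q p e * g y $ j $ q * ?R e k l m) = (\<Sum>e\<in>UNIV. g y $ j $ e * (\<Sum>f\<in>UNIV. ?G e p f * ?R f k l m))"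
      by (simp only: sum_distrib_left, rule swap_cong, simp add: mult_ac)
    finally show ?thesis .
  qed
  have o1: "(\<Sum>q\<in>UNIV. ?G q p k * riem g y j q l m) = (\<Sum>e\<in>UNIV. g y $ j $ e * (\<Sum>f\<in>UNIV. ?G f p k * ?R e f l m))"
    unfolding riem_def by (simp only: sum_distrib_left, rule swap_cong, simp add: mult_ac)
  have o2: "(\<Sum>q\<in>UNIV. ?G q p l * riem g y j k q m) = (\<Sum>e\<in>UNIV. g y $ j $ e * (\<Sum>f\<in>UNIV. ?G f p l * ?R e k f m))"
    unfolding riem_def by (simp only: sum_distrib_left, rule swap_cong, simp add: mult_ac)
  have o3: "(\<Sum>q\<in>UNIV. ?G q p m * riem g y j k l q) = (\<Sum>e\<in>UNIV. g y $ j $ e * (\<Sum>f\<in>UNIV. ?G f p m * ?R e k l f))"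
    unfolding riem_def by (simp only: sum_distrib_left, rule swap_cong, simp add: mult_ac)
  have ex: "(\<Sum>e\<in>UNIV. g y $ j $ e * cdR g y p e k l m) = (\<Sum>e\<in>UNIV. g y $ j $ e * pder p (\<lambda>z. riem_up g z e k l m) y)
    + (\<Sum>e\<in>UNIV. g y $ j $ e * (\<Sum>f\<in>UNIV. ?G e p f * ?R f k l m))
    - (\<Sum>e\<in>UNIV. g y $ j $ e * (\<Sum>f\<in>UNIV. ?G f p k * ?R e f l m))
    - (\<Sum>e\<in>UNIV. g y $ j $ e * (\<Sum>f\<in>UNIV. ?G f p l * ?R e k f m))
    - (\<Sum>e\<in>UNIV. g y $ j $ e * (\<Sum>f\<in>UNIV. ?G f p m * ?R e k l f))"
    unfolding cdR_def by (simp add: sum.distrib sum_subtractf ring_distribs christ_sym[OF y, of _ p])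
  show ?thesis unfolding cov_der4_def ex d n sum.distrib o1 o2 o3
    by (simp add: algebra_simps)
qed

lemma bianchi2: "y \<in> U \<Longrightarrow> cov_der4 g (riem g) y p j k l m + cov_der4 g (riem g) y l j k m p + cov_der4 g (riem g) y m j k p l = 0"
proof -
  assume y: "y \<in> U"
  have "cov_der4 g (riem g) y p j k l m + cov_der4 g (riem g) y l j k m p + cov_der4 g (riem g) y m j k p l
    = (\<Sum>e\<in>UNIV. g y $ j $ e * (cdR g y p e k l m + cdR g y l e k m p + cdR g y m e k p l))"
    unfolding cd4_riem[OF y] by (simp add: sum.distrib distrib_left)
  also have "\<dots> = 0" by (simp add: bianchi2_up[OF y])
  finally show ?thesis .
qed

end


definition cd3 :: "(real^'n::finite \<Rightarrow> real^'n^'n) \<Rightarrow> (real^'n \<Rightarrow> 'n \<Rightarrow> 'n \<Rightarrow> 'n \<Rightarrow> real) \<Rightarrow> real^'n \<Rightarrow> 'n \<Rightarrow> 'n \<Rightarrow> 'n \<Rightarrow> 'n \<Rightarrow> real" where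
  "cd3 g T y p j k m = pder p (\<lambda>z. T z j k m) y
     - (\<Sum>q\<in>UNIV. christ g y q p j * T y q k m + christ g y q p k * T y j q m + christ g y q p m * T y j k q)"

definition nu :: "(real^'n::finite \<Rightarrow> real^'n^'n) \<Rightarrow> (real^'n \<Rightarrow> real^'n) \<Rightarrow> real^'n \<Rightarrow> 'n \<Rightarrow> 'n \<Rightarrow> real" where
  "nu g u y p a = pder p (\<lambda>z. u z $ a) y + (\<Sum>q\<in>UNIV. christ g y a p q * u y $ q)"

definition D4 :: "(real^'n::finite \<Rightarrow> real^'n^'n) \<Rightarrow> (real^'n \<Rightarrow> real^'n) \<Rightarrow> (real^'n \<Rightarrow> 'n \<Rightarrow> 'n \<Rightarrow> 'n \<Rightarrow> 'n \<Rightarrow> real) \<Rightarrow> real^'n \<Rightarrow> 'n \<Rightarrow> 'n \<Rightarrow> 'n \<Rightarrow> 'n \<Rightarrow> real" where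
  "D4 g u T y j k l m = (\<Sum>p\<in>UNIV. u y $ p * cov_der4 g T y p j k l m)"
definition D2 :: "(real^'n::finite \<Rightarrow> real^'n^'n) \<Rightarrow> (real^'n \<Rightarrow> real^'n) \<Rightarrow> (real^'n \<Rightarrow> 'n \<Rightarrow> 'n \<Rightarrow> real) \<Rightarrow> real^'n \<Rightarrow> 'n \<Rightarrow> 'n \<Rightarrow> real" where
  "D2 g u Q y k l = (\<Sum>p\<in>UNIV. u y $ p * cd2 g Q y p k l)"
definition Df :: "(real^'n::finite \<Rightarrow> real^'n) \<Rightarrow> (real^'n \<Rightarrow> real) \<Rightarrow> real^'n \<Rightarrow> real" where
  "Df u f y = (\<Sum>p\<in>UNIV. u y $ p * pder p f y)"

context geo begin

lemma nu_low: "y \<in> U \<Longrightarrow> cov_der1 g (lower g u) y p q = (\<Sum>r\<in>UNIV. g y $ q $ r * nu g u y p r)"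
proof -
  assume y: "y \<in> U"
  let ?G = "christ g y"
  have "cov_der1 g (lower g u) y p q = (\<Sum>k\<in>UNIV. pder p (\<lambda>z. g z $ q $ k) y * u y $ k)
      + (\<Sum>k\<in>UNIV. g y $ q $ k * pder p (\<lambda>z. u z $ k) y) - (\<Sum>r\<in>UNIV. ?G r p q * lower g u y r)"
    unfolding cov_der1_def lower_def using y by (simp add: pd_rules sm_intros gG gu sum.distrib)
  also have "(\<Sum>k\<in>UNIV. pder p (\<lambda>z. g z $ q $ k) y * u y $ k) = (\<Sum>r\<in>UNIV. ?G r p q * lower g u y r)
      + (\<Sum>r\<in>UNIV. g y $ q $ r * (\<Sum>k\<in>UNIV. ?G r p k * u y $ k))"
  proof -
    have "(\<Sum>k\<in>UNIV. pder p (\<lambda>z. g z $ q $ k) y * u y $ k) = (\<Sum>k\<in>UNIV. \<Sum>r\<in>UNIV. ?G r p q * g y $ r $ k * u y $ k)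
        + (\<Sum>k\<in>UNIV. \<Sum>r\<in>UNIV. ?G r p k * g y $ q $ r * u y $ k)"
      unfolding nabla_g[OF y] by (simp add: sum.distrib sum_distrib_right distrib_right)
    also have "(\<Sum>k\<in>UNIV. \<Sum>r\<in>UNIV. ?G r p q * g y $ r $ k * u y $ k) = (\<Sum>r\<in>UNIV. ?G r p q * lower g u y r)"
      unfolding lower_def by (simp only: sum_distrib_left, rule swap_cong, simp add: mult_ac)
    also have "(\<Sum>k\<in>UNIV. \<Sum>r\<in>UNIV. ?G r p k * g y $ q $ r * u y $ k) = (\<Sum>r\<in>UNIV. g y $ q $ r * (\<Sum>k\<in>UNIV. ?G r p k * u y $ k))"
      by (simp only: sum_distrib_left, rule swap_cong, simp add: mult_ac)
    finally show ?thesis .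
  qed
  finally show ?thesis unfolding nu_def by (simp add: distrib_left sum.distrib)
qed

lemma nu_formula: "y \<in> U \<Longrightarrow> nu g u y p a = \<phi> y * (\<Sum>q\<in>UNIV. ginv g y a q * hten g u y p q)"
proof -
  assume y: "y \<in> U"
  have "(\<Sum>q\<in>UNIV. ginv g y a q * cov_der1 g (lower g u) y p q) = (\<Sum>r\<in>UNIV. (\<Sum>q\<in>UNIV. ginv g y a q * g y $ q $ r) * nu g u y p r)"
    unfolding nu_low[OF y] by (simp only: sum_distrib_left sum_distrib_right, rule swap_cong, simp add: mult_ac)
  also have "\<dots> = nu g u y p a" using gi_g[OF y] by simp
  finally show ?thesis using u_conc y by (simp add: hten_def sum_distrib_left mult_ac)
qed

lemma u_nu: "y \<in> U \<Longrightarrow> (\<Sum>p\<in>UNIV. u y $ p * nu g u y p a) = 0"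
proof -
  assume y: "y \<in> U"
  have "(\<Sum>p\<in>UNIV. u y $ p * nu g u y p a) = \<phi> y * (\<Sum>q\<in>UNIV. ginv g y a q * (\<Sum>p\<in>UNIV. u y $ p * hten g u y p q))"
    unfolding nu_formula[OF y] by (simp only: sum_distrib_left, rule swap_cong, simp add: mult_ac)
  then show ?thesis by (simp add: uh[OF y])
qed

lemma nu_R: "y \<in> U \<Longrightarrow> (\<Sum>p\<in>UNIV. nu g u y l p * T p) = \<phi> y * (T l + lower g u y l * (\<Sum>p\<in>UNIV. u y $ p * T p))"
proof -
  assume y: "y \<in> U"
  have "(\<Sum>p\<in>UNIV. nu g u y l p * T p) = \<phi> y * (\<Sum>p\<in>UNIV. (\<Sum>q\<in>UNIV. ginv g y p q * hten g u y l q) * T p)"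
    unfolding nu_formula[OF y] by (simp add: sum_distrib_left mult_ac)
  also have "\<dots> = \<phi> y * (\<Sum>p\<in>UNIV. ((if p = l then 1 else 0) + lower g u y l * u y $ p) * T p)"
    using hraise[OF y] by simp
  also have "\<dots> = \<phi> y * (T l + lower g u y l * (\<Sum>p\<in>UNIV. u y $ p * T p))"
    by (simp add: ring_distribs sum.distrib sum_distrib_left mult_ac)
  finally show ?thesis .
qed

lemma cd3_contr:
  assumes y: "y \<in> U" and T: "\<And>j k m p. good U (\<lambda>z. T z j k m p)"
  shows "cd3 g (\<lambda>z j k m. \<Sum>p\<in>UNIV. u z $ p * T z j k m p) y l j k m =
    (\<Sum>p\<in>UNIV. nu g u y l p * T y j k m p) + (\<Sum>p\<in>UNIV. u y $ p * cov_der4 g T y l j k m p)"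
proof -
  let ?G = "christ g y"
  have e1: "(\<Sum>q\<in>UNIV. ?G q l j * (\<Sum>p\<in>UNIV. u y $ p * T y q k m p)) = (\<Sum>p\<in>UNIV. u y $ p * (\<Sum>q\<in>UNIV. ?G q l j * T y q k m p))"
    by (simp only: sum_distrib_left, rule swap_cong, simp add: mult_ac)
  have e2: "(\<Sum>q\<in>UNIV. ?G q l k * (\<Sum>p\<in>UNIV. u y $ p * T y j q m p)) = (\<Sum>p\<in>UNIV. u y $ p * (\<Sum>q\<in>UNIV. ?G q l k * T y j q m p))"
    by (simp only: sum_distrib_left, rule swap_cong, simp add: mult_ac)
  have e3: "(\<Sum>q\<in>UNIV. ?G q l m * (\<Sum>p\<in>UNIV. u y $ p * T y j k q p)) = (\<Sum>p\<in>UNIV. u y $ p * (\<Sum>q\<in>UNIV. ?G q l m * T y j k q p))"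
    by (simp only: sum_distrib_left, rule swap_cong, simp add: mult_ac)
  have e4: "(\<Sum>p\<in>UNIV. (\<Sum>q\<in>UNIV. ?G p l q * u y $ q) * T y j k m p) = (\<Sum>p\<in>UNIV. u y $ p * (\<Sum>q\<in>UNIV. ?G q l p * T y j k m q))"
    by (simp only: sum_distrib_left sum_distrib_right, rule swap_cong, simp add: mult_ac)
  have d: "pder l (\<lambda>z. \<Sum>p\<in>UNIV. u z $ p * T z j k m p) y =
      (\<Sum>p\<in>UNIV. pder l (\<lambda>z. u z $ p) y * T y j k m p) + (\<Sum>p\<in>UNIV. u y $ p * pder l (\<lambda>z. T z j k m p) y)"
    using y T by (simp add: pd_rules sm_intros gu sum.distrib)
  have L: "cd3 g (\<lambda>z j k m. \<Sum>p\<in>UNIV. u z $ p * T z j k m p) y l j k m =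
      (\<Sum>p\<in>UNIV. pder l (\<lambda>z. u z $ p) y * T y j k m p) + (\<Sum>p\<in>UNIV. u y $ p * pder l (\<lambda>z. T z j k m p) y)
      - (\<Sum>p\<in>UNIV. u y $ p * (\<Sum>q\<in>UNIV. ?G q l j * T y q k m p))
      - (\<Sum>p\<in>UNIV. u y $ p * (\<Sum>q\<in>UNIV. ?G q l k * T y j q m p))
      - (\<Sum>p\<in>UNIV. u y $ p * (\<Sum>q\<in>UNIV. ?G q l m * T y j k q p))"
    unfolding cd3_def d by (simp only: sum.distrib e1 e2 e3)
  have R: "(\<Sum>p\<in>UNIV. nu g u y l p * T y j k m p) + (\<Sum>p\<in>UNIV. u y $ p * cov_der4 g T y l j k m p) =
      (\<Sum>p\<in>UNIV. pder l (\<lambda>z. u z $ p) y * T y j k m p) + (\<Sum>p\<in>UNIV. u y $ p * (\<Sum>q\<in>UNIV. ?G q l p * T y j k m q))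
      + (\<Sum>p\<in>UNIV. u y $ p * pder l (\<lambda>z. T z j k m p) y)
      - (\<Sum>p\<in>UNIV. u y $ p * (\<Sum>q\<in>UNIV. ?G q l j * T y q k m p))
      - (\<Sum>p\<in>UNIV. u y $ p * (\<Sum>q\<in>UNIV. ?G q l k * T y j q m p))
      - (\<Sum>p\<in>UNIV. u y $ p * (\<Sum>q\<in>UNIV. ?G q l m * T y j k q p))
      - (\<Sum>p\<in>UNIV. u y $ p * (\<Sum>q\<in>UNIV. ?G q l p * T y j k m q))"
  proof -
    have "(\<Sum>p\<in>UNIV. nu g u y l p * T y j k m p) = (\<Sum>p\<in>UNIV. pder l (\<lambda>z. u z $ p) y * T y j k m p)
        + (\<Sum>p\<in>UNIV. (\<Sum>q\<in>UNIV. ?G p l q * u y $ q) * T y j k m p)"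
      unfolding nu_def by (simp add: distrib_right sum.distrib)
    moreover have "(\<Sum>p\<in>UNIV. u y $ p * cov_der4 g T y l j k m p) = (\<Sum>p\<in>UNIV. u y $ p * pder l (\<lambda>z. T z j k m p) y)
      - (\<Sum>p\<in>UNIV. u y $ p * (\<Sum>q\<in>UNIV. ?G q l j * T y q k m p))
      - (\<Sum>p\<in>UNIV. u y $ p * (\<Sum>q\<in>UNIV. ?G q l k * T y j q m p))
      - (\<Sum>p\<in>UNIV. u y $ p * (\<Sum>q\<in>UNIV. ?G q l m * T y j k q p))
      - (\<Sum>p\<in>UNIV. u y $ p * (\<Sum>q\<in>UNIV. ?G q l p * T y j k m q))"
      unfolding cov_der4_def by (simp add: sum.distrib sum_subtractf ring_distribs)
    ultimately show ?thesis unfolding e4 by (simp add: algebra_simps)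
  qed
  show ?thesis unfolding L R by (simp add: algebra_simps)
qed

lemma cd3_local:
  assumes y: "y \<in> U" and eq: "\<And>z j k m. z \<in> U \<Longrightarrow> T z j k m = S z j k m"
  shows "cd3 g T y p j k m = cd3 g S y p j k m"
proof -
  have "pder p (\<lambda>z. T z j k m) y = pder p (\<lambda>z. S z j k m) y" by (rule pd_local[OF y]) (simp add: eq)
  then show ?thesis unfolding cd3_def using eq[OF y] by simp
qed

lemma cd4_local:
  assumes y: "y \<in> U" and eq: "\<And>z j k l m. z \<in> U \<Longrightarrow> T z j k l m = S z j k l m"
  shows "cov_der4 g T y p j k l m = cov_der4 g S y p j k l m"
proof -
  have "pder p (\<lambda>z. T z j k l m) y = pder p (\<lambda>z. S z j k l m) y" by (rule pd_local[OF y]) (simp add: eq)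
  then show ?thesis unfolding cov_der4_def using eq[OF y] by simp
qed

lemma cd3_prod1: "y \<in> U \<Longrightarrow> (\<And>k m. good U (\<lambda>z. A z k m)) \<Longrightarrow> (\<And>j. good U (\<lambda>z. B z j)) \<Longrightarrow>
  cd3 g (\<lambda>z j k m. A z k m * B z j) y l j k m = cd2 g A y l k m * B y j + A y k m * cov_der1 g B y l j"
  unfolding cd3_def cd2_def cov_der1_def
  by (simp add: pd_rules sum.distrib sum_subtractf sum_distrib_left sum_distrib_right algebra_simps)

lemma cd3_prod2: "y \<in> U \<Longrightarrow> (\<And>k m. good U (\<lambda>z. A z k m)) \<Longrightarrow> (\<And>j. good U (\<lambda>z. B z j)) \<Longrightarrow>
  cd3 g (\<lambda>z j k m. A z j m * B z k) y l j k m = cd2 g A y l j m * B y k + A y j m * cov_der1 g B y l k"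
  unfolding cd3_def cd2_def cov_der1_def
  by (simp add: pd_rules sum.distrib sum_subtractf sum_distrib_left sum_distrib_right algebra_simps)

lemma cd3_diff: "y \<in> U \<Longrightarrow> (\<And>j k m. good U (\<lambda>z. A z j k m)) \<Longrightarrow> (\<And>j k m. good U (\<lambda>z. B z j k m)) \<Longrightarrow>
  cd3 g (\<lambda>z j k m. A z j k m - B z j k m) y l j k m = cd3 g A y l j k m - cd3 g B y l j k m"
  unfolding cd3_def by (simp add: pd_rules sum.distrib sum_subtractf algebra_simps)

lemma cd4_lin3: "y \<in> U \<Longrightarrow> (\<And>i k l m. good U (\<lambda>z. A z i k l m)) \<Longrightarrow> (\<And>i k l m. good U (\<lambda>z. B z i k l m))
  \<Longrightarrow> (\<And>i k l m. good U (\<lambda>z. C z i k l m)) \<Longrightarrow>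
  cov_der4 g (\<lambda>z i k l m. A z i k l m + a * B z i k l m + c * C z i k l m) y p i k l m
   = cov_der4 g A y p i k l m + a * cov_der4 g B y p i k l m + c * cov_der4 g C y p i k l m"
  unfolding cov_der4_def by (simp add: pd_rules sm_intros sum.distrib sum_subtractf sum_distrib_left algebra_simps)

lemma D4_lin3: "y \<in> U \<Longrightarrow> (\<And>i k l m. good U (\<lambda>z. A z i k l m)) \<Longrightarrow> (\<And>i k l m. good U (\<lambda>z. B z i k l m))
  \<Longrightarrow> (\<And>i k l m. good U (\<lambda>z. C z i k l m)) \<Longrightarrow>
  D4 g u (\<lambda>z i k l m. A z i k l m + a * B z i k l m + c * C z i k l m) y i k l m
   = D4 g u A y i k l m + a * D4 g u B y i k l m + c * D4 g u C y i k l m"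
proof -
  assume y: "y \<in> U" and A: "\<And>i k l m. good U (\<lambda>z. A z i k l m)" and B: "\<And>i k l m. good U (\<lambda>z. B z i k l m)"
    and C: "\<And>i k l m. good U (\<lambda>z. C z i k l m)"
  show ?thesis unfolding D4_def cd4_lin3[OF y A B C] by (simp add: sum.distrib sum_distrib_left algebra_simps)
qed

lemma cd4_scal: "y \<in> U \<Longrightarrow> good U f \<Longrightarrow> (\<And>i k l m. good U (\<lambda>z. T z i k l m)) \<Longrightarrow>
  cov_der4 g (\<lambda>z i k l m. f z * T z i k l m) y p i k l m = pder p f y * T y i k l m + f y * cov_der4 g T y p i k l m"
  unfolding cov_der4_def by (simp add: pd_rules sum.distrib sum_subtractf sum_distrib_left algebra_simps)

lemma D4_scal: "y \<in> U \<Longrightarrow> good U f \<Longrightarrow> (\<And>i k l m. good U (\<lambda>z. T z i k l m)) \<Longrightarrow>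
  D4 g u (\<lambda>z i k l m. f z * T z i k l m) y i k l m = Df u f y * T y i k l m + f y * D4 g u T y i k l m"
  unfolding D4_def Df_def by (simp add: cd4_scal sum.distrib sum_distrib_left sum_distrib_right algebra_simps)

lemma cd4_KN: "y \<in> U \<Longrightarrow> (\<And>a b. good U (\<lambda>z. P z a b)) \<Longrightarrow> (\<And>a b. good U (\<lambda>z. Q z a b)) \<Longrightarrow>
  cov_der4 g (\<lambda>z. KN (P z) (Q z)) y p i k l m = KN (cd2 g P y p) (Q y) i k l m + KN (P y) (cd2 g Q y p) i k l m"
  unfolding cov_der4_def KN_def cd2_def
  by (simp add: pd_rules sm_intros sum.distrib sum_subtractf sum_distrib_left sum_distrib_right algebra_simps)

lemma D4_KN: "y \<in> U \<Longrightarrow> (\<And>a b. good U (\<lambda>z. P z a b)) \<Longrightarrow> (\<And>a b. good U (\<lambda>z. Q z a b)) \<Longrightarrow>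
  D4 g u (\<lambda>z. KN (P z) (Q z)) y i k l m = KN (D2 g u P y) (Q y) i k l m + KN (P y) (D2 g u Q y) i k l m"
  unfolding D4_def D2_def by (simp add: cd4_KN KN_def sum.distrib sum_subtractf sum_distrib_left sum_distrib_right algebra_simps)

lemma D2_G: "y \<in> U \<Longrightarrow> D2 g u (\<lambda>z a b. g z $ a $ b) y = (\<lambda>a b. 0)"
  unfolding D2_def by (intro ext) (simp add: cd2_g)

lemma D2_vv: "y \<in> U \<Longrightarrow> D2 g u (\<lambda>z a b. lower g u z a * lower g u z b) y = (\<lambda>a b. 0)"
proof (intro ext)
  fix a b assume y: "y \<in> U"
  have "D2 g u (\<lambda>z a b. lower g u z a * lower g u z b) y a b =
     \<phi> y * ((\<Sum>p\<in>UNIV. u y $ p * hten g u y p a) * lower g u y b + lower g u y a * (\<Sum>p\<in>UNIV. u y $ p * hten g u y p b))"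
    unfolding D2_def cd2_vv[OF y] using u_conc y
    by (simp add: hten_def[symmetric] sum.distrib sum_distrib_left sum_distrib_right algebra_simps)
  then show "D2 g u (\<lambda>z a b. lower g u z a * lower g u z b) y a b = 0" by (simp add: uh[OF y])
qed

lemma KN_zero1: "KN (\<lambda>a b. 0) Q = (\<lambda>i k l m. 0)" unfolding KN_def by (intro ext) simp
lemma KN_zero2: "KN P (\<lambda>a b. 0) = (\<lambda>i k l m. 0)" unfolding KN_def by (intro ext) simp

end


lemma sum3_rev: "(\<Sum>x\<in>A. \<Sum>y\<in>B. \<Sum>z\<in>C. F x y z) = (\<Sum>z\<in>C. \<Sum>y\<in>B. \<Sum>x\<in>A. (F x y z::real))"
proof -
  have "(\<Sum>x\<in>A. \<Sum>y\<in>B. \<Sum>z\<in>C. F x y z) = (\<Sum>y\<in>B. \<Sum>z\<in>C. \<Sum>x\<in>A. F x y z)" by (rule sum3_rot)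
  also have "\<dots> = (\<Sum>z\<in>C. \<Sum>y\<in>B. \<Sum>x\<in>A. F x y z)" by (rule sum.swap)
  finally show ?thesis .
qed

lemma sum3_swap23: "(\<Sum>x\<in>A. \<Sum>y\<in>B. \<Sum>z\<in>C. F x y z) = (\<Sum>x\<in>A. \<Sum>z\<in>C. \<Sum>y\<in>B. (F x y z::real))"
  by (rule sum.cong[OF refl]) (rule sum.swap)

lemma pull3: "(\<Sum>a\<in>A. \<Sum>c\<in>C. H a c * (\<Sum>q\<in>Q. G q * T a q c)) = (\<Sum>q\<in>Q. G q * (\<Sum>a\<in>A. \<Sum>c\<in>C. H a c * (T a q c::real)))"
proof -
  have "(\<Sum>q\<in>Q. G q * (\<Sum>a\<in>A. \<Sum>c\<in>C. H a c * T a q c)) = (\<Sum>q\<in>Q. \<Sum>a\<in>A. \<Sum>c\<in>C. G q * (H a c * T a q c))"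
    by (simp add: sum_distrib_left)
  also have "\<dots> = (\<Sum>a\<in>A. \<Sum>c\<in>C. \<Sum>q\<in>Q. G q * (H a c * T a q c))" by (rule sum3_rot)
  also have "\<dots> = (\<Sum>a\<in>A. \<Sum>c\<in>C. H a c * (\<Sum>q\<in>Q. G q * T a q c))"
    by (simp add: sum_distrib_left mult_ac)
  finally show ?thesis by simp
qed

context geo begin

lemma cd4_anti12:
  assumes y: "y \<in> U" and T: "\<And>z i k l m. z \<in> U \<Longrightarrow> T z i k l m = - T z k i l m"
    and gT: "\<And>i k l m. good U (\<lambda>z. T z i k l m)"
  shows "cov_der4 g T y p i k l m = - cov_der4 g T y p k i l m"
proof -
  have "pder p (\<lambda>z. T z i k l m) y = pder p (\<lambda>z. - T z k i l m) y" by (rule pd_local[OF y]) (rule T)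
  also have "\<dots> = - pder p (\<lambda>z. T z k i l m) y" using y gT by (simp add: pd_rules)
  finally have d: "pder p (\<lambda>z. T z i k l m) y = - pder p (\<lambda>z. T z k i l m) y" .
  have "\<And>q. T y q k l m = - T y k q l m" "\<And>q. T y i q l m = - T y q i l m"
    "\<And>q. T y i k q m = - T y k i q m" "\<And>q. T y i k l q = - T y k i l q" using T[OF y] by blast+
  then show ?thesis unfolding cov_der4_def d by (simp add: sum.distrib sum_negf[symmetric] algebra_simps)
qed

lemma cd4_anti34:
  assumes y: "y \<in> U" and T: "\<And>z i k l m. z \<in> U \<Longrightarrow> T z i k l m = - T z i k m l"
    and gT: "\<And>i k l m. good U (\<lambda>z. T z i k l m)"
  shows "cov_der4 g T y p i k l m = - cov_der4 g T y p i k m l"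
proof -
  have "pder p (\<lambda>z. T z i k l m) y = pder p (\<lambda>z. - T z i k m l) y" by (rule pd_local[OF y]) (rule T)
  also have "\<dots> = - pder p (\<lambda>z. T z i k m l) y" using y gT by (simp add: pd_rules)
  finally have d: "pder p (\<lambda>z. T z i k l m) y = - pder p (\<lambda>z. T z i k m l) y" .
  have "\<And>q. T y q k l m = - T y q k m l" "\<And>q. T y i q l m = - T y i q m l"
    "\<And>q. T y i k q m = - T y i k m q" "\<And>q. T y i k l q = - T y i k q l" using T[OF y] by blast+
  then show ?thesis unfolding cov_der4_def d by (simp add: sum.distrib sum_negf[symmetric] algebra_simps)
qed

lemma cd4_bianchi:
  assumes y: "y \<in> U" and T: "\<And>z i k l m. z \<in> U \<Longrightarrow> T z i k l m + T z k l i m + T z l i k m = 0"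
    and gT: "\<And>i k l m. good U (\<lambda>z. T z i k l m)"
  shows "cov_der4 g T y p i k l m + cov_der4 g T y p k l i m + cov_der4 g T y p l i k m = 0"
proof -
  have "pder p (\<lambda>z. T z i k l m) y + pder p (\<lambda>z. T z k l i m) y + pder p (\<lambda>z. T z l i k m) y
      = pder p (\<lambda>z. T z i k l m + T z k l i m + T z l i k m) y" using y gT by (simp add: pd_rules sm_intros)
  also have "\<dots> = pder p (\<lambda>z. 0) y" by (rule pd_local[OF y]) (simp add: T)
  finally have d: "pder p (\<lambda>z. T z i k l m) y + pder p (\<lambda>z. T z k l i m) y + pder p (\<lambda>z. T z l i k m) y = 0"
    by (simp add: pder_const)
  have z: "\<And>a b c d. T y a b c d + T y b c a d + T y c a b d = 0" using T[OF y] .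
  have s: "(\<Sum>q\<in>UNIV. christ g y q p i * (T y q k l m + T y k l q m + T y l q k m)
    + christ g y q p k * (T y i q l m + T y q l i m + T y l i q m)
    + christ g y q p l * (T y i k q m + T y k q i m + T y q i k m)
    + christ g y q p m * (T y i k l q + T y k l i q + T y l i k q)) = 0"
    using z by simp
  show ?thesis using d s unfolding cov_der4_def
    by (simp add: sum.distrib sum_subtractf ring_distribs algebra_simps)
qed

lemma cd4_gen:
  assumes y: "y \<in> U" and T: "\<And>z. z \<in> U \<Longrightarrow> gen_curv (T z)"
    and gT: "\<And>i k l m. good U (\<lambda>z. T z i k l m)"
  shows "gen_curv (\<lambda>i k l m. cov_der4 g T y p i k l m)"
  by (rule gen_curv_I) (intro cd4_anti12 cd4_anti34 cd4_bianchi y gT gen_curv_D[OF T]; assumption)+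

lemma D4_gen:
  assumes y: "y \<in> U" and T: "\<And>z. z \<in> U \<Longrightarrow> gen_curv (T z)"
    and gT: "\<And>i k l m. good U (\<lambda>z. T z i k l m)"
  shows "gen_curv (D4 g u T y)"
proof (rule gen_curv_I)
  fix i k l m
  note G = cd4_gen[OF y T gT]
  have g1: "\<And>p. cov_der4 g T y p i k l m = - cov_der4 g T y p k i l m" using gen_curv_D(1)[OF G] .
  have g2: "\<And>p. cov_der4 g T y p i k l m = - cov_der4 g T y p i k m l" using gen_curv_D(2)[OF G] .
  have g4: "\<And>p. cov_der4 g T y p i k l m + cov_der4 g T y p k l i m + cov_der4 g T y p l i k m = 0"
    using gen_curv_D(4)[OF G] .
  show "D4 g u T y i k l m = - D4 g u T y k i l m" unfolding D4_def
    by (simp add: g1 sum_negf[symmetric])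
  show "D4 g u T y i k l m = - D4 g u T y i k m l" unfolding D4_def
    by (simp add: g2 sum_negf[symmetric])
  have "D4 g u T y i k l m + D4 g u T y k l i m + D4 g u T y l i k m =
     (\<Sum>p\<in>UNIV. u y $ p * (cov_der4 g T y p i k l m + cov_der4 g T y p k l i m + cov_der4 g T y p l i k m))"
    unfolding D4_def by (simp add: sum.distrib distrib_left)
  then show "D4 g u T y i k l m + D4 g u T y k l i m + D4 g u T y l i k m = 0" by (simp add: g4)
qed

lemma cd3_zero: "y \<in> U \<Longrightarrow> (\<And>z j k m. z \<in> U \<Longrightarrow> T z j k m = 0) \<Longrightarrow> cd3 g T y p j k m = 0"
proof -
  assume y: "y \<in> U" and T: "\<And>z j k m. z \<in> U \<Longrightarrow> T z j k m = 0"
  have "cd3 g T y p j k m = cd3 g (\<lambda>z j k m. 0) y p j k m" by (rule cd3_local[OF y T])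
  then show ?thesis unfolding cd3_def by (simp add: pder_const)
qed

lemma D4_orth:
  assumes y: "y \<in> U" and T: "\<And>z j k l. z \<in> U \<Longrightarrow> (\<Sum>m\<in>UNIV. u z $ m * T z j k l m) = 0"
    and gT: "\<And>i k l m. good U (\<lambda>z. T z i k l m)"
  shows "(\<Sum>m\<in>UNIV. u y $ m * D4 g u T y j k l m) = 0"
proof -
  have c: "(\<Sum>m\<in>UNIV. u y $ m * cov_der4 g T y p j k l m) = - (\<Sum>m\<in>UNIV. nu g u y p m * T y j k l m)" for p
    using cd3_contr[OF y gT, where l=p and j=j and k=k and m=l] cd3_zero[OF y, of "\<lambda>z j k l. \<Sum>m\<in>UNIV. u z $ m * T z j k l m" p j k l] T
    by simp
  have "(\<Sum>m\<in>UNIV. u y $ m * D4 g u T y j k l m) = (\<Sum>p\<in>UNIV. u y $ p * (\<Sum>m\<in>UNIV. u y $ m * cov_der4 g T y p j k l m))"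
    unfolding D4_def by (simp only: sum_distrib_left, rule swap_cong, simp add: mult_ac)
  also have "\<dots> = - (\<Sum>m\<in>UNIV. (\<Sum>p\<in>UNIV. u y $ p * nu g u y p m) * T y j k l m)"
    unfolding c by (simp only: sum_distrib_left sum_distrib_right sum_negf mult_minus_right, subst swap_cong, auto simp: mult_ac)
  also have "\<dots> = 0" by (simp add: u_nu[OF y])
  finally show ?thesis .
qed

lemma dginv: "y \<in> U \<Longrightarrow> pder p (\<lambda>z. ginv g z a d) y =
    - (\<Sum>b\<in>UNIV. ginv g y a b * christ g y d p b) - (\<Sum>c\<in>UNIV. christ g y a p c * ginv g y c d)"
proof -
  assume y: "y \<in> U"
  let ?G = "christ g y" and ?H = "ginv g y"
  have z: "(\<Sum>b\<in>UNIV. pder p (\<lambda>z. ginv g z a b) y * g y $ b $ c) = - (\<Sum>b\<in>UNIV. ?H a b * pder p (\<lambda>z. g z $ b $ c) y)" for c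
  proof -
    have "pder p (\<lambda>z. \<Sum>b\<in>UNIV. ginv g z a b * g z $ b $ c) y = pder p (\<lambda>z. if a = c then 1 else 0) y"
      by (rule pd_local[OF y]) (simp add: gi_g)
    then have "(\<Sum>b\<in>UNIV. pder p (\<lambda>z. ginv g z a b) y * g y $ b $ c + ?H a b * pder p (\<lambda>z. g z $ b $ c) y) = 0"
      using y by (simp add: pd_rules sm_intros gG gGi pder_const)
    then show ?thesis by (simp add: sum.distrib eq_neg_iff_add_eq_0)
  qed
  have "pder p (\<lambda>z. ginv g z a d) y = (\<Sum>c\<in>UNIV. (\<Sum>b\<in>UNIV. pder p (\<lambda>z. ginv g z a b) y * g y $ b $ c) * ?H c d)"
  proof -
    have "(\<Sum>c\<in>UNIV. (\<Sum>b\<in>UNIV. pder p (\<lambda>z. ginv g z a b) y * g y $ b $ c) * ?H c d)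
      = (\<Sum>b\<in>UNIV. pder p (\<lambda>z. ginv g z a b) y * (\<Sum>c\<in>UNIV. g y $ b $ c * ?H c d))"
      by (simp only: sum_distrib_left sum_distrib_right, rule swap_cong, simp add: mult_ac)
    then show ?thesis using g_gi[OF y] by simp
  qed
  also have "\<dots> = - (\<Sum>c\<in>UNIV. (\<Sum>b\<in>UNIV. ?H a b * pder p (\<lambda>z. g z $ b $ c) y) * ?H c d)"
    unfolding z by (simp add: sum_negf)
  also have "(\<Sum>c\<in>UNIV. (\<Sum>b\<in>UNIV. ?H a b * pder p (\<lambda>z. g z $ b $ c) y) * ?H c d)
     = (\<Sum>b\<in>UNIV. ?H a b * ?G d p b) + (\<Sum>c\<in>UNIV. ?G a p c * ?H c d)"
  proof -
    have "(\<Sum>c\<in>UNIV. (\<Sum>b\<in>UNIV. ?H a b * pder p (\<lambda>z. g z $ b $ c) y) * ?H c d)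
      = (\<Sum>c\<in>UNIV. \<Sum>b\<in>UNIV. \<Sum>q\<in>UNIV. ?H a b * ?G q p b * g y $ q $ c * ?H c d)
      + (\<Sum>c\<in>UNIV. \<Sum>b\<in>UNIV. \<Sum>q\<in>UNIV. ?H a b * ?G q p c * g y $ b $ q * ?H c d)"
      unfolding nabla_g[OF y] by (simp add: sum.distrib sum_distrib_left sum_distrib_right ring_distribs mult_ac)
    also have "(\<Sum>c\<in>UNIV. \<Sum>b\<in>UNIV. \<Sum>q\<in>UNIV. ?H a b * ?G q p b * g y $ q $ c * ?H c d)
       = (\<Sum>b\<in>UNIV. \<Sum>q\<in>UNIV. ?H a b * ?G q p b * (\<Sum>c\<in>UNIV. g y $ q $ c * ?H c d))"
      by (subst sum3_rot) (simp add: sum_distrib_left mult_ac)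
    also have "\<dots> = (\<Sum>b\<in>UNIV. ?H a b * ?G d p b)" using g_gi[OF y] by simp
    also have "(\<Sum>c\<in>UNIV. \<Sum>b\<in>UNIV. \<Sum>q\<in>UNIV. ?H a b * ?G q p c * g y $ b $ q * ?H c d)
       = (\<Sum>c\<in>UNIV. \<Sum>q\<in>UNIV. \<Sum>b\<in>UNIV. ?H a b * ?G q p c * g y $ b $ q * ?H c d)"
      by (rule sum3_swap23)
    also have "\<dots> = (\<Sum>c\<in>UNIV. \<Sum>q\<in>UNIV. (\<Sum>b\<in>UNIV. ?H a b * g y $ b $ q) * ?G q p c * ?H c d)"
      by (intro sum.cong refl) (simp add: sum_distrib_left sum_distrib_right mult_ac)
    also have "\<dots> = (\<Sum>c\<in>UNIV. ?G a p c * ?H c d)" using gi_g[OF y] by (simp add: mult.assoc)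
    finally show ?thesis .
  qed
  finally show ?thesis by simp
qed

lemma cd4_c13:
  assumes y: "y \<in> U" and T: "\<And>z k m. z \<in> U \<Longrightarrow> (\<Sum>a\<in>UNIV. \<Sum>c\<in>UNIV. ginv g z a c * T z a k c m) = 0"
    and gT: "\<And>i k l m. good U (\<lambda>z. T z i k l m)"
  shows "(\<Sum>a\<in>UNIV. \<Sum>c\<in>UNIV. ginv g y a c * cov_der4 g T y p a k c m) = 0"
proof -
  let ?G = "christ g y" and ?H = "ginv g y"
  have e0: "pder p (\<lambda>z. \<Sum>a\<in>UNIV. \<Sum>c\<in>UNIV. ginv g z a c * T z a k c m) y = pder p (\<lambda>z. 0) y"
    by (rule pd_local[OF y]) (rule T)
  have e1: "pder p (\<lambda>z. \<Sum>a\<in>UNIV. \<Sum>c\<in>UNIV. ginv g z a c * T z a k c m) y =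
     (\<Sum>a\<in>UNIV. \<Sum>c\<in>UNIV. pder p (\<lambda>z. ginv g z a c) y * T y a k c m) + (\<Sum>a\<in>UNIV. \<Sum>c\<in>UNIV. ?H a c * pder p (\<lambda>z. T z a k c m) y)"
    using y gT by (simp add: pd_rules sm_intros gGi sum.distrib)
  define Z1 where "Z1 = (\<Sum>a\<in>UNIV. \<Sum>c\<in>UNIV. \<Sum>b\<in>UNIV. ?H a b * ?G c p b * T y a k c m)"
  define Z2 where "Z2 = (\<Sum>a\<in>UNIV. \<Sum>c\<in>UNIV. \<Sum>b\<in>UNIV. ?G a p b * ?H b c * T y a k c m)"
  have e2: "(\<Sum>a\<in>UNIV. \<Sum>c\<in>UNIV. pder p (\<lambda>z. ginv g z a c) y * T y a k c m) = - Z1 - Z2"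
    unfolding dginv[OF y] Z1_def Z2_def
    by (simp add: sum.distrib sum_subtractf sum_distrib_right ring_distribs sum_negf)
  have dT: "(\<Sum>a\<in>UNIV. \<Sum>c\<in>UNIV. ?H a c * pder p (\<lambda>z. T z a k c m) y) = Z1 + Z2"
    using e0 e1 e2 by (simp add: pder_const)
  have X1: "(\<Sum>a\<in>UNIV. \<Sum>c\<in>UNIV. ?H a c * (\<Sum>q\<in>UNIV. ?G q p a * T y q k c m)) = Z2"
  proof -
    have "(\<Sum>a\<in>UNIV. \<Sum>c\<in>UNIV. ?H a c * (\<Sum>q\<in>UNIV. ?G q p a * T y q k c m)) =
      (\<Sum>a\<in>UNIV. \<Sum>c\<in>UNIV. \<Sum>q\<in>UNIV. ?G q p a * ?H a c * T y q k c m)"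
      by (simp add: sum_distrib_left mult_ac)
    also have "\<dots> = Z2" unfolding Z2_def by (rule sum3_rev)
    finally show ?thesis .
  qed
  have X3: "(\<Sum>a\<in>UNIV. \<Sum>c\<in>UNIV. ?H a c * (\<Sum>q\<in>UNIV. ?G q p c * T y a k q m)) = Z1"
  proof -
    have "(\<Sum>a\<in>UNIV. \<Sum>c\<in>UNIV. ?H a c * (\<Sum>q\<in>UNIV. ?G q p c * T y a k q m)) =
      (\<Sum>a\<in>UNIV. \<Sum>c\<in>UNIV. \<Sum>q\<in>UNIV. ?H a c * ?G q p c * T y a k q m)"
      by (simp add: sum_distrib_left mult_ac)
    also have "\<dots> = Z1" unfolding Z1_def by (rule sum3_swap23)
    finally show ?thesis .
  qed
  have X2: "(\<Sum>a\<in>UNIV. \<Sum>c\<in>UNIV. ?H a c * (\<Sum>q\<in>UNIV. ?G q p k * T y a q c m)) = 0"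
  proof -
    have "(\<Sum>a\<in>UNIV. \<Sum>c\<in>UNIV. ?H a c * (\<Sum>q\<in>UNIV. ?G q p k * T y a q c m)) =
       (\<Sum>q\<in>UNIV. ?G q p k * (\<Sum>a\<in>UNIV. \<Sum>c\<in>UNIV. ?H a c * T y a q c m))"
      by (rule pull3)
    then show ?thesis using T[OF y] by simp
  qed
  have X4: "(\<Sum>a\<in>UNIV. \<Sum>c\<in>UNIV. ?H a c * (\<Sum>q\<in>UNIV. ?G q p m * T y a k c q)) = 0"
  proof -
    have "(\<Sum>a\<in>UNIV. \<Sum>c\<in>UNIV. ?H a c * (\<Sum>q\<in>UNIV. ?G q p m * T y a k c q)) =
       (\<Sum>q\<in>UNIV. ?G q p m * (\<Sum>a\<in>UNIV. \<Sum>c\<in>UNIV. ?H a c * T y a k c q))"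
      by (rule pull3)
    then show ?thesis using T[OF y] by simp
  qed
  have "(\<Sum>a\<in>UNIV. \<Sum>c\<in>UNIV. ?H a c * cov_der4 g T y p a k c m) =
     (\<Sum>a\<in>UNIV. \<Sum>c\<in>UNIV. ?H a c * pder p (\<lambda>z. T z a k c m) y)
     - (\<Sum>a\<in>UNIV. \<Sum>c\<in>UNIV. ?H a c * (\<Sum>q\<in>UNIV. ?G q p a * T y q k c m))
     - (\<Sum>a\<in>UNIV. \<Sum>c\<in>UNIV. ?H a c * (\<Sum>q\<in>UNIV. ?G q p k * T y a q c m))
     - (\<Sum>a\<in>UNIV. \<Sum>c\<in>UNIV. ?H a c * (\<Sum>q\<in>UNIV. ?G q p c * T y a k q m))
     - (\<Sum>a\<in>UNIV. \<Sum>c\<in>UNIV. ?H a c * (\<Sum>q\<in>UNIV. ?G q p m * T y a k c q))"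
    unfolding cov_der4_def by (simp add: sum.distrib sum_subtractf ring_distribs)
  then show ?thesis unfolding X1 X2 X3 X4 dT by simp
qed

lemma D4_c13:
  assumes y: "y \<in> U" and T: "\<And>z k m. z \<in> U \<Longrightarrow> (\<Sum>a\<in>UNIV. \<Sum>c\<in>UNIV. ginv g z a c * T z a k c m) = 0"
    and gT: "\<And>i k l m. good U (\<lambda>z. T z i k l m)"
  shows "(\<Sum>a\<in>UNIV. \<Sum>c\<in>UNIV. ginv g y a c * D4 g u T y a k c m) = 0"
proof -
  have "(\<Sum>a\<in>UNIV. \<Sum>c\<in>UNIV. ginv g y a c * D4 g u T y a k c m) =
     (\<Sum>p\<in>UNIV. u y $ p * (\<Sum>a\<in>UNIV. \<Sum>c\<in>UNIV. ginv g y a c * cov_der4 g T y p a k c m))"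
    unfolding D4_def by (rule pull3)
  then show ?thesis using cd4_c13[OF y T gT] by simp
qed

end


definition Kf :: "('n \<Rightarrow> 'n \<Rightarrow> real) \<Rightarrow> ('n \<Rightarrow> 'n \<Rightarrow> real) \<Rightarrow> 'n \<Rightarrow> 'n \<Rightarrow> 'n \<Rightarrow> 'n \<Rightarrow> real" where
  "Kf P A j k l m = P j l * A k m - P j m * A k l - P k l * A j m + P k m * A j l"

definition dec :: "('n \<Rightarrow> real) \<Rightarrow> ('n \<Rightarrow> 'n \<Rightarrow> real) \<Rightarrow> ('n \<Rightarrow> 'n \<Rightarrow> 'n \<Rightarrow> 'n \<Rightarrow> real) \<Rightarrow> bool" where
  "dec v G T \<longleftrightarrow> (\<exists>A S1 S2 S3 S4. \<forall>j k l m. T j k l m = Kf G A j k l m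
      + v j * S1 k l m + v k * S2 j l m + v l * S3 j k m + v m * S4 j k l)"

lemma decI: "(\<And>j k l m. T j k l m = Kf G A j k l m + v j * Sa k l m + v k * Sb j l m + v l * Sc j k m + v m * Sd j k l)
  \<Longrightarrow> dec v G T"
  unfolding dec_def by blast

lemma dec_add: "dec v G T1 \<Longrightarrow> dec v G T2 \<Longrightarrow> dec v G (\<lambda>j k l m. T1 j k l m + c * T2 j k l m)"
proof -
  assume "dec v G T1" "dec v G T2"
  then obtain A S1 S2 S3 S4 B R1 R2 R3 R4 where
    a: "\<And>j k l m. T1 j k l m = Kf G A j k l m + v j * S1 k l m + v k * S2 j l m + v l * S3 j k m + v m * S4 j k l" and
    b: "\<And>j k l m. T2 j k l m = Kf G B j k l m + v j * R1 k l m + v k * R2 j l m + v l * R3 j k m + v m * R4 j k l"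
    unfolding dec_def by blast
  show ?thesis
    by (rule decI[where A="\<lambda>a b. A a b + c * B a b" and Sa="\<lambda>a b d. S1 a b d + c * R1 a b d"
          and Sb="\<lambda>a b d. S2 a b d + c * R2 a b d" and Sc="\<lambda>a b d. S3 a b d + c * R3 a b d"
          and Sd="\<lambda>a b d. S4 a b d + c * R4 a b d"])
       (simp add: a b Kf_def algebra_simps)
qed

lemma dec_KN_G: "dec v G (KN G Q)"
  by (rule decI[where A="\<lambda>a b. - Q a b" and Sa="\<lambda>a b d. 0" and Sb="\<lambda>a b d. 0" and Sc="\<lambda>a b d. 0" and Sd="\<lambda>a b d. 0"])
     (simp add: KN_def Kf_def algebra_simps)

lemma dec_KN_V: "dec v G (KN (\<lambda>a b. v a * v b) Q)"
  by (rule decI[where A="\<lambda>a b. 0" and Sa="\<lambda>k l m. v m * Q k l - v l * Q k m" and Sb="\<lambda>i l m. v l * Q i m - v m * Q i l"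
        and Sc="\<lambda>a b d. 0" and Sd="\<lambda>a b d. 0"])
     (simp add: KN_def Kf_def algebra_simps)

lemma KN_lin2: "KN P (\<lambda>a b. Q1 a b + c * Q2 a b) i k l m = KN P Q1 i k l m + c * KN P Q2 i k l m"
  unfolding KN_def by (simp add: algebra_simps)

context geo begin

lemma gW3: "good U (\<lambda>z. \<Sum>p\<in>UNIV. u z $ p * riem g z j k m p)"
  by (intro sm_intros gu gR)
lemma gX: "good U (\<lambda>z. Xv \<phi> g u z j)"
  unfolding Xv_def by (intro sm_intros gphi gv) (simp add: power2_eq_square; intro sm_intros gphi)

lemma D4_riem: "y \<in> U \<Longrightarrow> D4 g u (riem g) y j k l m + 2 * \<phi> y * riem g y j k l m =
   cd3 g (\<lambda>z j k m. \<Sum>p\<in>UNIV. u z $ p * riem g z j k m p) y m j k l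
 - cd3 g (\<lambda>z j k m. \<Sum>p\<in>UNIV. u z $ p * riem g z j k m p) y l j k m
 + \<phi> y * (lower g u y l * (\<Sum>p\<in>UNIV. u y $ p * riem g y j k m p) - lower g u y m * (\<Sum>p\<in>UNIV. u y $ p * riem g y j k l p))"
proof -
  assume y: "y \<in> U"
  define W3 where "W3 = (\<lambda>z j k m. \<Sum>p\<in>UNIV. u z $ p * riem g z j k m p)"
  have an: "cov_der4 g (riem g) y m j k p l = - cov_der4 g (riem g) y m j k l p" for p
    by (rule cd4_anti34[OF y _ gR]) (rule riem_anti2)
  have b: "cov_der4 g (riem g) y p j k l m = - cov_der4 g (riem g) y l j k m p + cov_der4 g (riem g) y m j k l p" for p
    using bianchi2[OF y, of p j k l m] an[of p] by simp
  have c1: "cd3 g W3 y l j k m = \<phi> y * (riem g y j k m l + lower g u y l * W3 y j k m) + (\<Sum>p\<in>UNIV. u y $ p * cov_der4 g (riem g) y l j k m p)"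
    unfolding W3_def cd3_contr[OF y gR] nu_R[OF y] ..
  have c2: "cd3 g W3 y m j k l = \<phi> y * (riem g y j k l m + lower g u y m * W3 y j k l) + (\<Sum>p\<in>UNIV. u y $ p * cov_der4 g (riem g) y m j k l p)"
    unfolding W3_def cd3_contr[OF y gR] nu_R[OF y] ..
  have d: "D4 g u (riem g) y j k l m = - (\<Sum>p\<in>UNIV. u y $ p * cov_der4 g (riem g) y l j k m p) + (\<Sum>p\<in>UNIV. u y $ p * cov_der4 g (riem g) y m j k l p)"
    unfolding D4_def b by (simp add: ring_distribs sum.distrib sum_negf sum_subtractf)
  have r: "riem g y j k m l = - riem g y j k l m" by (rule riem_anti2)
  show ?thesis using c1 c2 d r by (simp add: W3_def algebra_simps)
qed

lemma cd3W3: "y \<in> U \<Longrightarrow> cd3 g (\<lambda>z j k m. \<Sum>p\<in>UNIV. u z $ p * riem g z j k m p) y l j k m =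
   \<phi> y * (hten g u y l k * lower g u y m + lower g u y k * hten g u y l m) * Xv \<phi> g u y j
   + hten g u y k m * cov_der1 g (Xv \<phi> g u) y l j
   - (\<phi> y * (hten g u y l j * lower g u y m + lower g u y j * hten g u y l m) * Xv \<phi> g u y k
   + hten g u y j m * cov_der1 g (Xv \<phi> g u) y l k)"
proof -
  assume y: "y \<in> U"
  have "cd3 g (\<lambda>z j k m. \<Sum>p\<in>UNIV. u z $ p * riem g z j k m p) y l j k m =
     cd3 g (\<lambda>z j k m. hten g u z k m * Xv \<phi> g u z j - hten g u z j m * Xv \<phi> g u z k) y l j k m"
    by (rule cd3_local[OF y]) (simp add: uR)
  also have "\<dots> = cd3 g (\<lambda>z j k m. hten g u z k m * Xv \<phi> g u z j) y l j k m
      - cd3 g (\<lambda>z j k m. hten g u z j m * Xv \<phi> g u z k) y l j k m"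
    by (rule cd3_diff[OF y]) (intro sm_intros gh gX)+
  also have "\<dots> = (cd2 g (hten g u) y l k m * Xv \<phi> g u y j + hten g u y k m * cov_der1 g (Xv \<phi> g u) y l j)
      - (cd2 g (hten g u) y l j m * Xv \<phi> g u y k + hten g u y j m * cov_der1 g (Xv \<phi> g u) y l k)"
    by (simp only: cd3_prod1[OF y gh gX] cd3_prod2[OF y gh gX])
  finally show ?thesis unfolding cd2_h[OF y] by simp
qed

lemma B_dec: "y \<in> U \<Longrightarrow> dec (lower g u y) (\<lambda>a b. g y $ a $ b)
   (\<lambda>j k l m. D4 g u (riem g) y j k l m + 2 * \<phi> y * riem g y j k l m)"
proof -
  assume y: "y \<in> U"
  let ?h = "hten g u y" and ?X = "Xv \<phi> g u y" and ?Y = "cov_der1 g (Xv \<phi> g u) y" and ?v = "lower g u y"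
  let ?W = "\<lambda>j k m. \<Sum>p\<in>UNIV. u y $ p * riem g y j k m p"
  show ?thesis
  proof (rule decI[where A="\<lambda>a b. - ?Y b a"
      and Sa="\<lambda>k l m. - ?v l * ?Y m k + ?v m * ?Y l k - \<phi> y * ?h m l * ?X k + \<phi> y * ?h l m * ?X k"
      and Sb="\<lambda>j l m. ?v l * ?Y m j - ?v m * ?Y l j + \<phi> y * ?h m l * ?X j - \<phi> y * ?h l m * ?X j"
      and Sc="\<lambda>j k m. \<phi> y * (?h m k * ?X j - ?h m j * ?X k) + \<phi> y * ?W j k m"
      and Sd="\<lambda>j k l. - \<phi> y * (?h l k * ?X j - ?h l j * ?X k) - \<phi> y * ?W j k l"])
    fix j k l m
    show "D4 g u (riem g) y j k l m + 2 * \<phi> y * riem g y j k l m = Kf (\<lambda>a b. g y $ a $ b) (\<lambda>a b. - ?Y b a) j k l m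
      + ?v j * (- ?v l * ?Y m k + ?v m * ?Y l k - \<phi> y * ?h m l * ?X k + \<phi> y * ?h l m * ?X k)
      + ?v k * (?v l * ?Y m j - ?v m * ?Y l j + \<phi> y * ?h m l * ?X j - \<phi> y * ?h l m * ?X j)
      + ?v l * (\<phi> y * (?h m k * ?X j - ?h m j * ?X k) + \<phi> y * ?W j k m)
      + ?v m * (- \<phi> y * (?h l k * ?X j - ?h l j * ?X k) - \<phi> y * ?W j k l)"
      unfolding D4_riem[OF y] cd3W3[OF y] Kf_def hten_def by (simp add: algebra_simps)
  qed
qed

end


lemma dec_cong: "dec v G T \<Longrightarrow> (\<And>j k l m. T' j k l m = T j k l m) \<Longrightarrow> dec v G T'"
  unfolding dec_def by simp

definition Qf :: "(real^'n::finite \<Rightarrow> real^'n^'n) \<Rightarrow> real^'n \<Rightarrow> 'n \<Rightarrow> 'n \<Rightarrow> real" where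
  "Qf g z a b = (1 / (real CARD('n) - 2)) * ricci g z a b
     + (- (scal g z / ((real CARD('n) - 1) * (real CARD('n) - 2)) / 2)) * g z $ a $ b"
definition aEf :: "(real^'n::finite \<Rightarrow> real^'n^'n) \<Rightarrow> (real^'n \<Rightarrow> real^'n) \<Rightarrow> real^'n \<Rightarrow> 'n \<Rightarrow> 'n \<Rightarrow> real" where
  "aEf g u z a b = (- ((real CARD('n) - 2) / (real CARD('n) - 3))) * electric g u z a b"
definition bEf :: "(real^'n::finite \<Rightarrow> real^'n^'n) \<Rightarrow> (real^'n \<Rightarrow> real^'n) \<Rightarrow> real^'n \<Rightarrow> 'n \<Rightarrow> 'n \<Rightarrow> real" where
  "bEf g u z a b = (- (1 / (real CARD('n) - 3))) * electric g u z a b"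

context geo begin

lemma sm_divc: "good U f \<Longrightarrow> good U (\<lambda>z. f z / c)"
  using sm_mult[of f "\<lambda>z. 1 / c"] sm_const by simp

lemma gRic: "good U (\<lambda>z. ricci g z b d)"
  unfolding ricci_def by (intro sm_intros gRu)
lemma gScal: "good U (\<lambda>z. scal g z)"
  unfolding scal_def by (intro sm_intros gGi gRic)
lemma gWeyl: "good U (\<lambda>z. weyl g z i k l m)"
  unfolding weyl_def Let_def by (intro sm_intros sm_divc gR gG gRic gScal)
lemma gE: "good U (\<lambda>z. electric g u z k l)"
  unfolding electric_def by (intro sm_intros gu gWeyl)
lemma gGam: "good U (\<lambda>z. GammaT g u z i k l m)"
  unfolding GammaT_def Let_def by (intro sm_intros sm_divc gWeyl gv gE gG)

lemma cd4_add: "y \<in> U \<Longrightarrow> (\<And>i k l m. good U (\<lambda>z. A z i k l m)) \<Longrightarrow> (\<And>i k l m. good U (\<lambda>z. B z i k l m)) \<Longrightarrow>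
  cov_der4 g (\<lambda>z i k l m. A z i k l m + B z i k l m) y p i k l m = cov_der4 g A y p i k l m + cov_der4 g B y p i k l m"
  unfolding cov_der4_def by (simp add: pd_rules sm_intros sum.distrib algebra_simps)

lemma D4_add: "y \<in> U \<Longrightarrow> (\<And>i k l m. good U (\<lambda>z. A z i k l m)) \<Longrightarrow> (\<And>i k l m. good U (\<lambda>z. B z i k l m)) \<Longrightarrow>
  D4 g u (\<lambda>z i k l m. A z i k l m + B z i k l m) y i k l m = D4 g u A y i k l m + D4 g u B y i k l m"
proof -
  assume y: "y \<in> U" and A: "\<And>i k l m. good U (\<lambda>z. A z i k l m)" and B: "\<And>i k l m. good U (\<lambda>z. B z i k l m)"
  show ?thesis unfolding D4_def cd4_add[OF y A B] by (simp add: sum.distrib distrib_left)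
qed

lemma gKN: "(\<And>a b. good U (\<lambda>z. P z a b)) \<Longrightarrow> (\<And>a b. good U (\<lambda>z. Q z a b)) \<Longrightarrow> good U (\<lambda>z. KN (P z) (Q z) i k l m)"
  unfolding KN_def by (intro sm_intros) auto

lemma gQf: "good U (\<lambda>z. Qf g z a b)" unfolding Qf_def by (intro sm_intros sm_divc gRic gScal gG)
lemma gaE: "good U (\<lambda>z. aEf g u z a b)" unfolding aEf_def by (intro sm_intros gE)
lemma gbE: "good U (\<lambda>z. bEf g u z a b)" unfolding bEf_def by (intro sm_intros gE)
lemma gVv: "good U (\<lambda>z. lower g u z a * lower g u z b)" by (intro sm_intros gv)

lemma Gam_rep: "GammaT g u = (\<lambda>z i k l m. riem g z i k l m + KN (\<lambda>a b. g z $ a $ b) (Qf g z) i k l m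
   + (KN (\<lambda>a b. lower g u z a * lower g u z b) (aEf g u z) i k l m + KN (\<lambda>a b. g z $ a $ b) (bEf g u z) i k l m))"
  by (intro ext) (simp add: gamma_KN weyl_KN KN_def Qf_def aEf_def bEf_def algebra_simps)

lemma Tf_dec: "y \<in> U \<Longrightarrow> dec (lower g u y) (\<lambda>a b. g y $ a $ b)
   (\<lambda>j k l m. D4 g u (GammaT g u) y j k l m + 2 * \<phi> y * GammaT g u y j k l m)"
proof -
  assume y: "y \<in> U"
  let ?G = "\<lambda>z a b. g z $ a $ b" and ?V = "\<lambda>z a b. lower g u z a * lower g u z b"
  have gk1: "good U (\<lambda>z. KN (?G z) (Qf g z) i k l m)" for i k l m by (intro gKN gG gQf)
  have gk2: "good U (\<lambda>z. KN (?V z) (aEf g u z) i k l m)" for i k l m by (intro gKN gVv gaE)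
  have gk3: "good U (\<lambda>z. KN (?G z) (bEf g u z) i k l m)" for i k l m by (intro gKN gG gbE)
  have d: "D4 g u (GammaT g u) y j k l m = D4 g u (riem g) y j k l m
     + KN (?G y) (D2 g u (Qf g) y) j k l m + (KN (?V y) (D2 g u (aEf g u) y) j k l m + KN (?G y) (D2 g u (bEf g u) y) j k l m)"
    for j k l m
  proof -
    have "D4 g u (GammaT g u) y j k l m = D4 g u (riem g) y j k l m + D4 g u (\<lambda>z. KN (?G z) (Qf g z)) y j k l m
       + (D4 g u (\<lambda>z. KN (?V z) (aEf g u z)) y j k l m + D4 g u (\<lambda>z. KN (?G z) (bEf g u z)) y j k l m)"
      unfolding Gam_rep
      by (simp add: D4_add[OF y] gR gk1 gk2 gk3 sm_intros)
    also have "\<dots> = D4 g u (riem g) y j k l m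
     + KN (?G y) (D2 g u (Qf g) y) j k l m + (KN (?V y) (D2 g u (aEf g u) y) j k l m + KN (?G y) (D2 g u (bEf g u) y) j k l m)"
      by (simp add: D4_KN[OF y] gG gVv gQf gaE gbE D2_G[OF y] D2_vv[OF y] KN_zero1)
    finally show ?thesis .
  qed
  have e: "D4 g u (GammaT g u) y j k l m + 2 * \<phi> y * GammaT g u y j k l m =
    (D4 g u (riem g) y j k l m + 2 * \<phi> y * riem g y j k l m)
    + 1 * KN (?G y) (\<lambda>a b. D2 g u (Qf g) y a b + (2 * \<phi> y) * Qf g y a b) j k l m
    + 1 * KN (?V y) (\<lambda>a b. D2 g u (aEf g u) y a b + (2 * \<phi> y) * aEf g u y a b) j k l m
    + 1 * KN (?G y) (\<lambda>a b. D2 g u (bEf g u) y a b + (2 * \<phi> y) * bEf g u y a b) j k l m" for j k l m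
    unfolding d KN_lin2 by (simp add: Gam_rep algebra_simps)
  have "dec (lower g u y) (?G y) (\<lambda>j k l m. (D4 g u (riem g) y j k l m + 2 * \<phi> y * riem g y j k l m)
    + 1 * KN (?G y) (\<lambda>a b. D2 g u (Qf g) y a b + (2 * \<phi> y) * Qf g y a b) j k l m
    + 1 * KN (?V y) (\<lambda>a b. D2 g u (aEf g u) y a b + (2 * \<phi> y) * aEf g u y a b) j k l m
    + 1 * KN (?G y) (\<lambda>a b. D2 g u (bEf g u) y a b + (2 * \<phi> y) * bEf g u y a b) j k l m)"
    by (intro dec_add B_dec[OF y] dec_KN_G dec_KN_V)
  then show ?thesis by (rule dec_cong) (rule e)
qed

end


definition pp :: "('n::finite \<Rightarrow> real) \<Rightarrow> ('n \<Rightarrow> real) \<Rightarrow> 'n \<Rightarrow> 'n \<Rightarrow> real" where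
  "pp v w a b = (if a = b then 1 else 0) + v a * w b"

definition Pj :: "('n::finite \<Rightarrow> real) \<Rightarrow> ('n \<Rightarrow> real) \<Rightarrow> ('n \<Rightarrow> 'n \<Rightarrow> 'n \<Rightarrow> 'n \<Rightarrow> real) \<Rightarrow> 'n \<Rightarrow> 'n \<Rightarrow> 'n \<Rightarrow> 'n \<Rightarrow> real" where
  "Pj v w F j k l m = (\<Sum>a\<in>UNIV. pp v w j a * (\<Sum>b\<in>UNIV. pp v w k b * (\<Sum>c\<in>UNIV. pp v w l c * (\<Sum>d\<in>UNIV. pp v w m d * F a b c d))))"

lemma slot: "(\<Sum>x\<in>UNIV. pp v w i x * F x) = F i + v i * (\<Sum>x\<in>UNIV. w x * F x)"
  unfolding pp_def by (simp add: ring_distribs sum.distrib sum_distrib_left mult_ac)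

lemma pv: "(\<Sum>x\<in>UNIV. w x * v x) = -1 \<Longrightarrow> (\<Sum>x\<in>UNIV. pp v w i x * v x) = 0"
  unfolding slot by simp

lemma Pj_orth:
  assumes "\<And>a b c. (\<Sum>d\<in>UNIV. w d * F a b c d) = 0" "\<And>a b d. (\<Sum>c\<in>UNIV. w c * F a b c d) = 0"
    "\<And>a c d. (\<Sum>b\<in>UNIV. w b * F a b c d) = 0" "\<And>b c d. (\<Sum>a\<in>UNIV. w a * F a b c d) = 0"
  shows "Pj v w F j k l m = F j k l m"
  unfolding Pj_def slot using assms by simp

lemma Pj_add: "Pj v w (\<lambda>a b c d. F a b c d + G a b c d) j k l m = Pj v w F j k l m + Pj v w G j k l m"
  unfolding Pj_def by (simp add: ring_distribs sum.distrib)

lemma sum_pullr: "(\<Sum>x\<in>UNIV. p x * (f x * c)) = (\<Sum>x\<in>UNIV. p x * f x) * (c::real)"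
  by (simp add: sum_distrib_left sum_distrib_right mult_ac)

lemma Pj_v1: "(\<Sum>x\<in>UNIV. w x * v x) = -1 \<Longrightarrow> Pj v w (\<lambda>a b c d. v a * S b c d) j k l m = 0"
  unfolding Pj_def by (simp only: sum_pull sum_pullr pv)
lemma Pj_v2: "(\<Sum>x\<in>UNIV. w x * v x) = -1 \<Longrightarrow> Pj v w (\<lambda>a b c d. v b * S a c d) j k l m = 0"
  unfolding Pj_def by (simp only: sum_pull sum_pullr pv)
lemma Pj_v3: "(\<Sum>x\<in>UNIV. w x * v x) = -1 \<Longrightarrow> Pj v w (\<lambda>a b c d. v c * S a b d) j k l m = 0"
  unfolding Pj_def by (simp only: sum_pull sum_pullr pv)
lemma Pj_v4: "(\<Sum>x\<in>UNIV. w x * v x) = -1 \<Longrightarrow> Pj v w (\<lambda>a b c d. v d * S a b c) j k l m = 0"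
  unfolding Pj_def by (simp only: sum_pull sum_pullr pv)

lemma Pj_dec:
  assumes h: "(\<Sum>x\<in>UNIV. w x * v x) = -1"
    and T: "\<And>j k l m. T j k l m = Kf P A j k l m + v j * S1 k l m + v k * S2 j l m + v l * S3 j k m + v m * S4 j k l"
  shows "Pj v w T j k l m = Pj v w (Kf P A) j k l m"
proof -
  have "T = (\<lambda>a b c d. Kf P A a b c d + v a * S1 b c d + v b * S2 a c d + v c * S3 a b d + v d * S4 a b c)"
    using T by (intro ext) simp
  then show ?thesis by (simp add: Pj_add Pj_v1[OF h] Pj_v2[OF h] Pj_v3[OF h] Pj_v4[OF h])
qed


lemma Kf_c4: "(\<Sum>d\<in>UNIV. w d * Kf P A a b c d) = P a c * (\<Sum>d\<in>UNIV. w d * A b d) - (\<Sum>d\<in>UNIV. w d * P a d) * A b c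
   - P b c * (\<Sum>d\<in>UNIV. w d * A a d) + (\<Sum>d\<in>UNIV. w d * P b d) * A a c"
  unfolding Kf_def by (simp add: sum.distrib sum_subtractf sum_distrib_left sum_distrib_right algebra_simps)
lemma Kf_c3: "(\<Sum>c\<in>UNIV. w c * Kf P A a b c d) = (\<Sum>c\<in>UNIV. w c * P a c) * A b d - P a d * (\<Sum>c\<in>UNIV. w c * A b c)
   - (\<Sum>c\<in>UNIV. w c * P b c) * A a d + P b d * (\<Sum>c\<in>UNIV. w c * A a c)"
  unfolding Kf_def by (simp add: sum.distrib sum_subtractf sum_distrib_left sum_distrib_right algebra_simps)
lemma Kf_c2: "(\<Sum>b\<in>UNIV. w b * Kf P A a b c d) = P a c * (\<Sum>b\<in>UNIV. w b * A b d) - P a d * (\<Sum>b\<in>UNIV. w b * A b c)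
   - (\<Sum>b\<in>UNIV. w b * P b c) * A a d + (\<Sum>b\<in>UNIV. w b * P b d) * A a c"
  unfolding Kf_def by (simp add: sum.distrib sum_subtractf sum_distrib_left sum_distrib_right algebra_simps)
lemma Kf_c1: "(\<Sum>a\<in>UNIV. w a * Kf P A a b c d) = (\<Sum>a\<in>UNIV. w a * P a c) * A b d - (\<Sum>a\<in>UNIV. w a * P a d) * A b c
   - P b c * (\<Sum>a\<in>UNIV. w a * A a d) + P b d * (\<Sum>a\<in>UNIV. w a * A a c)"
  unfolding Kf_def by (simp add: sum.distrib sum_subtractf sum_distrib_left sum_distrib_right algebra_simps)
lemma Kf_c13: "(\<Sum>j\<in>UNIV. \<Sum>l\<in>UNIV. H j l * Kf P A j k l m) = (\<Sum>j\<in>UNIV. \<Sum>l\<in>UNIV. H j l * P j l) * A k m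
   - (\<Sum>j\<in>UNIV. \<Sum>l\<in>UNIV. H j l * (P j m * A k l)) - (\<Sum>j\<in>UNIV. \<Sum>l\<in>UNIV. H j l * (P k l * A j m))
   + P k m * (\<Sum>j\<in>UNIV. \<Sum>l\<in>UNIV. H j l * A j l)"
  unfolding Kf_def by (simp add: sum.distrib sum_subtractf sum_distrib_left sum_distrib_right algebra_simps)

lemma sum2_lin: "(\<Sum>k\<in>UNIV. \<Sum>m\<in>UNIV. H k m * (c * A k m + B k m * t)) =
   c * (\<Sum>k\<in>UNIV. \<Sum>m\<in>UNIV. H k m * A k m) + (\<Sum>k\<in>UNIV. \<Sum>m\<in>UNIV. H k m * B k m) * (t::real)"
  by (simp add: ring_distribs sum.distrib sum_distrib_left sum_distrib_right mult_ac)

context geo begin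

lemma hs: "y \<in> U \<Longrightarrow> hten g u y a b = hten g u y b a"
  unfolding hten_def using gs by (simp add: mult.commute)

lemma uh2: "y \<in> U \<Longrightarrow> (\<Sum>i\<in>UNIV. u y $ i * hten g u y l i) = 0"
  using uh[of y l] hs[of y] by simp

lemma dec_to_h:
  assumes y: "y \<in> U" and D: "dec (lower g u y) (\<lambda>a b. g y $ a $ b) T"
  shows "\<exists>A'. (\<forall>m. (\<Sum>k\<in>UNIV. u y $ k * A' k m) = 0) \<and> (\<forall>k. (\<Sum>m\<in>UNIV. u y $ m * A' k m) = 0) \<and>
     dec (lower g u y) (hten g u y) T \<and> (\<exists>S1 S2 S3 S4. \<forall>j k l m. T j k l m = Kf (hten g u y) A' j k l m
      + lower g u y j * S1 k l m + lower g u y k * S2 j l m + lower g u y l * S3 j k m + lower g u y m * S4 j k l)"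
proof -
  let ?v = "lower g u y" and ?h = "hten g u y" and ?u = "\<lambda>k. u y $ k"
  obtain A S1 S2 S3 S4 where T: "\<And>j k l m. T j k l m = Kf (\<lambda>a b. g y $ a $ b) A j k l m
      + ?v j * S1 k l m + ?v k * S2 j l m + ?v l * S3 j k m + ?v m * S4 j k l"
    using D unfolding dec_def by blast
  define \<alpha> where "\<alpha> k = (\<Sum>d\<in>UNIV. ?u d * A k d)" for k
  define \<gamma> where "\<gamma> = (\<Sum>b\<in>UNIV. \<Sum>d\<in>UNIV. ?u b * ?u d * A b d)"
  define \<beta> where "\<beta> m = (\<Sum>b\<in>UNIV. ?u b * A b m) + ?v m * \<gamma>" for m
  define A' where "A' k m = A k m + ?v m * \<alpha> k + ?v k * \<beta> m" for k m
  have uv': "(\<Sum>k\<in>UNIV. ?u k * ?v k) = -1" using uv[OF y] .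
  have ua: "(\<Sum>k\<in>UNIV. ?u k * \<alpha> k) = \<gamma>"
    unfolding \<alpha>_def \<gamma>_def by (simp add: sum_distrib_left mult_ac)
  have ub: "(\<Sum>m\<in>UNIV. ?u m * (\<Sum>b\<in>UNIV. ?u b * A b m)) = \<gamma>"
    unfolding \<gamma>_def by (simp only: sum_distrib_left, rule swap_cong, simp add: mult_ac)
  have sp1: "(\<Sum>k\<in>UNIV. ?u k * A' k m) = 0" for m
  proof -
    have "(\<Sum>k\<in>UNIV. ?u k * A' k m) = (\<Sum>k\<in>UNIV. ?u k * A k m) + ?v m * (\<Sum>k\<in>UNIV. ?u k * \<alpha> k) + (\<Sum>k\<in>UNIV. ?u k * ?v k) * \<beta> m"
      unfolding A'_def by (simp add: sum.distrib sum_distrib_left sum_distrib_right ring_distribs mult_ac)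
    then show ?thesis unfolding ua uv' \<beta>_def by simp
  qed
  have sp2: "(\<Sum>m\<in>UNIV. ?u m * A' k m) = 0" for k
  proof -
    have "(\<Sum>m\<in>UNIV. ?u m * A' k m) = \<alpha> k + (\<Sum>m\<in>UNIV. ?u m * ?v m) * \<alpha> k + ?v k * ((\<Sum>m\<in>UNIV. ?u m * (\<Sum>b\<in>UNIV. ?u b * A b m)) + (\<Sum>m\<in>UNIV. ?u m * ?v m) * \<gamma>)"
      unfolding A'_def \<beta>_def \<alpha>_def by (simp add: sum.distrib sum_distrib_left sum_distrib_right ring_distribs mult_ac)
    then show ?thesis unfolding ub uv' by simp
  qed
  let ?R1 = "\<lambda>k l m. S1 k l m - (- ?h k l * \<beta> m + ?h k m * \<beta> l) - (?v l * A k m - ?v m * A k l)"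
  let ?R2 = "\<lambda>j l m. S2 j l m - (?h j l * \<beta> m - ?h j m * \<beta> l) - (- ?v l * A j m + ?v m * A j l)"
  let ?R3 = "\<lambda>j k m. S3 j k m - (- ?h j m * \<alpha> k + ?h k m * \<alpha> j)"
  let ?R4 = "\<lambda>j k l. S4 j k l - (?h j l * \<alpha> k - ?h k l * \<alpha> j)"
  have TT: "T j k l m = Kf ?h A' j k l m + ?v j * ?R1 k l m + ?v k * ?R2 j l m + ?v l * ?R3 j k m + ?v m * ?R4 j k l" for j k l m
    unfolding T A'_def Kf_def hten_def by (simp add: algebra_simps)
  show ?thesis
    by (intro exI[of _ A'] conjI allI sp1 sp2 decI[OF TT] exI[of _ ?R1] exI[of _ ?R2] exI[of _ ?R3] exI[of _ ?R4] TT)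
qed

lemma T_zero:
  assumes y: "y \<in> U" and G: "gen_curv T" and O4: "\<And>j k l. (\<Sum>m\<in>UNIV. u y $ m * T j k l m) = 0"
    and Tr: "\<And>k m. (\<Sum>a\<in>UNIV. \<Sum>c\<in>UNIV. ginv g y a c * T a k c m) = 0"
    and D: "dec (lower g u y) (\<lambda>a b. g y $ a $ b) T"
  shows "T j k l m = 0"
proof -
  let ?v = "lower g u y" and ?h = "hten g u y" and ?u = "\<lambda>k. u y $ k" and ?H = "ginv g y"
  obtain A' S1 S2 S3 S4 where sp1: "\<And>m. (\<Sum>k\<in>UNIV. ?u k * A' k m) = 0" and sp2: "\<And>k. (\<Sum>m\<in>UNIV. ?u m * A' k m) = 0"
    and TT: "\<And>j k l m. T j k l m = Kf ?h A' j k l m + ?v j * S1 k l m + ?v k * S2 j l m + ?v l * S3 j k m + ?v m * S4 j k l"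
    using dec_to_h[OF y D] by blast
  note GD = gen_curv_D[OF G]
  have O3: "(\<Sum>c\<in>UNIV. ?u c * T a b c d) = 0" for a b d
  proof -
    have "(\<Sum>c\<in>UNIV. ?u c * T a b c d) = - (\<Sum>c\<in>UNIV. ?u c * T a b d c)"
      by (simp add: sum_negf[symmetric] GD(2)[of a b _ d])
    then show ?thesis using O4 by simp
  qed
  have O1: "(\<Sum>a\<in>UNIV. ?u a * T a b c d) = 0" for b c d
  proof -
    have "(\<Sum>a\<in>UNIV. ?u a * T a b c d) = (\<Sum>a\<in>UNIV. ?u a * T c d a b)"
      by (intro sum.cong refl arg_cong[where f="\<lambda>x. _ * x"] GD(3))
    then show ?thesis using O3 by simp
  qed
  have O2: "(\<Sum>b\<in>UNIV. ?u b * T a b c d) = 0" for a c d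
  proof -
    have "(\<Sum>b\<in>UNIV. ?u b * T a b c d) = - (\<Sum>b\<in>UNIV. ?u b * T b a c d)"
      by (simp add: sum_negf[symmetric] GD(1)[of a _ c d])
    then show ?thesis using O1 by simp
  qed
  have uv': "(\<Sum>x\<in>UNIV. ?u x * ?v x) = -1" using uv[OF y] .
  have K4: "(\<Sum>d\<in>UNIV. ?u d * Kf ?h A' a b c d) = 0" for a b c
    unfolding Kf_c4 using sp2 uh2[OF y] by simp
  have K3: "(\<Sum>c\<in>UNIV. ?u c * Kf ?h A' a b c d) = 0" for a b d
    unfolding Kf_c3 using sp2 uh2[OF y] by simp
  have K2: "(\<Sum>b\<in>UNIV. ?u b * Kf ?h A' a b c d) = 0" for a c d
    unfolding Kf_c2 using sp1 uh[OF y] by simp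
  have K1: "(\<Sum>a\<in>UNIV. ?u a * Kf ?h A' a b c d) = 0" for b c d
    unfolding Kf_c1 using sp1 uh[OF y] by simp
  have TK: "T j k l m = Kf ?h A' j k l m" for j k l m
  proof -
    have "T j k l m = Pj ?v ?u T j k l m" by (rule Pj_orth[symmetric]) (use O1 O2 O3 O4 in auto)
    also have "\<dots> = Pj ?v ?u (Kf ?h A') j k l m" by (rule Pj_dec[OF uv' TT])
    also have "\<dots> = Kf ?h A' j k l m" by (rule Pj_orth) (use K1 K2 K3 K4 in auto)
    finally show ?thesis .
  qed
  define t where "t = (\<Sum>j\<in>UNIV. \<Sum>l\<in>UNIV. ?H j l * A' j l)"
  have c1: "(\<Sum>j\<in>UNIV. \<Sum>l\<in>UNIV. ?H j l * (?h j m * A' k l)) = A' k m" for k m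
  proof -
    have "(\<Sum>j\<in>UNIV. \<Sum>l\<in>UNIV. ?H j l * (?h j m * A' k l)) = (\<Sum>l\<in>UNIV. (\<Sum>j\<in>UNIV. ?H l j * ?h m j) * A' k l)"
      by (simp only: sum_distrib_left sum_distrib_right, rule swap_cong, simp add: mult_ac gis[OF y] hs[OF y])
    also have "\<dots> = (\<Sum>l\<in>UNIV. ((if l = m then 1 else 0) + ?v m * ?u l) * A' k l)" by (simp add: hraise[OF y])
    also have "\<dots> = A' k m + ?v m * (\<Sum>l\<in>UNIV. ?u l * A' k l)"
      by (simp add: ring_distribs sum.distrib sum_distrib_left mult_ac)
    finally show ?thesis using sp2 by simp
  qed
  have c2: "(\<Sum>j\<in>UNIV. \<Sum>l\<in>UNIV. ?H j l * (?h k l * A' j m)) = A' k m" for k m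
  proof -
    have "(\<Sum>j\<in>UNIV. \<Sum>l\<in>UNIV. ?H j l * (?h k l * A' j m)) = (\<Sum>j\<in>UNIV. (\<Sum>l\<in>UNIV. ?H j l * ?h k l) * A' j m)"
      by (simp add: sum_distrib_left sum_distrib_right mult_ac)
    also have "\<dots> = (\<Sum>j\<in>UNIV. ((if j = k then 1 else 0) + ?v k * ?u j) * A' j m)" by (simp add: hraise[OF y])
    also have "\<dots> = A' k m + ?v k * (\<Sum>j\<in>UNIV. ?u j * A' j m)"
      by (simp add: ring_distribs sum.distrib sum_distrib_left mult_ac)
    finally show ?thesis using sp1 by simp
  qed
  have tr: "(real CARD('n) - 3) * A' k m + ?h k m * t = 0" for k m
  proof -
    have "0 = (\<Sum>a\<in>UNIV. \<Sum>c\<in>UNIV. ?H a c * T a k c m)" using Tr by simp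
    also have "\<dots> = (\<Sum>a\<in>UNIV. \<Sum>c\<in>UNIV. ?H a c * Kf ?h A' a k c m)" by (simp add: TK)
    also have "\<dots> = (real CARD('n) - 1) * A' k m - A' k m - A' k m + ?h k m * t"
      unfolding Kf_c13 trace_h[OF y] c1 c2 t_def ..
    finally show ?thesis by (simp add: algebra_simps)
  qed
  have "(\<Sum>k\<in>UNIV. \<Sum>m\<in>UNIV. ?H k m * ((real CARD('n) - 3) * A' k m + ?h k m * t)) = 0"
    by (simp add: tr)
  moreover have "(\<Sum>k\<in>UNIV. \<Sum>m\<in>UNIV. ?H k m * ((real CARD('n) - 3) * A' k m + ?h k m * t))
     = (real CARD('n) - 3) * t + (real CARD('n) - 1) * t"
  proof -
    have "(\<Sum>k\<in>UNIV. \<Sum>m\<in>UNIV. ?H k m * ((real CARD('n) - 3) * A' k m + ?h k m * t))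
      = (real CARD('n) - 3) * t + (\<Sum>k\<in>UNIV. \<Sum>m\<in>UNIV. ?H k m * ?h k m) * t"
      unfolding sum2_lin t_def ..
    then show ?thesis unfolding trace_h[OF y] .
  qed
  ultimately have "(2 * real CARD('n) - 4) * t = 0" by (simp add: algebra_simps)
  then have t0: "t = 0" using dim by simp
  have "(real CARD('n) - 3) * A' k l = 0" for k l using tr[of k l] t0 by simp
  then have "A' k l = 0" for k l using dim by simp
  then show ?thesis unfolding TK Kf_def by simp
qed

end


context geo begin

lemma diff_claim: "y \<in> U \<Longrightarrow>
  (\<Sum>p\<in>UNIV. u y $ p * cov_der4 g (GammaT g u) y p j k l m) = - 2 * \<phi> y * GammaT g u y j k l m"
proof -
  assume y: "y \<in> U"
  let ?T = "\<lambda>j k l m. D4 g u (GammaT g u) y j k l m + 2 * \<phi> y * GammaT g u y j k l m"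
  have g1: "gen_curv (D4 g u (GammaT g u) y)" by (rule D4_gen[OF y gamma_gen gGam])
  have "gen_curv (\<lambda>i k l m. 1 * D4 g u (GammaT g u) y i k l m + (2 * \<phi> y) * GammaT g u y i k l m)"
    by (rule gen_curv_lin[OF g1 gamma_gen[OF y]])
  then have G: "gen_curv ?T" by (simp add: mult.assoc)
  have O: "(\<Sum>m\<in>UNIV. u y $ m * ?T j k l m) = 0" for j k l
  proof -
    have "(\<Sum>m\<in>UNIV. u y $ m * ?T j k l m) = (\<Sum>m\<in>UNIV. u y $ m * D4 g u (GammaT g u) y j k l m)
        + 2 * \<phi> y * (\<Sum>m\<in>UNIV. u y $ m * GammaT g u y j k l m)"
      by (simp add: ring_distribs sum.distrib sum_distrib_left mult_ac)
    then show ?thesis using D4_orth[OF y gamma_u gGam] gamma_u[OF y] by simp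
  qed
  have Tr: "(\<Sum>a\<in>UNIV. \<Sum>c\<in>UNIV. ginv g y a c * ?T a k c m) = 0" for k m
  proof -
    have "(\<Sum>a\<in>UNIV. \<Sum>c\<in>UNIV. ginv g y a c * ?T a k c m) = (\<Sum>a\<in>UNIV. \<Sum>c\<in>UNIV. ginv g y a c * D4 g u (GammaT g u) y a k c m)
        + 2 * \<phi> y * (\<Sum>a\<in>UNIV. \<Sum>c\<in>UNIV. ginv g y a c * GammaT g u y a k c m)"
      by (simp add: ring_distribs sum.distrib sum_distrib_left mult_ac)
    then show ?thesis using D4_c13[OF y gamma_c13 gGam] gamma_c13[OF y] by simp
  qed
  have "?T j k l m = 0" by (rule T_zero[OF y G O Tr Tf_dec[OF y]])
  then show ?thesis unfolding D4_def by simp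
qed

end

theorem theorem1p2:
  fixes g :: "real^'n::finite \<Rightarrow> real^'n^'n"
    and u :: "real^'n \<Rightarrow> real^'n"
    and \<phi> :: "real^'n \<Rightarrow> real"
    and U :: "(real^'n) set"
  assumes dim: "CARD('n) > 3"
    and U_open: "open U"
    and g_smooth: "\<forall>i j. smooth_fn U (\<lambda>x. g x $ i $ j)"
    and g_lor: "\<forall>x\<in>U. lorentzian (g x)"
    and u_smooth: "\<forall>k. smooth_fn U (\<lambda>x. u x $ k)"
    and u_unit: "\<forall>x\<in>U. bform (g x) (u x) (u x) = -1"
    and u_conc: "\<forall>x\<in>U. \<forall>i j. cov_der1 g (lower g u) x i j
                   = \<phi> x * (g x $ i $ j + lower g u x i * lower g u x j)"
  shows "\<forall>x\<in>U. gen_curv (GammaT g u x)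
           \<and> totally_traceless (g x) (GammaT g u x)
           \<and> (\<forall>j k l. (\<Sum>m\<in>UNIV. u x $ m * GammaT g u x j k l m) = 0)
           \<and> (\<forall>j k l m. (\<Sum>p\<in>UNIV. u x $ p * cov_der4 g (GammaT g u) x p j k l m)
                        = - 2 * \<phi> x * GammaT g u x j k l m)"
proof -
  interpret geo g u \<phi> U
    by (unfold_locales) (fact assms)+
  show ?thesis using gamma_gen gamma_traceless gamma_u diff_claim by blast
qed


end
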